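(* There is a deterministic polynomial-time algorithm that, given a symmetric positive semidefinite matrix $A\in\mathbb{R}^{n\times n}$ and an integer $1\le k\le n$, outputs a vector $x\in\mathbb{R}^n$ with $\|x\|_2=1$ and $\|x\|_0\le k$ such that $x^{\intercal}Ax\ge n^{-1/3}\cdot \mathrm{OPT}$, where $\mathrm{OPT}=\max_{\|y\|_2=1,\ \|y\|_0\le k} y^{\intercal}Ay$.
   Context: $\|x\|_0$ denotes the number of nonzero entries of $x$. Sparse PCA is the problem of computing (or approximating) $\mathrm{OPT}=\max_{\|y\|_2=1,\|y\|_0\le k} y^{\intercal}Ay$ for a PSD input matrix $A$. *)

theory Defs
  imports Complex_Main
begin

text \<open>An n x n real matrix is represented as a function nat => nat => real, of which only
  the entries with indices below n matter; a vector in R^n as nat => real, only indices below n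
  matter.\<close>

definition quad :: "nat \<Rightarrow> (nat \<Rightarrow> nat \<Rightarrow> real) \<Rightarrow> (nat \<Rightarrow> real) \<Rightarrow> real" where
  "quad n A x = (\<Sum>i<n. \<Sum>j<n. x i * A i j * x j)"

definition sym_psd :: "nat \<Rightarrow> (nat \<Rightarrow> nat \<Rightarrow> real) \<Rightarrow> bool" where
  "sym_psd n A \<longleftrightarrow> (\<forall>i<n. \<forall>j<n. A i j = A j i) \<and> (\<forall>x. quad n A x \<ge> 0)"

definition norm2 :: "nat \<Rightarrow> (nat \<Rightarrow> real) \<Rightarrow> real" where
  "norm2 n x = sqrt (\<Sum>i<n. (x i)\<^sup>2)"

definition norm0 :: "nat \<Rightarrow> (nat \<Rightarrow> real) \<Rightarrow> nat" where
  "norm0 n x = card {i. i < n \<and> x i \<noteq> 0}"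

text \<open>OPT = max over unit vectors y with at most k nonzero entries of y^T A y
  (the maximum is attained by compactness; we write it as a supremum).\<close>
definition sparse_opt :: "nat \<Rightarrow> (nat \<Rightarrow> nat \<Rightarrow> real) \<Rightarrow> nat \<Rightarrow> real" where
  "sparse_opt n A k = Sup {quad n A y | y. norm2 n y = 1 \<and> norm0 n y \<le> k}"

text \<open>Integer registers (directly addressed, used as counters/indices) and an array of
  real registers addressed indirectly by integer expressions.
  Every assignment and every test costs one step.\<close>

datatype iexp = IC int | IR nat | IAdd iexp iexp | ISub iexp iexp

datatype rexp = RC int | RR iexp | RAdd rexp rexp | RSub rexp rexp | RMul rexp rexp
  | RDiv rexp rexp | RSqrt rexp

datatype bexp = ILess iexp iexp | IEq iexp iexp | RLess rexp rexp | REq rexp rexp | BNot bexp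

datatype com = CSkip | ISet nat iexp | RSet iexp rexp | CSeq com com
  | CIf bexp com com | CWhile bexp com

type_synonym state = "(nat \<Rightarrow> int) \<times> (int \<Rightarrow> real)"

fun ieval :: "iexp \<Rightarrow> state \<Rightarrow> int" where
  "ieval (IC c) s = c"
| "ieval (IR r) s = fst s r"
| "ieval (IAdd a b) s = ieval a s + ieval b s"
| "ieval (ISub a b) s = ieval a s - ieval b s"

fun reval :: "rexp \<Rightarrow> state \<Rightarrow> real" where
  "reval (RC c) s = of_int c"
| "reval (RR a) s = snd s (ieval a s)"
| "reval (RAdd a b) s = reval a s + reval b s"
| "reval (RSub a b) s = reval a s - reval b s"
| "reval (RMul a b) s = reval a s * reval b s"
| "reval (RDiv a b) s = reval a s / reval b s"
| "reval (RSqrt a) s = sqrt (reval a s)"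

fun beval :: "bexp \<Rightarrow> state \<Rightarrow> bool" where
  "beval (ILess a b) s = (ieval a s < ieval b s)"
| "beval (IEq a b) s = (ieval a s = ieval b s)"
| "beval (RLess a b) s = (reval a s < reval b s)"
| "beval (REq a b) s = (reval a s = reval b s)"
| "beval (BNot b) s = (\<not> beval b s)"

inductive big_step :: "com \<Rightarrow> state \<Rightarrow> nat \<Rightarrow> state \<Rightarrow> bool" where
  Skip: "big_step CSkip s 0 s"
| ISet: "big_step (ISet r e) s 1 ((fst s)(r := ieval e s), snd s)"
| RSet: "big_step (RSet a e) s 1 (fst s, (snd s)(ieval a s := reval e s))"
| Seq: "big_step c1 s t1 s1 \<Longrightarrow> big_step c2 s1 t2 s2 \<Longrightarrow> big_step (CSeq c1 c2) s (t1 + t2) s2"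
| IfT: "beval b s \<Longrightarrow> big_step c1 s t s' \<Longrightarrow> big_step (CIf b c1 c2) s (Suc t) s'"
| IfF: "\<not> beval b s \<Longrightarrow> big_step c2 s t s' \<Longrightarrow> big_step (CIf b c1 c2) s (Suc t) s'"
| WhileF: "\<not> beval b s \<Longrightarrow> big_step (CWhile b c) s 1 s"
| WhileT: "beval b s \<Longrightarrow> big_step c s t1 s1 \<Longrightarrow> big_step (CWhile b c) s1 t2 s2 \<Longrightarrow>
    big_step (CWhile b c) s (Suc (t1 + t2)) s2"

text \<open>Input encoding: integer register 0 holds n, register 1 holds k, real register i*n+j
  holds A i j (i, j < n); everything else is 0. Output: x_i is read from real register n*n+i.\<close>
definition init_state :: "nat \<Rightarrow> nat \<Rightarrow> (nat \<Rightarrow> nat \<Rightarrow> real) \<Rightarrow> state" where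
  "init_state n k A =
     ((\<lambda>r. if r = 0 then int n else if r = 1 then int k else 0),
      (\<lambda>a. if 0 \<le> a \<and> a < int (n * n) then A (nat a div n) (nat a mod n) else 0))"

definition output_vec :: "nat \<Rightarrow> state \<Rightarrow> (nat \<Rightarrow> real)" where
  "output_vec n s = (\<lambda>i. if i < n then snd s (int (n * n + i)) else 0)"

end

theory Submission
  imports Defs "HOL-Analysis.Convex"
begin

definition ss :: "nat \<Rightarrow> (nat \<Rightarrow> real) \<Rightarrow> real" where
  "ss n x = (\<Sum>j<n. (x j)\<^sup>2)"
definition bil :: "nat \<Rightarrow> (nat \<Rightarrow> nat \<Rightarrow> real) \<Rightarrow> (nat \<Rightarrow> real) \<Rightarrow> (nat \<Rightarrow> real) \<Rightarrow> real" where
  "bil n A x z = (\<Sum>i<n. \<Sum>j<n. x i * A i j * z j)"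
definition mv :: "nat \<Rightarrow> (nat \<Rightarrow> nat \<Rightarrow> real) \<Rightarrow> (nat \<Rightarrow> real) \<Rightarrow> (nat \<Rightarrow> real)" where
  "mv n A x = (\<lambda>i. if i < n then (\<Sum>j<n. A i j * x j) else 0)"
definition ev :: "nat \<Rightarrow> nat \<Rightarrow> real" where
  "ev i = (\<lambda>j. if j = i then 1 else 0)"

lemma quad_bil: "quad n A x = bil n A x x"
  by (simp add: quad_def bil_def)

lemma bil_mv: "bil n A x z = (\<Sum>i<n. x i * mv n A z i)"
  by (simp add: bil_def mv_def sum_distrib_left mult.assoc)

lemma ss_nonneg: "0 \<le> ss n x"
  by (simp add: ss_def sum_nonneg)

lemma bil_sym: assumes "sym_psd n A" shows "bil n A x z = bil n A z x"
proof -
  have s: "\<And>i j. i < n \<Longrightarrow> j < n \<Longrightarrow> A i j = A j i" using assms by (simp add: sym_psd_def)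
  have "bil n A x z = (\<Sum>i<n. \<Sum>j<n. z j * A j i * x i)"
    unfolding bil_def by (intro sum.cong refl) (simp add: s)
  also have "\<dots> = bil n A z x" unfolding bil_def by (rule sum.swap)
  finally show ?thesis .
qed

lemma quad_nonneg: assumes "sym_psd n A" shows "0 \<le> quad n A x"
  using assms by (simp add: sym_psd_def)

lemma quad_lin: assumes "sym_psd n A"
  shows "quad n A (\<lambda>j. x j + t * z j) = quad n A x + 2*t*bil n A x z + t\<^sup>2 * quad n A z"
proof -
  have "quad n A (\<lambda>j. x j + t * z j) = bil n A x x + t * bil n A x z + t * bil n A z x + t\<^sup>2 * bil n A z z"
    unfolding quad_bil bil_def
    by (simp add: algebra_simps power2_eq_square sum.distrib sum_distrib_left)
  then show ?thesis using bil_sym[OF assms, of z x] by (simp add: quad_bil)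
qed

lemma discr: fixes a b c :: real
  assumes "\<And>t. 0 \<le> a + 2*t*b + t\<^sup>2 * c" and "0 \<le> c"
  shows "b\<^sup>2 \<le> a * c"
proof (cases "c = 0")
  case True
  have "b = 0"
  proof (rule ccontr)
    assume "b \<noteq> 0"
    have "0 \<le> a + 2*(-(a+1)/(2*b))*b" using assms(1)[of "-(a+1)/(2*b)"] True by simp
    then show False using \<open>b \<noteq> 0\<close> by (simp add: field_simps)
  qed
  then show ?thesis using True by simp
next
  case False
  then have c: "c > 0" using assms(2) by simp
  have "0 \<le> a + 2*(-b/c)*b + (-b/c)\<^sup>2 * c" by (rule assms(1))
  also have "\<dots> = a - b\<^sup>2/c" using c by (simp add: field_simps power2_eq_square)
  finally have "b\<^sup>2 / c \<le> a" by simp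
  then show ?thesis using c by (simp add: divide_le_eq mult.commute)
qed

lemma bil_CS: assumes "sym_psd n A"
  shows "(bil n A x z)\<^sup>2 \<le> quad n A x * quad n A z"
  by (rule discr) (use quad_lin[OF assms, of x _ z] quad_nonneg[OF assms] in \<open>metis\<close>)+

definition beats :: "(nat \<Rightarrow> real) \<Rightarrow> nat \<Rightarrow> nat \<Rightarrow> bool" where
  "beats v a b \<longleftrightarrow> (v b < v a \<or> (v a = v b \<and> a < b))"
definition cnt :: "nat \<Rightarrow> (nat \<Rightarrow> real) \<Rightarrow> nat \<Rightarrow> nat" where
  "cnt n v j = card {a. a < n \<and> beats v a j}"
definition topU :: "nat \<Rightarrow> nat \<Rightarrow> (nat \<Rightarrow> real) \<Rightarrow> nat set" where
  "topU n k v = {j. j < n \<and> cnt n v j < k}"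

lemma beats_irrefl: "\<not> beats v a a" by (auto simp: beats_def)
lemma beats_trans: "beats v a b \<Longrightarrow> beats v b c \<Longrightarrow> beats v a c" by (auto simp: beats_def)
lemma beats_total: "a \<noteq> b \<Longrightarrow> beats v a b \<or> beats v b a" by (auto simp: beats_def)

lemma cnt_less: assumes "a < n" "beats v a b" shows "cnt n v a < cnt n v b"
proof -
  have "{x. x < n \<and> beats v x a} \<subset> {x. x < n \<and> beats v x b}"
    using assms beats_trans beats_irrefl by blast
  then show ?thesis unfolding cnt_def by (intro psubset_card_mono) auto
qed

lemma topU_up: "b \<in> topU n k v \<Longrightarrow> a < n \<Longrightarrow> beats v a b \<Longrightarrow> a \<in> topU n k v"
  using cnt_less by (fastforce simp: topU_def)

lemma topU_sub: "topU n k v \<subseteq> {..<n}" by (auto simp: topU_def)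

lemma topU_card: "card (topU n k v) \<le> k"
proof (cases "topU n k v = {}")
  case True then show ?thesis by simp
next
  case False
  let ?U = "topU n k v"
  have fin: "finite ?U" by (rule finite_subset[OF topU_sub finite_lessThan])
  obtain j0 where j0a: "j0 \<in> ?U" and j0m: "Max (cnt n v ` ?U) = cnt n v j0"
    using obtains_MAX[OF fin False, of "cnt n v"] by blast
  have j0: "j0 \<in> ?U" "\<forall>u\<in>?U. cnt n v u \<le> cnt n v j0"
    using j0a j0m fin by (auto simp flip: j0m)
  have sub: "?U - {j0} \<subseteq> {a. a < n \<and> beats v a j0}"
  proof
    fix u assume u: "u \<in> ?U - {j0}"
    then have "u < n" "u \<noteq> j0" by (auto simp: topU_def)
    have "\<not> beats v j0 u"
    proof
      assume "beats v j0 u"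
      then have "cnt n v j0 < cnt n v u" using cnt_less[of j0 n v u] j0(1) by (simp add: topU_def)
      then show False using j0(2) u by auto
    qed
    then show "u \<in> {a. a < n \<and> beats v a j0}" using beats_total[OF \<open>u \<noteq> j0\<close>] \<open>u < n\<close> by auto
  qed
  have "card (?U - {j0}) \<le> cnt n v j0" unfolding cnt_def by (rule card_mono[OF _ sub]) simp
  moreover have "cnt n v j0 < k" using j0 by (simp add: topU_def)
  moreover have "card ?U = card (?U - {j0}) + 1" using j0(1) fin
    using card_Suc_Diff1[OF fin j0(1)] by simp
  ultimately show ?thesis by simp
qed

lemma topU_card_ge: assumes "k \<le> n" shows "k \<le> card (topU n k v)"
proof (cases "topU n k v = {..<n}")
  case True then show ?thesis using assms by simp
next
  case False
  let ?U = "topU n k v"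
  let ?C = "{..<n} - ?U"
  have ne: "?C \<noteq> {}" using False topU_sub by blast
  have fC: "finite ?C" by simp
  obtain j1 where j1a: "j1 \<in> ?C" and j1m: "Min (cnt n v ` ?C) = cnt n v j1"
    using obtains_MIN[OF fC ne, of "cnt n v"] by blast
  have j1: "j1 \<in> ?C" "\<forall>u\<in>?C. cnt n v j1 \<le> cnt n v u"
    using j1a j1m fC by (auto simp flip: j1m)
  have sub: "{a. a < n \<and> beats v a j1} \<subseteq> ?U"
  proof
    fix a assume a: "a \<in> {a. a < n \<and> beats v a j1}"
    show "a \<in> ?U"
    proof (rule ccontr)
      assume "a \<notin> ?U"
      then have "a \<in> ?C" using a by auto
      then have "cnt n v j1 \<le> cnt n v a" using j1 by auto
      moreover have "cnt n v a < cnt n v j1" using cnt_less a by auto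
      ultimately show False by simp
    qed
  qed
  have "cnt n v j1 \<le> card ?U" unfolding cnt_def
    by (rule card_mono[OF finite_subset[OF topU_sub finite_lessThan] sub])
  moreover have "k \<le> cnt n v j1" using j1 by (auto simp: topU_def)
  ultimately show ?thesis by simp
qed

lemma topU_order: assumes "u \<in> topU n k v" "j < n" "j \<notin> topU n k v" shows "v j \<le> v u"
proof -
  have "u \<noteq> j" using assms by auto
  have "\<not> beats v j u" using topU_up[OF assms(1) assms(2)] assms(3) by blast
  then have "beats v u j" using beats_total[OF \<open>u \<noteq> j\<close>] by auto
  then show ?thesis by (auto simp: beats_def)
qed

lemma topU_opt:
  assumes S: "S \<subseteq> {..<n}" "card S \<le> k" and kn: "k \<le> n" and nn: "\<And>j. 0 \<le> v j"
  shows "sum v S \<le> sum v (topU n k v)"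
proof -
  let ?U = "topU n k v"
  have fS: "finite S" using S(1) finite_subset by auto
  have fU: "finite ?U" by (rule finite_subset[OF topU_sub finite_lessThan])
  have cSU: "card S \<le> card ?U" using S(2) topU_card_ge[OF kn, of v] by simp
  have c1: "card S = card (S \<inter> ?U) + card (S - ?U)"
    using fS by (rule card_Int_Diff)
  have c2: "card ?U = card (S \<inter> ?U) + card (?U - S)"
    using card_Int_Diff[OF fU, of S] by (simp add: Int_commute)
  have cc: "card (S - ?U) \<le> card (?U - S)" using c1 c2 cSU by simp
  have s1: "sum v S = sum v (S \<inter> ?U) + sum v (S - ?U)"
    using fS by (rule sum.Int_Diff)
  have s2: "sum v ?U = sum v (S \<inter> ?U) + sum v (?U - S)"
    using sum.Int_Diff[OF fU, of v S] by (simp add: Int_commute)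
  have "sum v (S - ?U) \<le> sum v (?U - S)"
  proof (cases "?U - S = {}")
    case True
    then have "card (S - ?U) = 0" using cc by (metis card.empty le_zero_eq)
    then have "S - ?U = {}" using fS by simp
    then show ?thesis using True by simp
  next
    case False
    define m where "m = Min (v ` (?U - S))"
    have fin: "finite (v ` (?U - S))" using fU by simp
    have up: "\<forall>j\<in>S - ?U. v j \<le> m"
    proof
      fix j assume j: "j \<in> S - ?U"
      then have "j < n" using S by auto
      show "v j \<le> m" unfolding m_def
        using Min_ge_iff[OF fin] False topU_order[of _ n k v j] j \<open>j < n\<close> by auto
    qed
    have lo: "\<forall>u\<in>?U - S. m \<le> v u" unfolding m_def using fin by auto
    have "m \<ge> 0" unfolding m_def using fin False nn by (auto simp: Min_ge_iff)
    have "sum v (S - ?U) \<le> of_nat (card (S - ?U)) * m" by (rule sum_bounded_above) (use up in auto)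
    also have "\<dots> \<le> of_nat (card (?U - S)) * m" using cc \<open>m \<ge> 0\<close> by (simp add: mult_right_mono)
    also have "\<dots> \<le> sum v (?U - S)" by (rule sum_bounded_below) (use lo in auto)
    finally show ?thesis .
  qed
  then show ?thesis using s1 s2 by simp
qed

definition rowv :: "(nat \<Rightarrow> nat \<Rightarrow> real) \<Rightarrow> nat \<Rightarrow> nat \<Rightarrow> real" where
  "rowv A i = (\<lambda>l. A i l * A i l)"
definition rowmask :: "nat \<Rightarrow> nat \<Rightarrow> (nat \<Rightarrow> nat \<Rightarrow> real) \<Rightarrow> nat \<Rightarrow> nat \<Rightarrow> real" where
  "rowmask n k A i = (\<lambda>j. if j < n \<and> cnt n (rowv A i) j < k then A i j else 0)"

lemma sum_ev_left: assumes "i < n" shows "(\<Sum>j<n. ev i j * f j) = f i"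
proof -
  have "(\<Sum>j<n. ev i j * f j) = (\<Sum>j<n. if j = i then f j else 0)"
    by (rule sum.cong) (auto simp: ev_def)
  then show ?thesis using assms by simp
qed

lemma sum_ev_right: assumes "i < n" shows "(\<Sum>j<n. f j * ev i j) = f i"
  using sum_ev_left[OF assms, of f] by (simp add: mult.commute)

lemma bil_ev: "i < n \<Longrightarrow> bil n A (ev i) z = (\<Sum>j<n. A i j * z j)"
  unfolding bil_mv by (simp add: sum_ev_left mv_def)

lemma quad_ev: "i < n \<Longrightarrow> quad n A (ev i) = A i i"
  unfolding quad_bil by (simp add: bil_ev sum_ev_right)

lemma diag_nonneg: "sym_psd n A \<Longrightarrow> i < n \<Longrightarrow> 0 \<le> A i i"
  using quad_nonneg[of n A "ev i"] quad_ev by simp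


lemma rowmask_bound:
  assumes psd: "sym_psd n A" and i: "i < n" and kn: "k \<le> n"
    and hyp: "quad n A (rowmask n k A i) \<le> L * ss n (rowmask n k A i)"
    and S: "S \<subseteq> {..<n}" "card S \<le> k" and L: "0 \<le> L"
  shows "(\<Sum>j\<in>S. (A i j)\<^sup>2) \<le> L * A i i"
proof -
  let ?z = "rowmask n k A i"
  let ?U = "topU n k (rowv A i)"
  have ssz: "ss n ?z = (\<Sum>j\<in>?U. (A i j)\<^sup>2)"
    unfolding ss_def rowmask_def topU_def
    by (rule sum.mono_neutral_cong_right) auto
  have bz: "bil n A (ev i) ?z = ss n ?z"
    unfolding bil_ev[OF i] ss_def rowmask_def
    by (rule sum.cong) (auto simp: power2_eq_square)
  have cs: "(ss n ?z)\<^sup>2 \<le> A i i * quad n A ?z"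
    using bil_CS[OF psd, of "ev i" ?z] bz quad_ev[OF i] by simp
  have aii: "0 \<le> A i i" by (rule diag_nonneg[OF psd i])
  have "ss n ?z \<le> L * A i i"
  proof (cases "ss n ?z = 0")
    case True
    have "0 \<le> L * A i i" using L aii by simp
    then show ?thesis using True by simp
  next
    case False
    then have pos: "0 < ss n ?z" using ss_nonneg[of n ?z] by simp
    have "(ss n ?z)\<^sup>2 \<le> A i i * (L * ss n ?z)"
      using cs hyp aii mult_left_mono order_trans by blast
    then have "ss n ?z * ss n ?z \<le> (L * A i i) * ss n ?z" by (simp add: power2_eq_square algebra_simps)
    then show ?thesis using pos by simp
  qed
  moreover have "(\<Sum>j\<in>S. (A i j)\<^sup>2) \<le> (\<Sum>j\<in>?U. (A i j)\<^sup>2)"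
    using topU_opt[OF S kn, of "rowv A i"] by (simp add: rowv_def power2_eq_square)
  ultimately show ?thesis using ssz by simp
qed

lemma rows_main:
  assumes psd: "sym_psd n A" and ssy: "ss n y = 1"
    and cS: "card {j. j < n \<and> y j \<noteq> 0} \<le> k"
    and R: "\<And>i S. i < n \<Longrightarrow> S \<subseteq> {..<n} \<Longrightarrow> card S \<le> k \<Longrightarrow> (\<Sum>j\<in>S. (A i j)\<^sup>2) \<le> L * A i i"
    and L: "0 \<le> L"
  shows "(quad n A y)\<^sup>2 - L * quad n A y \<le> real k * L\<^sup>2 / 4"
proof -
  define S where "S = {j. j < n \<and> y j \<noteq> 0}"
  have Ssub: "S \<subseteq> {..<n}" by (auto simp: S_def)
  have fS: "finite S" by (simp add: S_def)
  define g where "g i = (\<Sum>j\<in>S. A i j * y j)" for i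
  define lam where "lam = quad n A y"
  have inner: "(\<Sum>j<n. y i * A i j * y j) = y i * g i" for i
  proof -
    have "(\<Sum>j<n. y i * A i j * y j) = (\<Sum>j\<in>S. y i * A i j * y j)"
      by (rule sum.mono_neutral_cong_right) (auto simp: S_def)
    then show ?thesis by (simp add: g_def sum_distrib_left mult.assoc)
  qed
  have q: "lam = (\<Sum>i\<in>S. y i * g i)"
  proof -
    have "lam = (\<Sum>i<n. y i * g i)" by (simp add: lam_def quad_def inner)
    also have "\<dots> = (\<Sum>i\<in>S. y i * g i)"
      by (rule sum.mono_neutral_cong_right) (auto simp: S_def)
    finally show ?thesis .
  qed
  have y1: "(\<Sum>i\<in>S. (y i)\<^sup>2) = 1"
  proof -
    have "(\<Sum>i\<in>S. (y i)\<^sup>2) = (\<Sum>i<n. (y i)\<^sup>2)"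
      by (rule sum.mono_neutral_cong_left) (auto simp: S_def)
    then show ?thesis using ssy by (simp add: ss_def)
  qed
  have perrow: "(g i)\<^sup>2 + (A i i - g i * y i)\<^sup>2 \<le> (\<Sum>j\<in>S. (A i j)\<^sup>2)" if iS: "i \<in> S" for i
  proof -
    have "(\<Sum>j\<in>S. (A i j - g i * y j)\<^sup>2)
        = (\<Sum>j\<in>S. (A i j)\<^sup>2) - 2 * g i * (\<Sum>j\<in>S. A i j * y j) + (g i)\<^sup>2 * (\<Sum>j\<in>S. (y j)\<^sup>2)"
      by (simp add: power2_eq_square algebra_simps sum.distrib sum_subtractf sum_distrib_left)
    also have "\<dots> = (\<Sum>j\<in>S. (A i j)\<^sup>2) - (g i)\<^sup>2"
      by (simp add: y1 flip: g_def) (simp add: power2_eq_square)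
    finally have e: "(\<Sum>j\<in>S. (A i j - g i * y j)\<^sup>2) = (\<Sum>j\<in>S. (A i j)\<^sup>2) - (g i)\<^sup>2" .
    have "(A i i - g i * y i)\<^sup>2 \<le> (\<Sum>j\<in>S. (A i j - g i * y j)\<^sup>2)"
      by (rule member_le_sum[OF iS _ fS, where f="\<lambda>j. (A i j - g i * y j)\<^sup>2"]) simp
    then show ?thesis using e by simp
  qed
  define t1 where "t1 = (\<Sum>i\<in>S. A i i)"
  define X where "X = (\<Sum>i\<in>S. (A i i - g i * y i)\<^sup>2)"
  have t2: "(\<Sum>i\<in>S. (g i)\<^sup>2) + X \<le> L * t1"
  proof -
    have "(\<Sum>i\<in>S. (g i)\<^sup>2) + X = (\<Sum>i\<in>S. (g i)\<^sup>2 + (A i i - g i * y i)\<^sup>2)"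
      by (simp add: X_def sum.distrib)
    also have "\<dots> \<le> (\<Sum>i\<in>S. (\<Sum>j\<in>S. (A i j)\<^sup>2))" by (rule sum_mono) (rule perrow)
    also have "\<dots> \<le> (\<Sum>i\<in>S. L * A i i)"
      by (rule sum_mono) (use R Ssub cS in \<open>auto simp: S_def\<close>)
    also have "\<dots> = L * t1" by (simp add: t1_def sum_distrib_left)
    finally show ?thesis .
  qed
  have g2: "lam\<^sup>2 \<le> (\<Sum>i\<in>S. (g i)\<^sup>2)"
    using Cauchy_Schwarz_ineq_sum[of y g S] q y1 by simp
  have cX: "(t1 - lam)\<^sup>2 \<le> real (card S) * X"
  proof -
    have "(\<Sum>i\<in>S. A i i - g i * y i) = t1 - lam"
      by (simp add: t1_def q sum_subtractf mult.commute)
    moreover have "(\<Sum>i\<in>S. 1 * (A i i - g i * y i))\<^sup>2 \<le> (\<Sum>i\<in>S. 1\<^sup>2) * X"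
      unfolding X_def by (rule Cauchy_Schwarz_ineq_sum)
    ultimately show ?thesis by simp
  qed
  have X0: "0 \<le> X" unfolding X_def by (simp add: sum_nonneg)
  have Sne: "S \<noteq> {}" using y1 by auto
  then have "card S \<ge> 1" using fS by (simp add: Suc_le_eq card_gt_0_iff)
  then have k1: "1 \<le> real k" using cS by (simp add: S_def)
  have cX2: "(t1 - lam)\<^sup>2 \<le> real k * X"
    using cX mult_right_mono[OF _ X0, of "real (card S)" "real k"] cS by (simp add: S_def)
  have main: "real k * lam\<^sup>2 + (t1 - lam)\<^sup>2 \<le> real k * L * t1"
  proof -
    have "lam\<^sup>2 + X \<le> L * t1" using t2 g2 by simp
    then have "real k * (lam\<^sup>2 + X) \<le> real k * (L * t1)" using k1 by simp
    then show ?thesis using cX2 by (simp add: algebra_simps)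
  qed
  have "real k * (lam\<^sup>2 - L * lam) \<le> real k * (real k * L\<^sup>2 / 4)"
  proof -
    have "0 \<le> (t1 - lam - real k * L / 2)\<^sup>2" by simp
    then show ?thesis using main by (simp add: power2_eq_square algebra_simps)
  qed
  then have "lam\<^sup>2 - L * lam \<le> real k * L\<^sup>2 / 4" using k1 by simp
  then show ?thesis by (simp add: lam_def)
qed

definition pw :: "nat \<Rightarrow> (nat \<Rightarrow> nat \<Rightarrow> real) \<Rightarrow> (nat \<Rightarrow> real) \<Rightarrow> nat \<Rightarrow> (nat \<Rightarrow> real)" where
  "pw n A x l = (mv n A ^^ l) x"
definition mom :: "nat \<Rightarrow> (nat \<Rightarrow> nat \<Rightarrow> real) \<Rightarrow> (nat \<Rightarrow> real) \<Rightarrow> nat \<Rightarrow> real" where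
  "mom n A v j = (if even j then ss n (pw n A v (j div 2)) else quad n A (pw n A v (j div 2)))"

lemma pw_0[simp]: "pw n A x 0 = x" by (simp add: pw_def)
lemma pw_Suc[simp]: "pw n A x (Suc l) = mv n A (pw n A x l)" by (simp add: pw_def)

lemma quad_mv: "quad n A x = (\<Sum>i<n. x i * mv n A x i)"
  by (simp add: quad_bil bil_mv)

lemma ss_mv: "ss n (mv n A x) = bil n A (mv n A x) x"
  by (simp add: bil_mv ss_def power2_eq_square)

lemma mom_nonneg: "sym_psd n A \<Longrightarrow> 0 \<le> mom n A v j"
  by (simp add: mom_def ss_nonneg quad_nonneg)

lemma mom_logconvex: assumes psd: "sym_psd n A"
  shows "(mom n A v (Suc j))\<^sup>2 \<le> mom n A v j * mom n A v (Suc (Suc j))"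
proof (cases "even j")
  case True
  then obtain l where j: "j = 2 * l" by blast
  let ?p = "pw n A v l"
  have "(quad n A ?p)\<^sup>2 \<le> ss n ?p * ss n (mv n A ?p)"
    unfolding quad_mv ss_def by (rule Cauchy_Schwarz_ineq_sum)
  moreover have "Suc (Suc (2 * l)) div 2 = Suc l" by simp
  ultimately show ?thesis using j by (simp add: mom_def)
next
  case False
  then obtain l where j: "j = 2 * l + 1" by (metis oddE)
  let ?p = "pw n A v l"
  have "(bil n A (mv n A ?p) ?p)\<^sup>2 \<le> quad n A ?p * quad n A (mv n A ?p)"
    using bil_CS[OF psd, of "mv n A ?p" ?p] by (simp add: mult.commute)
  moreover have "Suc (2 * l + 1) div 2 = Suc l" "Suc (Suc (2 * l + 1)) div 2 = Suc l" by simp_all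
  moreover have "(2 * l + 1) div 2 = l" by simp
  ultimately show ?thesis using j by (simp add: mom_def ss_mv)
qed

lemma sum_logconvex:
  fixes a b c :: "'i \<Rightarrow> real"
  assumes "\<And>i. i \<in> I \<Longrightarrow> (b i)\<^sup>2 \<le> a i * c i" "\<And>i. i \<in> I \<Longrightarrow> 0 \<le> a i" "\<And>i. i \<in> I \<Longrightarrow> 0 \<le> c i"
  shows "(sum b I)\<^sup>2 \<le> sum a I * sum c I"
proof -
  have "\<bar>sum b I\<bar> \<le> (\<Sum>i\<in>I. sqrt (a i) * sqrt (c i))"
  proof -
    have "\<bar>sum b I\<bar> \<le> (\<Sum>i\<in>I. \<bar>b i\<bar>)" by (rule sum_abs)
    also have "\<dots> \<le> (\<Sum>i\<in>I. sqrt (a i) * sqrt (c i))"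
    proof (rule sum_mono)
      fix i assume i: "i \<in> I"
      have "\<bar>b i\<bar> = sqrt ((b i)\<^sup>2)" by simp
      also have "\<dots> \<le> sqrt (a i * c i)" using assms(1)[OF i] by (rule real_sqrt_le_mono)
      also have "\<dots> = sqrt (a i) * sqrt (c i)" by (simp add: real_sqrt_mult)
      finally show "\<bar>b i\<bar> \<le> sqrt (a i) * sqrt (c i)" .
    qed
    finally show ?thesis .
  qed
  then have "(sum b I)\<^sup>2 \<le> (\<Sum>i\<in>I. sqrt (a i) * sqrt (c i))\<^sup>2"
    by (metis abs_le_square_iff abs_of_nonneg abs_ge_zero order_trans abs_idempotent power2_abs)
  also have "\<dots> \<le> (\<Sum>i\<in>I. (sqrt (a i))\<^sup>2) * (\<Sum>i\<in>I. (sqrt (c i))\<^sup>2)"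
    by (rule Cauchy_Schwarz_ineq_sum)
  also have "\<dots> = sum a I * sum c I" using assms(2,3) by simp
  finally show ?thesis .
qed

lemma logconvex_zero:
  fixes f :: "nat \<Rightarrow> real"
  assumes lc: "\<And>j. (f (Suc j))\<^sup>2 \<le> f j * f (Suc (Suc j))" and nn: "\<And>j. 0 \<le> f j"
    and z: "f j = 0"
  shows "f (j + d) = 0"
proof (induction d)
  case 0 then show ?case using z by simp
next
  case (Suc d)
  have "(f (Suc (j + d)))\<^sup>2 \<le> 0" using lc[of "j + d"] Suc by simp
  then show ?case by simp
qed

lemma logconvex_upper:
  fixes f :: "nat \<Rightarrow> real"
  assumes lc: "\<And>j. (f (Suc j))\<^sup>2 \<le> f j * f (Suc (Suc j))" and nn: "\<And>j. 0 \<le> f j"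
    and pos: "0 < f N"
  shows "f N \<le> f 0 * (f (Suc N) / f N) ^ N"
proof -
  define r where "r = f (Suc N) / f N"
  have fpos: "0 < f j" if "j \<le> N" for j
  proof (rule ccontr)
    assume "\<not> 0 < f j"
    then have "f j = 0" using nn[of j] by simp
    then have "f (j + (N - j)) = 0" by (rule logconvex_zero[of f, OF lc nn])
    then show False using pos that by simp
  qed
  have r0: "0 \<le> r" unfolding r_def using nn pos by simp
  have ratio: "f (Suc (N - d)) \<le> r * f (N - d)" if "d \<le> N" for d
    using that
  proof (induction d)
    case 0 then show ?case using pos by (simp add: r_def)
  next
    case (Suc d)
    let ?j = "N - Suc d"
    have j1: "Suc ?j = N - d" using Suc.prems by simp
    have p0: "0 < f ?j" by (rule fpos) simp
    have p1: "0 < f (Suc ?j)" by (rule fpos) (use Suc.prems in simp)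
    have ih: "f (Suc (Suc ?j)) \<le> r * f (Suc ?j)" using Suc j1 by simp
    have "(f (Suc ?j))\<^sup>2 \<le> f ?j * f (Suc (Suc ?j))" by (rule lc)
    also have "\<dots> \<le> f ?j * (r * f (Suc ?j))" using ih p0 by (simp add: mult_left_mono)
    finally have "f (Suc ?j) * f (Suc ?j) \<le> (r * f ?j) * f (Suc ?j)"
      by (simp add: power2_eq_square algebra_simps)
    then show ?case using p1 by simp
  qed
  have "f j \<le> f 0 * r ^ j" if "j \<le> N" for j
    using that
  proof (induction j)
    case 0 then show ?case by simp
  next
    case (Suc j)
    have "f (Suc j) \<le> r * f j" using ratio[of "N - j"] Suc.prems by simp
    also have "\<dots> \<le> r * (f 0 * r ^ j)" using Suc r0 by (simp add: mult_left_mono)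
    finally show ?case by (simp add: algebra_simps)
  qed
  then show ?thesis by (simp add: r_def)
qed

lemma logconvex_lower:
  fixes f :: "nat \<Rightarrow> real"
  assumes lc: "\<And>j. (f (Suc j))\<^sup>2 \<le> f j * f (Suc (Suc j))" and nn: "\<And>j. 0 \<le> f j"
    and f0: "f 0 = 1"
  shows "(f 1) ^ j \<le> f j"
proof (cases "f 1 = 0")
  case True
  then show ?thesis using nn[of j] f0 by (cases j) auto
next
  case False
  define a where "a = f 1"
  have a: "0 < a" using False nn[of 1] by (simp add: a_def)
  have P: "0 < f j \<and> 0 < f (Suc j) \<and> a * f j \<le> f (Suc j)" for j
  proof (induction j)
    case 0 then show ?case using a f0 by (simp add: a_def)
  next
    case (Suc j)
    then have p0: "0 < f j" and p1: "0 < f (Suc j)" and h: "a * f j \<le> f (Suc j)" by auto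
    have "f (Suc j) * (a * f j) \<le> f (Suc j) * f (Suc j)" using h p1 by (simp add: mult_left_mono)
    also have "\<dots> \<le> f j * f (Suc (Suc j))" using lc[of j] by (simp add: power2_eq_square)
    finally have "f j * (a * f (Suc j)) \<le> f j * f (Suc (Suc j))" by (simp add: algebra_simps)
    then have "a * f (Suc j) \<le> f (Suc (Suc j))" using p0 by simp
    moreover have "0 < a * f (Suc j)" using a p1 by simp
    ultimately show ?case using p1 by simp
  qed
  have "a ^ j \<le> f j" for j
  proof (induction j)
    case 0 then show ?case using f0 by simp
  next
    case (Suc j)
    have "a ^ Suc j = a * a ^ j" by simp
    also have "\<dots> \<le> a * f j" using Suc a by simp
    also have "\<dots> \<le> f (Suc j)" using P[of j] by simp
    finally show ?case .
  qed
  then show ?thesis by (simp add: a_def)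
qed

definition tr :: "nat \<Rightarrow> (nat \<Rightarrow> nat \<Rightarrow> real) \<Rightarrow> nat \<Rightarrow> real" where
  "tr n A j = (\<Sum>i<n. mom n A (ev i) j)"
definition inW :: "nat \<Rightarrow> nat \<Rightarrow> nat \<Rightarrow> nat \<Rightarrow> bool" where
  "inW n k t j \<longleftrightarrow> (t \<le> j \<and> j < t + k) \<or> (j < t \<and> j + n < t + k)"
definition win :: "nat \<Rightarrow> nat \<Rightarrow> nat \<Rightarrow> (nat \<Rightarrow> real) \<Rightarrow> nat \<Rightarrow> real" where
  "win n k t x = (\<lambda>j. if j < n \<and> inW n k t j then x j else 0)"

lemma pw_lin: "j < n \<Longrightarrow> pw n A y l j = (\<Sum>i<n. y i * pw n A (ev i) l j)"
proof (induction l arbitrary: j)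
  case 0
  have "(\<Sum>i<n. y i * ev i j) = (\<Sum>i<n. if i = j then y i else 0)"
    by (rule sum.cong) (auto simp: ev_def)
  then show ?case using 0 by simp
next
  case (Suc l)
  have "pw n A y (Suc l) j = (\<Sum>q<n. A j q * pw n A y l q)" using Suc.prems by (simp add: mv_def)
  also have "\<dots> = (\<Sum>q<n. A j q * (\<Sum>i<n. y i * pw n A (ev i) l q))" by (simp add: Suc.IH)
  also have "\<dots> = (\<Sum>q<n. \<Sum>i<n. y i * (A j q * pw n A (ev i) l q))"
    by (simp add: sum_distrib_left algebra_simps)
  also have "\<dots> = (\<Sum>i<n. \<Sum>q<n. y i * (A j q * pw n A (ev i) l q))" by (rule sum.swap)
  also have "\<dots> = (\<Sum>i<n. y i * pw n A (ev i) (Suc l) j)"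
    using Suc.prems by (simp add: mv_def sum_distrib_left)
  finally show ?case .
qed

lemma ss_pw_bound: assumes "ss n y = 1"
  shows "ss n (pw n A y l) \<le> (\<Sum>i<n. ss n (pw n A (ev i) l))"
proof -
  have "ss n (pw n A y l) = (\<Sum>j<n. (\<Sum>i<n. y i * pw n A (ev i) l j)\<^sup>2)"
    unfolding ss_def by (rule sum.cong) (auto simp: pw_lin)
  also have "\<dots> \<le> (\<Sum>j<n. (\<Sum>i<n. (y i)\<^sup>2) * (\<Sum>i<n. (pw n A (ev i) l j)\<^sup>2))"
    by (rule sum_mono) (rule Cauchy_Schwarz_ineq_sum)
  also have "\<dots> = (\<Sum>j<n. \<Sum>i<n. (pw n A (ev i) l j)\<^sup>2)" using assms by (simp add: ss_def)
  also have "\<dots> = (\<Sum>i<n. ss n (pw n A (ev i) l))" unfolding ss_def by (rule sum.swap)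
  finally show ?thesis .
qed

lemma tr_logconvex: "sym_psd n A \<Longrightarrow> (tr n A (Suc j))\<^sup>2 \<le> tr n A j * tr n A (Suc (Suc j))"
  unfolding tr_def by (rule sum_logconvex) (auto simp: mom_logconvex mom_nonneg)

lemma tr_nonneg: "sym_psd n A \<Longrightarrow> 0 \<le> tr n A j"
  unfolding tr_def by (simp add: sum_nonneg mom_nonneg)

lemma ss_ev: "i < n \<Longrightarrow> ss n (ev i) = 1"
proof -
  assume i: "i < n"
  have "ss n (ev i) = (\<Sum>j<n. if j = i then 1 else 0)"
    unfolding ss_def by (rule sum.cong) (auto simp: ev_def)
  then show ?thesis using i by simp
qed

lemma tr_0: "tr n A 0 = real n"
  by (simp add: tr_def mom_def ss_ev)

lemma win_count: assumes "j < n" "k \<le> n" shows "card {t. t < n \<and> inW n k t j} = k"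
proof -
  have eq: "{t. t < n \<and> inW n k t j} = {Suc j - k..<Suc j} \<union> {Suc (j + n - k)..<n}"
    using assms by (auto simp: inW_def)
  have "card ({Suc j - k..<Suc j} \<union> {Suc (j + n - k)..<n}) = card {Suc j - k..<Suc j} + card {Suc (j + n - k)..<n}"
    by (rule card_Un_disjoint) (use assms in auto)
  then show ?thesis using eq assms by simp
qed

lemma win_supp: assumes "t < n" shows "card {j. j < n \<and> inW n k t j} \<le> k"
proof -
  have sub: "{j. j < n \<and> inW n k t j} \<subseteq> {t..<min n (t + k)} \<union> {..<t + k - n}"
    by (auto simp: inW_def)
  have "card {j. j < n \<and> inW n k t j} \<le> card ({t..<min n (t + k)} \<union> {..<t + k - n})"
    by (rule card_mono[OF _ sub]) simp
  also have "\<dots> \<le> card {t..<min n (t + k)} + card {..<t + k - n}" by (rule card_Un_le)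
  also have "\<dots> \<le> k" using assms by (cases "t + k \<le> n") (auto simp: min_def)
  finally show ?thesis .
qed

lemma win_sum: assumes "j < n" "k \<le> n" shows "(\<Sum>t<n. win n k t x j) = real k * x j"
proof -
  have "(\<Sum>t<n. win n k t x j) = (\<Sum>t<n. if inW n k t j then x j else 0)"
    by (rule sum.cong) (use assms in \<open>auto simp: win_def\<close>)
  also have "\<dots> = (\<Sum>t\<in>{t. t < n \<and> inW n k t j}. if inW n k t j then x j else 0)"
    by (rule sum.mono_neutral_cong_right) auto
  also have "\<dots> = (\<Sum>t\<in>{t. t < n \<and> inW n k t j}. x j)" by (rule sum.cong) auto
  also have "\<dots> = real (card {t. t < n \<and> inW n k t j}) * x j" by simp
  finally show ?thesis using win_count[OF assms] by simp
qed

lemma win_ss: assumes "k \<le> n" shows "(\<Sum>t<n. ss n (win n k t x)) = real k * ss n x"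
proof -
  have "(\<Sum>t<n. ss n (win n k t x)) = (\<Sum>j<n. \<Sum>t<n. (win n k t x j)\<^sup>2)"
    unfolding ss_def by (rule sum.swap)
  also have "\<dots> = (\<Sum>j<n. real k * (x j)\<^sup>2)"
  proof (rule sum.cong)
    fix j assume j: "j \<in> {..<n}"
    have "(\<Sum>t<n. (win n k t x j)\<^sup>2) = (\<Sum>t<n. win n k t (\<lambda>l. (x l)\<^sup>2) j)"
      by (rule sum.cong) (auto simp: win_def)
    then show "(\<Sum>t<n. (win n k t x j)\<^sup>2) = real k * (x j)\<^sup>2"
      using win_sum[of j n k "\<lambda>l. (x l)\<^sup>2"] j assms by simp
  qed simp
  finally show ?thesis by (simp add: ss_def sum_distrib_left)
qed

lemma bil_sum_left: "finite T \<Longrightarrow> bil n A (\<lambda>j. \<Sum>t\<in>T. u t j) z = (\<Sum>t\<in>T. bil n A (u t) z)"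
  unfolding bil_def
  by (simp add: sum_distrib_right sum.swap[of _ T "{..<n}"])

lemma bil_sum_right: "finite T \<Longrightarrow> bil n A x (\<lambda>j. \<Sum>t\<in>T. u t j) = (\<Sum>t\<in>T. bil n A x (u t))"
  unfolding bil_def
  by (simp add: sum_distrib_left sum.swap[of _ T "{..<n}"] mult.assoc)

lemma quad_cong: "(\<And>j. j < n \<Longrightarrow> x j = x' j) \<Longrightarrow> quad n A x = quad n A x'"
  unfolding quad_def by (intro sum.cong refl) auto

lemma quad_scale: "quad n A (\<lambda>j. c * x j) = c\<^sup>2 * quad n A x"
  unfolding quad_def by (simp add: sum_distrib_left power2_eq_square algebra_simps)

lemma windows_ineq: assumes psd: "sym_psd n A" and kn: "k \<le> n"
  shows "(real k)\<^sup>2 * quad n A x \<le> real n * (\<Sum>t<n. quad n A (win n k t x))"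
proof -
  let ?w = "\<lambda>t. win n k t x"
  let ?q = "\<lambda>t. quad n A (?w t)"
  have "(real k)\<^sup>2 * quad n A x = quad n A (\<lambda>j. real k * x j)" by (simp add: quad_scale)
  also have "\<dots> = quad n A (\<lambda>j. \<Sum>t<n. ?w t j)"
    by (rule quad_cong) (simp add: win_sum kn)
  also have "\<dots> = (\<Sum>t<n. \<Sum>s<n. bil n A (?w t) (?w s))"
    by (simp add: quad_bil bil_sum_left bil_sum_right)
  also have "\<dots> \<le> (\<Sum>t<n. \<Sum>s<n. sqrt (?q t) * sqrt (?q s))"
  proof (intro sum_mono)
    fix t s
    have "(bil n A (?w t) (?w s))\<^sup>2 \<le> ?q t * ?q s" by (rule bil_CS[OF psd])
    then have "\<bar>bil n A (?w t) (?w s)\<bar> \<le> sqrt (?q t * ?q s)"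
      using real_sqrt_le_mono by fastforce
    then show "bil n A (?w t) (?w s) \<le> sqrt (?q t) * sqrt (?q s)"
      by (simp add: real_sqrt_mult)
  qed
  also have "\<dots> = (\<Sum>t<n. sqrt (?q t))\<^sup>2"
    by (simp add: power2_eq_square sum_product)
  also have "\<dots> = (\<Sum>t<n. 1 * sqrt (?q t))\<^sup>2" by simp
  also have "\<dots> \<le> (\<Sum>t<n. 1\<^sup>2) * (\<Sum>t<n. (sqrt (?q t))\<^sup>2)" by (rule Cauchy_Schwarz_ineq_sum)
  also have "\<dots> = real n * (\<Sum>t<n. ?q t)" using quad_nonneg[OF psd] by simp
  finally show ?thesis .
qed

lemma dense_vec: assumes psd: "sym_psd n A" and k: "1 \<le> k" "k \<le> n"
  and hyp: "\<And>t. t < n \<Longrightarrow> quad n A (win n k t x) \<le> L * ss n (win n k t x)"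
  shows "real k * quad n A x \<le> real n * L * ss n x"
proof -
  have "(real k)\<^sup>2 * quad n A x \<le> real n * (\<Sum>t<n. quad n A (win n k t x))"
    by (rule windows_ineq[OF psd k(2)])
  also have "\<dots> \<le> real n * (\<Sum>t<n. L * ss n (win n k t x))"
    by (intro mult_left_mono sum_mono hyp) auto
  also have "\<dots> = real n * L * (real k * ss n x)"
    by (simp add: sum_distrib_left[symmetric] win_ss k(2))
  finally have "real k * (real k * quad n A x) \<le> real k * (real n * L * ss n x)"
    by (simp add: power2_eq_square algebra_simps)
  then show ?thesis using k by simp
qed

lemma final_num:
  fixes lam L :: real and n k m :: nat
  assumes l0: "0 \<le> lam" and L0: "0 \<le> L" and k1: "1 \<le> k" and kn: "k \<le> n" and m: "m = 5 * n"
    and R: "lam\<^sup>2 - L * lam \<le> real k * L\<^sup>2 / 4"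
    and D: "(real k * lam) ^ (2 * m) \<le> real n * (real n * L) ^ (2 * m)"
  shows "lam ^ 3 \<le> real n * L ^ 3"
proof (cases "L = 0")
  case True
  then have "lam\<^sup>2 \<le> 0" using R by simp
  then have "lam = 0" by simp
  then show ?thesis using True by simp
next
  case False
  then have Lp: "0 < L" using L0 by simp
  define \<rho> where "\<rho> = lam / L"
  have lam: "lam = \<rho> * L" using Lp by (simp add: \<rho>_def)
  have r0: "0 \<le> \<rho>" using l0 Lp by (simp add: \<rho>_def)
  have n1: "1 \<le> n" using k1 kn by simp
  have nr: "(0::real) < real n" using n1 by simp
  define u where "u = real k * \<rho> / real n"
  have u0: "0 \<le> u" using r0 by (simp add: u_def)
  have "(real k * lam) = u * (real n * L)" using nr by (simp add: u_def lam)
  then have "u ^ (2 * m) * (real n * L) ^ (2 * m) \<le> real n * (real n * L) ^ (2 * m)"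
    using D by (simp add: power_mult_distrib)
  moreover have "0 < (real n * L) ^ (2 * m)" using nr Lp by simp
  ultimately have un: "u ^ (2 * m) \<le> real n" by simp
  have bern: "1 + real (2 * m) * (1/10::real) \<le> (1 + 1/10) ^ (2 * m)"
    by (rule Bernoulli_inequality) simp
  then have "real n \<le> (11/10::real) ^ (2 * m)" using m by simp
  then have "u ^ (2 * m) \<le> (11/10::real) ^ (2 * m)" using un by simp
  moreover have sm: "2 * m = Suc (2 * m - 1)" using m n1 by simp
  ultimately have u11: "u \<le> 11/10" using power_le_imp_le_base[of u "2 * m - 1" "11/10"] by simp
  have Rr: "\<rho>\<^sup>2 - \<rho> \<le> real k / 4"
  proof -
    have "L\<^sup>2 * (\<rho>\<^sup>2 - \<rho>) \<le> L\<^sup>2 * (real k / 4)"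
      using R by (simp add: lam power2_eq_square algebra_simps)
    then show ?thesis using Lp by simp
  qed
  have kr: "real k * \<rho> \<le> 11/10 * real n" using u11 nr by (simp add: u_def divide_le_eq)
  show ?thesis
  proof (cases "n = 1")
    case True
    then have "u ^ (2 * m) \<le> 1" using un by simp
    then have "u \<le> 1" using sm power_le_imp_le_base[of u "2 * m - 1" 1] by simp
    then have "\<rho> \<le> 1" using True k1 kn by (simp add: u_def)
    then have "\<rho> ^ 3 \<le> 1" using r0 by (simp add: power_le_one)
    then have "\<rho> ^ 3 * L ^ 3 \<le> 1 * L ^ 3" using Lp by (intro mult_right_mono) auto
    then show ?thesis using True by (simp add: lam power_mult_distrib)
  next
    case False
    then have n2: "2 \<le> n" using n1 by simp
    show ?thesis
    proof (rule ccontr)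
      assume "\<not> ?thesis"
      then have "real n * L ^ 3 < \<rho> ^ 3 * L ^ 3" by (simp add: lam power_mult_distrib)
      then have big: "real n < \<rho> ^ 3" using Lp by simp
      have rp: "0 < \<rho>" using big nr r0 by (cases "\<rho> = 0") auto
      have "\<rho> * (\<rho>\<^sup>2 - \<rho>) \<le> \<rho> * (real k / 4)" using Rr r0 by (rule mult_left_mono)
      then have "\<rho> ^ 3 - \<rho>\<^sup>2 \<le> real k * \<rho> / 4"
        by (simp add: power2_eq_square power3_eq_cube algebra_simps)
      then have "\<rho> ^ 3 - \<rho>\<^sup>2 < 11/40 * \<rho> ^ 3" using kr big by linarith
      then have "29/40 * (\<rho> * \<rho>\<^sup>2) < \<rho>\<^sup>2" by (simp add: power3_eq_cube power2_eq_square)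
      then have "29/40 * \<rho> < 1" using rp by (simp add: power2_eq_square)
      then have rs: "\<rho> < 40/29" by simp
      then have "\<rho> ^ 3 < (40/29) ^ 3" using r0 by (intro power_strict_mono) auto
      moreover have "(40/29::real) ^ 3 < 3" by (simp add: power3_eq_cube)
      ultimately have "real n < 3" using big by linarith
      then have n2': "n = 2" using n2 by simp
      then have "k = 1 \<or> k = 2" using k1 kn by auto
      then show False
      proof
        assume "k = 1"
        then have "\<rho>\<^sup>2 - \<rho> \<le> 1/4" using Rr by simp
        have "\<rho> \<le> 5/4"
        proof (rule ccontr)
          assume "\<not> \<rho> \<le> 5/4"
          then have a: "5/4 < \<rho>" by simp
          have "5/4 * (1/4) < \<rho> * (\<rho> - 1)" using a by (intro mult_strict_mono) auto
          then show False using \<open>\<rho>\<^sup>2 - \<rho> \<le> 1/4\<close> by (simp add: power2_eq_square algebra_simps)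
        qed
        then have "\<rho> ^ 3 \<le> (5/4) ^ 3" using r0 by (intro power_mono) auto
        then show False using big n2' by (simp add: power3_eq_cube)
      next
        assume "k = 2"
        then have "\<rho> \<le> 11/10" using kr n2' by simp
        then have "\<rho> ^ 3 \<le> (11/10) ^ 3" using r0 by (intro power_mono) auto
        then show False using big n2' by (simp add: power3_eq_cube)
      qed
    qed
  qed
qed

lemma dense_main:
  assumes psd: "sym_psd n A" and ssy: "ss n y = 1" and k: "1 \<le> k" "k \<le> n" and L0: "0 \<le> L"
    and hyp: "\<And>i t. i < n \<Longrightarrow> t < n \<Longrightarrow>
       quad n A (win n k t (pw n A (ev i) m)) \<le> L * ss n (win n k t (pw n A (ev i) m))"
  shows "(real k * quad n A y) ^ (2 * m) \<le> real n * (real n * L) ^ (2 * m)"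
proof -
  define lam where "lam = quad n A y"
  have l0: "0 \<le> lam" using quad_nonneg[OF psd] by (simp add: lam_def)
  have f0: "mom n A y 0 = 1" using ssy by (simp add: mom_def)
  have f1: "mom n A y 1 = lam" by (simp add: mom_def lam_def)
  have "lam ^ (2 * m) \<le> mom n A y (2 * m)"
    using logconvex_lower[of "mom n A y", OF mom_logconvex[OF psd] mom_nonneg[OF psd] f0] f1 by simp
  also have "\<dots> = ss n (pw n A y m)" by (simp add: mom_def)
  also have "\<dots> \<le> (\<Sum>i<n. ss n (pw n A (ev i) m))" by (rule ss_pw_bound[OF ssy])
  also have "\<dots> = tr n A (2 * m)" by (simp add: tr_def mom_def)
  finally have lt: "lam ^ (2 * m) \<le> tr n A (2 * m)" .
  have trodd: "tr n A (Suc (2 * m)) = (\<Sum>i<n. quad n A (pw n A (ev i) m))"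
    by (simp add: tr_def mom_def)
  have kt: "real k * tr n A (Suc (2 * m)) \<le> real n * L * tr n A (2 * m)"
  proof -
    have "real k * tr n A (Suc (2 * m)) = (\<Sum>i<n. real k * quad n A (pw n A (ev i) m))"
      by (simp add: trodd sum_distrib_left)
    also have "\<dots> \<le> (\<Sum>i<n. real n * L * ss n (pw n A (ev i) m))"
      by (rule sum_mono) (rule dense_vec[OF psd k], auto intro: hyp)
    also have "\<dots> = real n * L * tr n A (2 * m)" by (simp add: tr_def mom_def sum_distrib_left)
    finally show ?thesis .
  qed
  show ?thesis
  proof (cases "tr n A (2 * m) = 0")
    case True
    then have "lam ^ (2 * m) \<le> 0" using lt by simp
    moreover have "0 \<le> lam ^ (2 * m)" using l0 by simp
    ultimately have "lam ^ (2 * m) = 0" by linarith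
    then have "(real k * lam) ^ (2 * m) = 0" by (simp add: power_mult_distrib)
    moreover have "0 \<le> real n * (real n * L) ^ (2 * m)" using L0 by simp
    ultimately show ?thesis unfolding lam_def by linarith
  next
    case False
    then have tp: "0 < tr n A (2 * m)" using tr_nonneg[OF psd, of "2 * m"] by simp
    define r where "r = tr n A (Suc (2 * m)) / tr n A (2 * m)"
    have up: "tr n A (2 * m) \<le> real n * r ^ (2 * m)"
      using logconvex_upper[of "tr n A", OF tr_logconvex[OF psd] tr_nonneg[OF psd] tp]
      by (simp add: r_def tr_0)
    have r0: "0 \<le> r" using tr_nonneg[OF psd] by (simp add: r_def)
    have kr: "real k * r \<le> real n * L" using kt tp by (simp add: r_def field_simps)
    have "(real k * lam) ^ (2 * m) = (real k) ^ (2 * m) * lam ^ (2 * m)" by (simp add: power_mult_distrib)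
    also have "\<dots> \<le> (real k) ^ (2 * m) * (real n * r ^ (2 * m))"
      using lt up by (intro mult_left_mono) auto
    also have "\<dots> = real n * (real k * r) ^ (2 * m)" by (simp add: power_mult_distrib)
    also have "\<dots> \<le> real n * (real n * L) ^ (2 * m)"
      using kr r0 by (intro mult_left_mono power_mono) auto
    finally show ?thesis by (simp add: lam_def)
  qed
qed

theorem math_main:
  assumes psd: "sym_psd n A" and k: "1 \<le> k" "k \<le> n" and m: "m = 5 * n"
    and hD: "\<And>i. i < n \<Longrightarrow> quad n A (ev i) \<le> L * ss n (ev i)"
    and hR: "\<And>i. i < n \<Longrightarrow> quad n A (rowmask n k A i) \<le> L * ss n (rowmask n k A i)"
    and hW: "\<And>i t. i < n \<Longrightarrow> t < n \<Longrightarrow>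
       quad n A (win n k t (pw n A (ev i) m)) \<le> L * ss n (win n k t (pw n A (ev i) m))"
    and ssy: "ss n y = 1" and cy: "card {j. j < n \<and> y j \<noteq> 0} \<le> k"
  shows "(quad n A y) ^ 3 \<le> real n * L ^ 3"
proof -
  have n0: "0 < n" using k by simp
  have L0: "0 \<le> L" using hD[OF n0] quad_ev[OF n0] ss_ev[OF n0] diag_nonneg[OF psd n0] by simp
  have R: "(quad n A y)\<^sup>2 - L * quad n A y \<le> real k * L\<^sup>2 / 4"
    by (rule rows_main[OF psd ssy cy _ L0]) (rule rowmask_bound[OF psd _ k(2) hR _ _ L0]; assumption)
  have D: "(real k * quad n A y) ^ (2 * m) \<le> real n * (real n * L) ^ (2 * m)"
    by (rule dense_main[OF psd ssy k L0 hW])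
  show ?thesis
    by (rule final_num[OF quad_nonneg[OF psd] L0 k m R D])
qed

notation CSeq (infixr ";;" 60)

definition FOR :: "nat \<Rightarrow> iexp \<Rightarrow> com \<Rightarrow> com" where
  "FOR r e body = (ISet r (IC 0) ;; CWhile (ILess (IR r) e) (body ;; ISet r (IAdd (IR r) (IC 1))))"

fun wr :: "com \<Rightarrow> nat set" where
  "wr (ISet r e) = {r}"
| "wr (CSeq a b) = wr a \<union> wr b"
| "wr (CIf _ a b) = wr a \<union> wr b"
| "wr (CWhile _ a) = wr a"
| "wr _ = {}"

lemma wr_FOR[simp]: "wr (FOR r e b) = insert r (wr b)"
  by (auto simp: FOR_def)

lemma big_step_wr: "big_step c s t s' \<Longrightarrow> r \<notin> wr c \<Longrightarrow> fst s' r = fst s r"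
  by (induction rule: big_step.induct) auto

lemma bs_RSet: "s' = (fst s, (snd s)(ieval a s := reval e s)) \<Longrightarrow> big_step (RSet a e) s 1 s'"
  using big_step.RSet by simp
lemma bs_ISet: "s' = ((fst s)(r := ieval e s), snd s) \<Longrightarrow> big_step (ISet r e) s 1 s'"
  using big_step.ISet by simp

lemma int_ne_neg: "int x \<noteq> - numeral w"
  by (metis le_minus_iff neg_0_le_iff_le neg_numeral_le_zero not_numeral_le_zero of_nat_0_le_iff order_antisym)

lemma int_ne_m1: "int x \<noteq> - 1"
  by (smt (verit) of_nat_0_le_iff)

lemma neg_lt_int: "(-1::int) < int x" "- numeral w < int x"
  by (smt (verit) of_nat_0_le_iff) (metis less_le_trans neg_numeral_less_zero of_nat_0_le_iff)

lemma while_rule: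
  assumes step: "\<And>j s. j < N \<Longrightarrow> I j s \<Longrightarrow> beval b s \<Longrightarrow> \<exists>t s'. big_step c s t s' \<and> t \<le> T \<and> I (Suc j) s'"
    and cond: "\<And>j s. j \<le> N \<Longrightarrow> I j s \<Longrightarrow> beval b s \<longleftrightarrow> j < N"
    and I0: "I 0 s"
  shows "\<exists>t s'. big_step (CWhile b c) s t s' \<and> t \<le> N * (T + 1) + 1 \<and> I N s'"
proof -
  have "\<And>j s. d = N - j \<Longrightarrow> j \<le> N \<Longrightarrow> I j s \<Longrightarrow>
          \<exists>t s'. big_step (CWhile b c) s t s' \<and> t \<le> d * (T + 1) + 1 \<and> I N s'" for d
  proof (induction d)
    case 0
    then have "j = N" by simp
    then have "\<not> beval b s" using cond[of j s] 0 by simp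
    then show ?case using 0 \<open>j = N\<close> big_step.WhileF[of b s c] by (intro exI[of _ 1] exI[of _ s]) auto
  next
    case (Suc d)
    then have jN: "j < N" by simp
    then have bb: "beval b s" using cond[of j s] Suc.prems by simp
    obtain t1 s1 where 1: "big_step c s t1 s1" "t1 \<le> T" "I (Suc j) s1" using step[OF jN Suc(4) bb] by blast
    have dd: "d = N - Suc j" "Suc j \<le> N" using Suc.prems by auto
    obtain t2 s2 where 2: "big_step (CWhile b c) s1 t2 s2" "t2 \<le> d * (T + 1) + 1" "I N s2"
      using Suc.IH[OF dd 1(3)] by blast
    show ?case using 1 2 bb
      by (intro exI[of _ "Suc (t1 + t2)"] exI[of _ s2]) (auto intro: big_step.WhileT)
  qed
  from this[of N 0 s] show ?thesis using I0 by simp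
qed

lemma for_rule:
  assumes init: "I 0 ((fst s)(r := 0), snd s)"
    and step: "\<And>j s. j < N \<Longrightarrow> I j s \<Longrightarrow> fst s r = int j \<Longrightarrow>
        \<exists>t s'. big_step body s t s' \<and> t \<le> T \<and> fst s' r = int j \<and> I (Suc j) ((fst s')(r := int j + 1), snd s')"
    and bound: "\<And>j s. j \<le> N \<Longrightarrow> I j s \<Longrightarrow> fst s r = int j \<Longrightarrow> ieval e s = int N"
  shows "\<exists>t s'. big_step (FOR r e body) s t s' \<and> t \<le> N * (T + 2) + 2 \<and> I N s' \<and> fst s' r = int N"
proof -
  let ?s0 = "((fst s)(r := 0), snd s)"
  have b0: "big_step (ISet r (IC 0)) s 1 ?s0" using big_step.ISet[of r "IC 0" s] by simp
  have "\<exists>t s'. big_step (CWhile (ILess (IR r) e) (body ;; ISet r (IAdd (IR r) (IC 1)))) ?s0 t s'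
          \<and> t \<le> N * ((T + 1) + 1) + 1 \<and> (I N s' \<and> fst s' r = int N)"
  proof (rule while_rule[where I="\<lambda>j s. I j s \<and> fst s r = int j"])
    fix j s assume j: "j < N" and Is: "I j s \<and> fst s r = int j"
    obtain t s' where 1: "big_step body s t s'" "t \<le> T" "fst s' r = int j"
      "I (Suc j) ((fst s')(r := int j + 1), snd s')" using step[OF j] Is by blast
    have "big_step (ISet r (IAdd (IR r) (IC 1))) s' 1 ((fst s')(r := int j + 1), snd s')"
      using big_step.ISet[of r "IAdd (IR r) (IC 1)" s'] 1(3) by simp
    then have "big_step (body ;; ISet r (IAdd (IR r) (IC 1))) s (t + 1) ((fst s')(r := int j + 1), snd s')"
      using 1(1) by (rule big_step.Seq[rotated])
    then show "\<exists>t s'. big_step (body ;; ISet r (IAdd (IR r) (IC 1))) s t s' \<and> t \<le> T + 1 \<and>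
        I (Suc j) s' \<and> fst s' r = int (Suc j)" using 1 by (intro exI conjI) auto
  next
    fix j s assume "j \<le> N" "I j s \<and> fst s r = int j"
    then show "beval (ILess (IR r) e) s = (j < N)" using bound by auto
  next
    show "I 0 ?s0 \<and> fst ?s0 r = int 0" using init by simp
  qed
  then obtain t s' where 2: "big_step (CWhile (ILess (IR r) e) (body ;; ISet r (IAdd (IR r) (IC 1)))) ?s0 t s'"
    "t \<le> N * ((T + 1) + 1) + 1" "I N s'" "fst s' r = int N" by blast
  show ?thesis using big_step.Seq[OF b0 2(1)] 2 unfolding FOR_def
    by (intro exI[of _ "1 + t"] exI[of _ s']) (auto simp: algebra_simps)
qed

lemma acc_loop:
  assumes r0: "fst s 0 = int n" and rne: "r \<noteq> 0"
    and D: "\<And>s1. (\<forall>r'. r' \<noteq> r \<longrightarrow> fst s1 r' = fst s r') \<Longrightarrow> ieval D s1 = \<alpha>"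
    and E: "\<And>j s1. j < n \<Longrightarrow> fst s1 = (fst s)(r := int j) \<Longrightarrow> (\<forall>a. a \<noteq> \<alpha> \<longrightarrow> snd s1 a = snd s a) \<Longrightarrow> reval E s1 = f j"
  shows "\<exists>t s'. big_step (FOR r (IR 0) (RSet D (RAdd (RR D) E))) s t s' \<and> t \<le> n * 3 + 2 \<and>
     fst s' = (fst s)(r := int n) \<and> snd s' = (snd s)(\<alpha> := snd s \<alpha> + (\<Sum>j<n. f j))"
proof -
  define I where "I j s1 \<longleftrightarrow> (\<forall>r'. r' \<noteq> r \<longrightarrow> fst s1 r' = fst s r') \<and>
     snd s1 = (snd s)(\<alpha> := snd s \<alpha> + (\<Sum>l<j. f l))" for j s1
  have "\<exists>t s'. big_step (FOR r (IR 0) (RSet D (RAdd (RR D) E))) s t s' \<and> t \<le> n * (1 + 2) + 2 \<and> I n s' \<and> fst s' r = int n"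
  proof (rule for_rule)
    show "I 0 ((fst s)(r := 0), snd s)" by (simp add: I_def)
  next
    fix j s1 assume j: "j < n" and I: "I j s1" and c: "fst s1 r = int j"
    have fs: "fst s1 = (fst s)(r := int j)" using I c by (auto simp: I_def)
    have d: "ieval D s1 = \<alpha>" using D I by (simp add: I_def)
    have e: "reval E s1 = f j" using E[OF j fs] I by (simp add: I_def)
    let ?s2 = "(fst s1, (snd s1)(\<alpha> := snd s1 \<alpha> + f j))"
    have b: "big_step (RSet D (RAdd (RR D) E)) s1 1 ?s2" by (rule bs_RSet) (simp add: d e)
    show "\<exists>t s'. big_step (RSet D (RAdd (RR D) E)) s1 t s' \<and> t \<le> 1 \<and> fst s' r = int j \<and>
        I (Suc j) ((fst s')(r := int j + 1), snd s')"
      using b I c by (intro exI[of _ 1] exI[of _ ?s2]) (auto simp: I_def)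
  next
    fix j s1 assume "j \<le> n" "I j s1" "fst s1 r = int j"
    then show "ieval (IR 0) s1 = int n" using r0 rne by (simp add: I_def)
  qed
  then obtain t s' where 1: "big_step (FOR r (IR 0) (RSet D (RAdd (RR D) E))) s t s'" "t \<le> n * (1 + 2) + 2" "I n s'" "fst s' r = int n" by blast
  have "fst s' = (fst s)(r := int n)" using 1(3,4) by (auto simp: I_def)
  then show ?thesis using 1 unfolding I_def by (intro exI[of _ t] exI[of _ s']) auto
qed

lemma fill_loop:
  assumes r0: "fst s 0 = int n" and rne: "r \<noteq> 0" and wrC: "wr C = {}"
    and body: "\<And>j s1. j < n \<Longrightarrow> fst s1 = (fst s)(r := int j) \<Longrightarrow> (\<forall>a. (a < b \<or> b + int j \<le> a) \<longrightarrow> snd s1 a = snd s a) \<Longrightarrow>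
        \<exists>t s2. big_step C s1 t s2 \<and> t \<le> T \<and> snd s2 = (snd s1)(b + int j := f j)"
  shows "\<exists>t s'. big_step (FOR r (IR 0) C) s t s' \<and> t \<le> n * (T + 2) + 2 \<and> fst s' = (fst s)(r := int n) \<and>
     (\<forall>j<n. snd s' (b + int j) = f j) \<and> (\<forall>a. (a < b \<or> b + int n \<le> a) \<longrightarrow> snd s' a = snd s a)"
proof -
  define I where "I j s1 \<longleftrightarrow> (\<forall>r'. r' \<noteq> r \<longrightarrow> fst s1 r' = fst s r') \<and>
     (\<forall>l<j. snd s1 (b + int l) = f l) \<and> (\<forall>a. (a < b \<or> b + int j \<le> a) \<longrightarrow> snd s1 a = snd s a)" for j s1
  have "\<exists>t s'. big_step (FOR r (IR 0) C) s t s' \<and> t \<le> n * (T + 2) + 2 \<and> I n s' \<and> fst s' r = int n"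
  proof (rule for_rule)
    show "I 0 ((fst s)(r := 0), snd s)" by (simp add: I_def)
  next
    fix j s1 assume j: "j < n" and I: "I j s1" and c: "fst s1 r = int j"
    have fs: "fst s1 = (fst s)(r := int j)" using I c by (auto simp: I_def)
    obtain t s2 where 1: "big_step C s1 t s2" "t \<le> T" "snd s2 = (snd s1)(b + int j := f j)"
      using body[OF j fs] I by (auto simp: I_def)
    have f2: "fst s2 = fst s1" using big_step_wr[OF 1(1)] wrC by auto
    have "I (Suc j) ((fst s2)(r := int j + 1), snd s2)"
      unfolding I_def
    proof (intro conjI allI impI)
      fix r' assume "r' \<noteq> r" then show "fst ((fst s2)(r := int j + 1), snd s2) r' = fst s r'"
        using f2 I by (simp add: I_def)
    next
      fix l assume l: "l < Suc j"
      show "snd ((fst s2)(r := int j + 1), snd s2) (b + int l) = f l"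
      proof (cases "l = j")
        case True then show ?thesis using 1(3) by simp
      next
        case False then have "l < j" using l by simp
        then show ?thesis using 1(3) I by (simp add: I_def)
      qed
    next
      fix a assume a: "a < b \<or> b + int (Suc j) \<le> a"
      then have "a \<noteq> b + int j" by auto
      moreover have "a < b \<or> b + int j \<le> a" using a by auto
      moreover have "snd s1 a = snd s a" using I \<open>a < b \<or> b + int j \<le> a\<close> unfolding I_def by blast
      ultimately show "snd ((fst s2)(r := int j + 1), snd s2) a = snd s a"
        using 1(3) by simp
    qed
    then show "\<exists>t s'. big_step C s1 t s' \<and> t \<le> T \<and> fst s' r = int j \<and> I (Suc j) ((fst s')(r := int j + 1), snd s')"
      using 1 f2 c by (intro exI[of _ t] exI[of _ s2]) simp
  next
    fix j s1 assume "j \<le> n" "I j s1" "fst s1 r = int j"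
    then show "ieval (IR 0) s1 = int n" using r0 rne by (simp add: I_def)
  qed
  then obtain t s' where 1: "big_step (FOR r (IR 0) C) s t s'" "t \<le> n * (T + 2) + 2" "I n s'" "fst s' r = int n" by blast
  have "fst s' = (fst s)(r := int n)" using 1(3,4) by (auto simp: I_def)
  then show ?thesis using 1 unfolding I_def by (intro exI[of _ t] exI[of _ s']) auto
qed

definition aOUT :: "nat \<Rightarrow> iexp" where "aOUT q = IAdd (IR 2) (IR q)"
definition aC :: "nat \<Rightarrow> iexp" where "aC q = IAdd (IAdd (IR 2) (IR 0)) (IR q)"
definition aY :: "nat \<Rightarrow> iexp" where "aY q = IAdd (IAdd (IAdd (IR 2) (IR 0)) (IR 0)) (IR q)"
definition aZ :: "nat \<Rightarrow> iexp" where "aZ q = IAdd (IAdd (IAdd (IAdd (IR 2) (IR 0)) (IR 0)) (IR 0)) (IR q)"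

definition vecB :: "nat \<Rightarrow> state \<Rightarrow> int \<Rightarrow> nat \<Rightarrow> real" where
  "vecB n s b = (\<lambda>j. if j < n then snd s (b + int j) else 0)"

definition memA :: "nat \<Rightarrow> (nat \<Rightarrow> nat \<Rightarrow> real) \<Rightarrow> state \<Rightarrow> bool" where
  "memA n A s \<longleftrightarrow> (\<forall>i<n. \<forall>j<n. snd s (int (i * n + j)) = A i j)"

definition ev_inner :: com where
  "ev_inner = FOR 12 (IR 0) (RSet (IC (-5)) (RAdd (RR (IC (-5))) (RMul (RR (IAdd (IR 13) (IR 12))) (RR (aC 12)))))"
definition ev_body :: com where
  "ev_body = RSet (IC (-5)) (RC 0) ;; ev_inner ;;
     RSet (IC (-3)) (RAdd (RR (IC (-3))) (RMul (RR (aC 7)) (RR (IC (-5))))) ;; ISet 13 (IAdd (IR 13) (IR 0))"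
definition ev_num :: com where
  "ev_num = RSet (IC (-3)) (RC 0) ;; ISet 13 (IC 0) ;; FOR 7 (IR 0) ev_body"

lemma ev_inner_spec:
  assumes r0: "fst s 0 = int n" and r2: "fst s 2 = int (n * n)" and r13: "fst s 13 = int (p * n)"
    and p: "p < n" and mA: "memA n A s"
  shows "\<exists>t s'. big_step ev_inner s t s' \<and> t \<le> n * 3 + 2 \<and> fst s' = (fst s)(12 := int n) \<and>
     snd s' = (snd s)(-5 := snd s (-5) + (\<Sum>q<n. A p q * vecB n s (int (n * n) + int n) q))"
  unfolding ev_inner_def
proof (rule acc_loop[OF r0])
  fix s1 :: state assume "\<forall>r'. r' \<noteq> 12 \<longrightarrow> fst s1 r' = fst s r'"
  then show "ieval (IC (-5)) s1 = -5" by simp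
next
  fix j s1 assume j: "j < n" and fs: "fst s1 = (fst s)(12 := int j)" and fr: "\<forall>a. a \<noteq> -5 \<longrightarrow> snd s1 a = snd s a"
  have e1: "ieval (IAdd (IR 13) (IR 12)) s1 = int (p * n + j)" using fs r13 by simp
  have e2: "ieval (aC 12) s1 = int (n * n + n + j)" using fs r0 r2 by (simp add: aC_def)
  have v1: "snd s1 (int (p * n + j)) = A p j" using fr int_ne_neg mA p j by (metis memA_def)
  have v2: "snd s1 (int (n * n + n + j)) = vecB n s (int (n * n) + int n) j"
    using fr int_ne_neg[of "n * n + n + j"] j by (simp add: vecB_def)
  show "reval (RMul (RR (IAdd (IR 13) (IR 12))) (RR (aC 12))) s1 = A p j * vecB n s (int (n * n) + int n) j"
    using e1 e2 v1 v2 by simp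
qed simp

lemma ev_num_spec:
  assumes r0: "fst s 0 = int n" and r2: "fst s 2 = int (n * n)" and mA: "memA n A s"
  shows "\<exists>t s'. big_step ev_num s t s' \<and> t \<le> n * (n * 3 + 7) + 4 \<and>
     (\<forall>r. r \<notin> {7, 12, 13} \<longrightarrow> fst s' r = fst s r) \<and>
     (\<forall>a. a \<notin> {-3, -5} \<longrightarrow> snd s' a = snd s a) \<and>
     snd s' (-3) = quad n A (vecB n s (int (n * n) + int n))"
proof -
  let ?c = "vecB n s (int (n * n) + int n)"
  define s0 where "s0 = ((fst s)(13 := 0), (snd s)(-3 := 0))"
  have x: "big_step (RSet (IC (-3)) (RC 0)) s 1 (fst s, (snd s)(-3 := 0))" by (rule bs_RSet) simp
  have y: "big_step (ISet 13 (IC 0)) (fst s, (snd s)(-3 := 0)) 1 s0" by (rule bs_ISet) (simp add: s0_def)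
  define I where "I p s1 \<longleftrightarrow> (\<forall>r. r \<notin> {7, 12, 13} \<longrightarrow> fst s1 r = fst s r) \<and> fst s1 13 = int (p * n) \<and>
     (\<forall>a. a \<notin> {-3, -5} \<longrightarrow> snd s1 a = snd s a) \<and>
     snd s1 (-3) = (\<Sum>i<p. ?c i * (\<Sum>q<n. A i q * ?c q))" for p s1
  have "\<exists>t s'. big_step (FOR 7 (IR 0) ev_body) s0 t s' \<and> t \<le> n * ((n * 3 + 5) + 2) + 2 \<and> I n s' \<and> fst s' 7 = int n"
  proof (rule for_rule)
    show "I 0 ((fst s0)(7 := 0), snd s0)" by (simp add: I_def s0_def)
  next
    fix p s1 assume p: "p < n" and I: "I p s1" and c7: "fst s1 7 = int p"
    define s2 where "s2 = (fst s1, (snd s1)(-5 := 0))"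
    have b2: "big_step (RSet (IC (-5)) (RC 0)) s1 1 s2" by (rule bs_RSet) (simp add: s2_def)
    have fr2: "\<forall>a. a \<notin> {-3, -5} \<longrightarrow> snd s2 a = snd s a" using I by (simp add: I_def s2_def)
    have mA2: "memA n A s2" using mA fr2 int_ne_neg unfolding memA_def by (metis insert_iff singletonD)
    have c2: "vecB n s2 (int (n * n) + int n) = ?c"
    proof
      fix j show "vecB n s2 (int (n * n) + int n) j = ?c j"
        using fr2 int_ne_neg[of "n * n + n + j"] by (simp add: vecB_def)
    qed
    have rr: "fst s2 0 = int n" "fst s2 2 = int (n * n)" "fst s2 13 = int (p * n)"
      using I r0 r2 by (simp_all add: I_def s2_def)
    obtain t3 s3 where 3: "big_step ev_inner s2 t3 s3" "t3 \<le> n * 3 + 2" "fst s3 = (fst s2)(12 := int n)"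
      "snd s3 = (snd s2)(-5 := snd s2 (-5) + (\<Sum>q<n. A p q * vecB n s2 (int (n * n) + int n) q))"
      using ev_inner_spec[OF rr p mA2] by blast
    define s4 where "s4 = (fst s3, (snd s3)(-3 := snd s3 (-3) + snd s3 (fst s3 2 + fst s3 0 + fst s3 7) * snd s3 (-5)))"
    have b4: "big_step (RSet (IC (-3)) (RAdd (RR (IC (-3))) (RMul (RR (aC 7)) (RR (IC (-5)))))) s3 1 s4"
      by (rule bs_RSet) (simp add: s4_def aC_def)
    define s5 where "s5 = ((fst s4)(13 := fst s4 13 + fst s4 0), snd s4)"
    have b5: "big_step (ISet 13 (IAdd (IR 13) (IR 0))) s4 1 s5" by (rule bs_ISet) (simp add: s5_def)
    have bb: "big_step ev_body s1 (1 + (t3 + (1 + 1))) s5"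
      unfolding ev_body_def by (rule big_step.Seq[OF b2 big_step.Seq[OF 3(1) big_step.Seq[OF b4 b5]]])
    have cp: "snd s3 (fst s3 2 + fst s3 0 + fst s3 7) = ?c p"
    proof -
      have "fst s3 2 + fst s3 0 + fst s3 7 = int (n * n + n + p)" using 3(3) rr c7 by (simp add: s2_def)
      moreover have "snd s3 (int (n * n + n + p)) = snd s (int (n * n + n + p))"
        using 3(4) fr2 int_ne_neg[of "n * n + n + p"] by simp
      ultimately show ?thesis using p by (simp add: vecB_def)
    qed
    have "I (Suc p) ((fst s5)(7 := int p + 1), snd s5)"
      unfolding I_def
    proof (intro conjI allI impI)
      fix r :: nat assume "r \<notin> {7, 12, 13}"
      then show "fst ((fst s5)(7 := int p + 1), snd s5) r = fst s r"
        using I 3(3) by (simp add: I_def s5_def s4_def s2_def)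
    next
      show "fst ((fst s5)(7 := int p + 1), snd s5) 13 = int (Suc p * n)"
        using 3(3) rr by (simp add: s5_def s4_def s2_def algebra_simps)
    next
      fix a :: int assume "a \<notin> {-3, -5}"
      then show "snd ((fst s5)(7 := int p + 1), snd s5) a = snd s a"
        using 3(4) fr2 by (simp add: s5_def s4_def s2_def)
    next
      have v3: "snd s3 (-3) = snd s1 (-3)" using 3(4) by (simp add: s2_def)
      have v5: "snd s3 (-5) = (\<Sum>q<n. A p q * ?c q)" using 3(4) c2 by (simp add: s2_def)
      have "snd s5 (-3) = snd s3 (-3) + snd s3 (fst s3 2 + fst s3 0 + fst s3 7) * snd s3 (-5)"
        by (simp add: s5_def s4_def)
      then have "snd s5 (-3) = snd s1 (-3) + ?c p * (\<Sum>q<n. A p q * ?c q)"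
        by (simp only: v3 v5 cp)
      then show "snd ((fst s5)(7 := int p + 1), snd s5) (-3) = (\<Sum>i<Suc p. ?c i * (\<Sum>q<n. A i q * ?c q))"
        using I by (simp add: I_def)
    qed
    moreover have "fst s5 7 = int p" using 3(3) c7 by (simp add: s5_def s4_def s2_def)
    moreover have "1 + (t3 + (1 + 1)) \<le> n * 3 + 5" using 3(2) by simp
    ultimately show "\<exists>t s'. big_step ev_body s1 t s' \<and> t \<le> n * 3 + 5 \<and> fst s' 7 = int p \<and>
         I (Suc p) ((fst s')(7 := int p + 1), snd s')" using bb by blast
  next
    fix p s1 assume "p \<le> n" "I p s1" "fst s1 7 = int p"
    then show "ieval (IR 0) s1 = int n" using r0 by (simp add: I_def)
  qed
  then obtain t s' where 1: "big_step (FOR 7 (IR 0) ev_body) s0 t s'" "t \<le> n * ((n * 3 + 5) + 2) + 2" "I n s'"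
    by blast
  have q: "quad n A ?c = (\<Sum>i<n. ?c i * (\<Sum>q<n. A i q * ?c q))"
    by (simp add: quad_def sum_distrib_left mult.assoc)
  have "big_step ev_num s (1 + (1 + t)) s'" unfolding ev_num_def
    by (rule big_step.Seq[OF x big_step.Seq[OF y 1(1)]])
  then have "big_step ev_num s (2 + t) s'" by simp
  moreover have "2 + t \<le> n * (n * 3 + 7) + 4" using 1(2) by (simp add: algebra_simps)
  ultimately show ?thesis using 1(3) q unfolding I_def by (intro exI[of _ "2 + t"] exI[of _ s']) (auto simp: s0_def)
qed

definition GdA :: "nat \<Rightarrow> nat \<Rightarrow> (nat \<Rightarrow> nat \<Rightarrow> real) \<Rightarrow> (nat \<Rightarrow> real) set \<Rightarrow> real \<Rightarrow> real \<Rightarrow> (nat \<Rightarrow> real) \<Rightarrow> bool" where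
  "GdA n k A X bn bd ov \<longleftrightarrow> (bd = 0 \<and> (\<forall>c\<in>X. ss n c = 0)) \<or>
     (0 < bd \<and> ss n ov = bd \<and> quad n A ov = bn \<and> norm0 n ov \<le> k \<and> (\<forall>c\<in>X. quad n A c * bd \<le> bn * ss n c))"

lemma ss_zero_quad: assumes "ss n c = 0" shows "quad n A c = 0"
proof -
  have "\<forall>j\<in>{..<n}. (c j)\<^sup>2 = 0" using assms unfolding ss_def
    by (subst sum_nonneg_eq_0_iff[symmetric]) auto
  then have "\<forall>j<n. c j = 0" by simp
  then show ?thesis by (simp add: quad_def)
qed

lemma GdA_a: "GdA n k A X bn bd ov \<Longrightarrow> \<not> 0 < ss n c \<Longrightarrow> GdA n k A (insert c X) bn bd ov"
proof -
  assume G: "GdA n k A X bn bd ov" and c: "\<not> 0 < ss n c"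
  then have s0: "ss n c = 0" using ss_nonneg[of n c] by simp
  then have "quad n A c = 0" by (rule ss_zero_quad)
  then show ?thesis using G s0 by (auto simp: GdA_def)
qed

lemma GdA_b: "GdA n k A X bn bd ov \<Longrightarrow> 0 < ss n c \<Longrightarrow> bd = 0 \<Longrightarrow> norm0 n c \<le> k \<Longrightarrow>
   GdA n k A (insert c X) (quad n A c) (ss n c) c"
  unfolding GdA_def using ss_zero_quad by fastforce

lemma GdA_c: assumes G: "GdA n k A X bn bd ov" and p: "0 < ss n c" and bd: "bd \<noteq> 0" and nc: "norm0 n c \<le> k"
  and lt: "bn * ss n c < quad n A c * bd"
  shows "GdA n k A (insert c X) (quad n A c) (ss n c) c"
proof -
  have bdp: "0 < bd" and old: "\<forall>c'\<in>X. quad n A c' * bd \<le> bn * ss n c'"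
    using G bd by (auto simp: GdA_def)
  have "quad n A c' * ss n c \<le> quad n A c * ss n c'" if c': "c' \<in> X" for c'
  proof -
    have "quad n A c' * ss n c * bd = (quad n A c' * bd) * ss n c" by (simp add: algebra_simps)
    also have "\<dots> \<le> (bn * ss n c') * ss n c" using old c' p by (intro mult_right_mono) auto
    also have "\<dots> = (bn * ss n c) * ss n c'" by (simp add: algebra_simps)
    also have "\<dots> \<le> (quad n A c * bd) * ss n c'" using lt ss_nonneg[of n c'] by (intro mult_right_mono) auto
    finally have "(quad n A c' * ss n c) * bd \<le> (quad n A c * ss n c') * bd" by (simp add: algebra_simps)
    then show ?thesis using bdp by simp
  qed
  then show ?thesis using p nc by (auto simp: GdA_def)
qed

lemma GdA_d: assumes G: "GdA n k A X bn bd ov" and p: "0 < ss n c" and bd: "bd \<noteq> 0"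
  and ge: "\<not> bn * ss n c < quad n A c * bd"
  shows "GdA n k A (insert c X) bn bd ov"
  using G bd ge by (auto simp: GdA_def not_less algebra_simps)

definition ev_den :: com where
  "ev_den = RSet (IC (-4)) (RC 0) ;; FOR 12 (IR 0) (RSet (IC (-4)) (RAdd (RR (IC (-4))) (RMul (RR (aC 12)) (RR (aC 12)))))"
definition UPD :: com where
  "UPD = RSet (IC (-1)) (RR (IC (-3))) ;; RSet (IC (-2)) (RR (IC (-4))) ;; FOR 12 (IR 0) (RSet (aOUT 12) (RR (aC 12)))"
definition ev_dec :: com where
  "ev_dec = CIf (RLess (RC 0) (RR (IC (-4))))
     (CIf (REq (RR (IC (-2))) (RC 0)) UPD
        (CIf (RLess (RMul (RR (IC (-1))) (RR (IC (-4)))) (RMul (RR (IC (-3))) (RR (IC (-2))))) UPD CSkip))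
     CSkip"
definition EVAL :: com where "EVAL = ev_num ;; ev_den ;; ev_dec"

abbreviation cand :: "nat \<Rightarrow> state \<Rightarrow> nat \<Rightarrow> real" where "cand n s \<equiv> vecB n s (int (n * n) + int n)"
abbreviation outv :: "nat \<Rightarrow> state \<Rightarrow> nat \<Rightarrow> real" where "outv n s \<equiv> vecB n s (int (n * n))"

lemma ev_den_spec:
  assumes r0: "fst s 0 = int n" and r2: "fst s 2 = int (n * n)"
  shows "\<exists>t s'. big_step ev_den s t s' \<and> t \<le> n * 3 + 3 \<and> fst s' = (fst s)(12 := int n) \<and>
     snd s' = (snd s)(-4 := ss n (cand n s))"
proof -
  define s1 where "s1 = (fst s, (snd s)(-4 := 0))"
  have b1: "big_step (RSet (IC (-4)) (RC 0)) s 1 s1" by (rule bs_RSet) (simp add: s1_def)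
  have "\<exists>t s'. big_step (FOR 12 (IR 0) (RSet (IC (-4)) (RAdd (RR (IC (-4))) (RMul (RR (aC 12)) (RR (aC 12)))))) s1 t s' \<and>
     t \<le> n * 3 + 2 \<and> fst s' = (fst s1)(12 := int n) \<and> snd s' = (snd s1)(-4 := snd s1 (-4) + (\<Sum>j<n. cand n s j * cand n s j))"
  proof (rule acc_loop)
    show "fst s1 0 = int n" using r0 by (simp add: s1_def)
  next
    fix s2 :: state assume "\<forall>r'. r' \<noteq> 12 \<longrightarrow> fst s2 r' = fst s1 r'"
    then show "ieval (IC (-4)) s2 = -4" by simp
  next
    fix j s2 assume j: "j < n" and fs: "fst s2 = (fst s1)(12 := int j)" and fr: "\<forall>a. a \<noteq> -4 \<longrightarrow> snd s2 a = snd s1 a"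
    have e: "ieval (aC 12) s2 = int (n * n + n + j)" using fs r0 r2 by (simp add: aC_def s1_def)
    have v: "snd s2 (int (n * n + n + j)) = cand n s j"
      using fr int_ne_neg[of "n * n + n + j"] j by (simp add: vecB_def s1_def)
    show "reval (RMul (RR (aC 12)) (RR (aC 12))) s2 = cand n s j * cand n s j" using e v by simp
  qed simp
  then obtain t s' where 2: "big_step (FOR 12 (IR 0) (RSet (IC (-4)) (RAdd (RR (IC (-4))) (RMul (RR (aC 12)) (RR (aC 12)))))) s1 t s'"
    "t \<le> n * 3 + 2" "fst s' = (fst s1)(12 := int n)" "snd s' = (snd s1)(-4 := snd s1 (-4) + (\<Sum>j<n. cand n s j * cand n s j))"
    by blast
  have "big_step ev_den s (1 + t) s'" unfolding ev_den_def by (rule big_step.Seq[OF b1 2(1)])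
  moreover have "(\<Sum>j<n. cand n s j * cand n s j) = ss n (cand n s)" by (simp add: ss_def power2_eq_square)
  ultimately show ?thesis using 2 by (intro exI[of _ "1 + t"] exI[of _ s']) (auto simp: s1_def)
qed

lemma UPD_spec:
  assumes r0: "fst s 0 = int n" and r2: "fst s 2 = int (n * n)"
  shows "\<exists>t s'. big_step UPD s t s' \<and> t \<le> n * 3 + 4 \<and> fst s' = (fst s)(12 := int n) \<and>
     snd s' (-1) = snd s (-3) \<and> snd s' (-2) = snd s (-4) \<and> outv n s' = cand n s \<and>
     (\<forall>a. a \<notin> {-1, -2} \<and> (a < int (n * n) \<or> int (n * n) + int n \<le> a) \<longrightarrow> snd s' a = snd s a)"
proof -
  define s1 where "s1 = (fst s, (snd s)(-1 := snd s (-3)))"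
  have b1: "big_step (RSet (IC (-1)) (RR (IC (-3)))) s 1 s1" by (rule bs_RSet) (simp add: s1_def)
  define s2 where "s2 = (fst s1, (snd s1)(-2 := snd s1 (-4)))"
  have b2: "big_step (RSet (IC (-2)) (RR (IC (-4)))) s1 1 s2" by (rule bs_RSet) (simp add: s2_def)
  have "\<exists>t s'. big_step (FOR 12 (IR 0) (RSet (aOUT 12) (RR (aC 12)))) s2 t s' \<and> t \<le> n * (1 + 2) + 2 \<and>
     fst s' = (fst s2)(12 := int n) \<and> (\<forall>j<n. snd s' (int (n * n) + int j) = cand n s j) \<and>
     (\<forall>a. (a < int (n * n) \<or> int (n * n) + int n \<le> a) \<longrightarrow> snd s' a = snd s2 a)"
  proof (rule fill_loop)
    show "fst s2 0 = int n" using r0 by (simp add: s1_def s2_def)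
  next
    fix j s3 assume j: "j < n" and fs: "fst s3 = (fst s2)(12 := int j)"
      and fr: "\<forall>a. (a < int (n * n) \<or> int (n * n) + int j \<le> a) \<longrightarrow> snd s3 a = snd s2 a"
    have e1: "ieval (aOUT 12) s3 = int (n * n) + int j" using fs r2 by (simp add: aOUT_def s1_def s2_def)
    have e2: "ieval (aC 12) s3 = int (n * n) + int n + int j" using fs r0 r2 by (simp add: aC_def s1_def s2_def)
    have v: "snd s3 (int (n * n) + int n + int j) = cand n s j"
    proof -
      have "snd s3 (int (n * n) + int n + int j) = snd s2 (int (n * n) + int n + int j)" using fr by simp
      also have "\<dots> = snd s (int (n * n + n + j))" using int_ne_neg[of "n * n + n + j"] int_ne_m1[of "n * n + n + j"] by (simp add: s1_def s2_def)
      finally show ?thesis using j by (simp add: vecB_def)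
    qed
    show "\<exists>t s4. big_step (RSet (aOUT 12) (RR (aC 12))) s3 t s4 \<and> t \<le> 1 \<and> snd s4 = (snd s3)(int (n * n) + int j := cand n s j)"
    proof (intro exI[of _ 1] exI conjI)
      show "big_step (RSet (aOUT 12) (RR (aC 12))) s3 1 (fst s3, (snd s3)(ieval (aOUT 12) s3 := reval (RR (aC 12)) s3))"
        by (rule bs_RSet[OF refl])
    qed (simp_all add: e1 e2 v del: of_nat_mult)
  qed simp_all
  then obtain t s' where 3: "big_step (FOR 12 (IR 0) (RSet (aOUT 12) (RR (aC 12)))) s2 t s'" "t \<le> n * (1 + 2) + 2"
     "fst s' = (fst s2)(12 := int n)" "\<forall>j<n. snd s' (int (n * n) + int j) = cand n s j"
     "\<forall>a. (a < int (n * n) \<or> int (n * n) + int n \<le> a) \<longrightarrow> snd s' a = snd s2 a" by blast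
  have bb: "big_step UPD s (1 + (1 + t)) s'" unfolding UPD_def by (rule big_step.Seq[OF b1 big_step.Seq[OF b2 3(1)]])
  have o: "outv n s' = cand n s"
  proof
    fix j show "outv n s' j = cand n s j" using 3(4) by (simp add: vecB_def)
  qed
  have neg: "(-1::int) < int (n * n)" "(-2::int) < int (n * n)" by (rule neg_lt_int)+
  have m1: "snd s' (-1) = snd s (-3)" "snd s' (-2) = snd s (-4)"
    using 3(5)[rule_format, OF disjI1[OF neg(1)]] 3(5)[rule_format, OF disjI1[OF neg(2)]]
    by (simp_all add: s1_def s2_def)
  show ?thesis using bb 3(2,3,5) o m1 by (intro exI[of _ "1 + (1 + t)"] exI[of _ s']) (auto simp: s1_def s2_def)
qed

abbreviation Gd :: "nat \<Rightarrow> nat \<Rightarrow> (nat \<Rightarrow> nat \<Rightarrow> real) \<Rightarrow> (nat \<Rightarrow> real) set \<Rightarrow> state \<Rightarrow> bool" where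
  "Gd n k A X s \<equiv> GdA n k A X (snd s (-1)) (snd s (-2)) (outv n s)"

lemma eval_spec:
  assumes r0: "fst s 0 = int n" and r2: "fst s 2 = int (n * n)" and mA: "memA n A s"
    and G: "Gd n k A X s" and sp: "norm0 n (cand n s) \<le> k"
  shows "\<exists>t s'. big_step EVAL s t s' \<and> t \<le> 3 * n * n + 13 * n + 14 \<and> Gd n k A (insert (cand n s) X) s' \<and>
     (\<forall>r. r \<notin> {7, 12, 13} \<longrightarrow> fst s' r = fst s r) \<and>
     (\<forall>a. a \<notin> {-1, -2, -3, -4, -5} \<and> (a < int (n * n) \<or> int (n * n) + int n \<le> a) \<longrightarrow> snd s' a = snd s a)"
proof -
  let ?c = "cand n s"
  obtain t1 s1 where 1: "big_step ev_num s t1 s1" "t1 \<le> n * (n * 3 + 7) + 4"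
    "\<forall>r. r \<notin> {7, 12, 13} \<longrightarrow> fst s1 r = fst s r" "\<forall>a. a \<notin> {-3, -5} \<longrightarrow> snd s1 a = snd s a"
    "snd s1 (-3) = quad n A ?c" using ev_num_spec[OF r0 r2 mA] by blast
  have r0': "fst s1 0 = int n" and r2': "fst s1 2 = int (n * n)" using 1(3) r0 r2 by auto
  obtain t2 s2 where 2: "big_step ev_den s1 t2 s2" "t2 \<le> n * 3 + 3" "fst s2 = (fst s1)(12 := int n)"
    "snd s2 = (snd s1)(-4 := ss n (cand n s1))" using ev_den_spec[OF r0' r2'] by blast
  have c1: "cand n s1 = ?c"
  proof
    fix j show "cand n s1 j = ?c j" using 1(4) int_ne_neg[of "n * n + n + j"] by (simp add: vecB_def)
  qed
  have fr2: "\<forall>a. a \<notin> {-3, -4, -5} \<longrightarrow> snd s2 a = snd s a" using 2(4) 1(4) by simp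
  have v: "snd s2 (-1) = snd s (-1)" "snd s2 (-2) = snd s (-2)" "snd s2 (-3) = quad n A ?c"
    "snd s2 (-4) = ss n ?c" using fr2 1(5) 2(4) c1 by auto
  have o2: "outv n s2 = outv n s"
  proof
    fix j show "outv n s2 j = outv n s j" using fr2 int_ne_neg[of "n * n + j"] by (simp add: vecB_def)
  qed
  have c2: "cand n s2 = ?c"
  proof
    fix j show "cand n s2 j = ?c j" using fr2 int_ne_neg[of "n * n + n + j"] by (simp add: vecB_def)
  qed
  have r0'': "fst s2 0 = int n" and r2'': "fst s2 2 = int (n * n)" using 2(3) r0' r2' by auto
  have G2: "Gd n k A X s2" using G v o2 by simp
  have b12: "big_step (ev_num ;; ev_den) s (t1 + t2) s2" by (rule big_step.Seq[OF 1(1) 2(1)])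
  have "\<exists>t3 s3. big_step ev_dec s2 t3 s3 \<and> t3 \<le> n * 3 + 7 \<and> Gd n k A (insert ?c X) s3 \<and>
     (\<forall>r. r \<noteq> 12 \<longrightarrow> fst s3 r = fst s2 r) \<and>
     (\<forall>a. a \<notin> {-1, -2} \<and> (a < int (n * n) \<or> int (n * n) + int n \<le> a) \<longrightarrow> snd s3 a = snd s2 a)"
  proof (cases "0 < ss n ?c")
    case False
    have "big_step ev_dec s2 (Suc 0) s2" unfolding ev_dec_def
      by (rule big_step.IfF) (use False v in \<open>simp_all add: big_step.Skip\<close>)
    then show ?thesis using GdA_a[OF G False] v o2 by (intro exI[of _ "Suc 0"] exI[of _ s2]) auto
  next
    case True
    obtain t3 s3 where 3: "big_step UPD s2 t3 s3" "t3 \<le> n * 3 + 4" "fst s3 = (fst s2)(12 := int n)"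
      "snd s3 (-1) = snd s2 (-3)" "snd s3 (-2) = snd s2 (-4)" "outv n s3 = cand n s2"
      "\<forall>a. a \<notin> {-1, -2} \<and> (a < int (n * n) \<or> int (n * n) + int n \<le> a) \<longrightarrow> snd s3 a = snd s2 a"
      using UPD_spec[OF r0'' r2''] by blast
    have G3: "GdA n k A (insert ?c X) (quad n A ?c) (ss n ?c) ?c \<Longrightarrow> Gd n k A (insert ?c X) s3"
      using 3(4,5,6) v c2 by simp
    show ?thesis
    proof (cases "snd s (-2) = 0")
      case bd0: True
      have "big_step ev_dec s2 (Suc (Suc t3)) s3" unfolding ev_dec_def
        by (rule big_step.IfT, use True v in simp, rule big_step.IfT, use bd0 v in simp, rule 3(1))
      then show ?thesis using G3[OF GdA_b[OF G True _ sp]] bd0 v 3 by (intro exI exI conjI) auto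
    next
      case bd: False
      show ?thesis
      proof (cases "snd s (-1) * ss n ?c < quad n A ?c * snd s (-2)")
        case lt: True
        have "big_step ev_dec s2 (Suc (Suc (Suc t3))) s3" unfolding ev_dec_def
          by (rule big_step.IfT, use True v in simp, rule big_step.IfF, use bd v in simp,
              rule big_step.IfT, use lt v in simp, rule 3(1))
        then show ?thesis using G3[OF GdA_c[OF G True bd sp lt]] 3 by (intro exI exI conjI) auto
      next
        case ge: False
        have "big_step ev_dec s2 (Suc (Suc (Suc 0))) s2" unfolding ev_dec_def
          by (rule big_step.IfT, use True v in simp, rule big_step.IfF, use bd v in simp,
              rule big_step.IfF, use ge v in simp, rule big_step.Skip)
        then show ?thesis using GdA_d[OF G True bd ge] v o2 by (intro exI[of _ "Suc (Suc (Suc 0))"] exI[of _ s2]) auto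
      qed
    qed
  qed
  then obtain t3 s3 where 3: "big_step ev_dec s2 t3 s3" "t3 \<le> n * 3 + 7" "Gd n k A (insert ?c X) s3"
     "\<forall>r. r \<noteq> 12 \<longrightarrow> fst s3 r = fst s2 r"
     "\<forall>a. a \<notin> {-1, -2} \<and> (a < int (n * n) \<or> int (n * n) + int n \<le> a) \<longrightarrow> snd s3 a = snd s2 a" by blast
  have bb: "big_step EVAL s (t1 + (t2 + t3)) s3" unfolding EVAL_def
    by (rule big_step.Seq[OF 1(1) big_step.Seq[OF 2(1) 3(1)]])
  have tt: "t1 + (t2 + t3) \<le> 3 * n * n + 13 * n + 14" using 1(2) 2(2) 3(2) by (simp add: algebra_simps)
  show ?thesis using bb tt 3(3-5) 2(3) 1(3) fr2
    by (intro exI[of _ "t1 + (t2 + t3)"] exI[of _ s3]) auto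
qed

lemma fill_loopP:
  assumes r0: "fst s 0 = int n" and rne: "r \<noteq> 0" and W: "0 \<notin> W" "r \<notin> W" "wr C \<subseteq> W"
    and P0: "P 0 ((fst s)(r := 0))"
    and body: "\<And>j s1. j < n \<Longrightarrow> fst s1 r = int j \<Longrightarrow> P j (fst s1) \<Longrightarrow>
        (\<forall>r'. r' \<notin> insert r W \<longrightarrow> fst s1 r' = fst s r') \<Longrightarrow>
        (\<forall>a. (a < b \<or> b + int j \<le> a) \<longrightarrow> snd s1 a = snd s a) \<Longrightarrow>
        \<exists>t s2. big_step C s1 t s2 \<and> t \<le> T \<and> snd s2 = (snd s1)(b + int j := f j) \<and> P (Suc j) ((fst s2)(r := int j + 1))"
  shows "\<exists>t s'. big_step (FOR r (IR 0) C) s t s' \<and> t \<le> n * (T + 2) + 2 \<and> P n (fst s') \<and> fst s' r = int n \<and>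
     (\<forall>r'. r' \<notin> insert r W \<longrightarrow> fst s' r' = fst s r') \<and>
     (\<forall>j<n. snd s' (b + int j) = f j) \<and> (\<forall>a. (a < b \<or> b + int n \<le> a) \<longrightarrow> snd s' a = snd s a)"
proof -
  define I where "I j s1 \<longleftrightarrow> P j (fst s1) \<and> (\<forall>r'. r' \<notin> insert r W \<longrightarrow> fst s1 r' = fst s r') \<and>
     (\<forall>l<j. snd s1 (b + int l) = f l) \<and> (\<forall>a. (a < b \<or> b + int j \<le> a) \<longrightarrow> snd s1 a = snd s a)" for j s1
  have "\<exists>t s'. big_step (FOR r (IR 0) C) s t s' \<and> t \<le> n * (T + 2) + 2 \<and> I n s' \<and> fst s' r = int n"
  proof (rule for_rule)
    show "I 0 ((fst s)(r := 0), snd s)" using P0 by (simp add: I_def)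
  next
    fix j s1 assume j: "j < n" and I: "I j s1" and c: "fst s1 r = int j"
    obtain t s2 where 1: "big_step C s1 t s2" "t \<le> T" "snd s2 = (snd s1)(b + int j := f j)"
      "P (Suc j) ((fst s2)(r := int j + 1))"
      using body[OF j c] I by (auto simp: I_def)
    have f2: "\<forall>r'. r' \<notin> W \<longrightarrow> fst s2 r' = fst s1 r'" using big_step_wr[OF 1(1)] W by auto
    have "I (Suc j) ((fst s2)(r := int j + 1), snd s2)"
      unfolding I_def
    proof (intro conjI allI impI)
      show "P (Suc j) (fst ((fst s2)(r := int j + 1), snd s2))" using 1(4) by simp
    next
      fix r' assume "r' \<notin> insert r W" then show "fst ((fst s2)(r := int j + 1), snd s2) r' = fst s r'"
        using f2 I by (simp add: I_def)
    next
      fix l assume l: "l < Suc j"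
      show "snd ((fst s2)(r := int j + 1), snd s2) (b + int l) = f l"
      proof (cases "l = j")
        case True then show ?thesis using 1(3) by simp
      next
        case False then have "l < j" using l by simp
        then show ?thesis using 1(3) I by (simp add: I_def)
      qed
    next
      fix a assume a: "a < b \<or> b + int (Suc j) \<le> a"
      then have "a \<noteq> b + int j" by auto
      moreover have "a < b \<or> b + int j \<le> a" using a by auto
      moreover have "snd s1 a = snd s a" using I \<open>a < b \<or> b + int j \<le> a\<close> unfolding I_def by blast
      ultimately show "snd ((fst s2)(r := int j + 1), snd s2) a = snd s a"
        using 1(3) by simp
    qed
    moreover have "fst s2 r = int j" using f2 W c by simp
    ultimately show "\<exists>t s'. big_step C s1 t s' \<and> t \<le> T \<and> fst s' r = int j \<and> I (Suc j) ((fst s')(r := int j + 1), snd s')"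
      using 1 by (intro exI[of _ t] exI[of _ s2]) simp
  next
    fix j s1 assume "j \<le> n" "I j s1" "fst s1 r = int j"
    then show "ieval (IR 0) s1 = int n" using r0 rne W by (simp add: I_def)
  qed
  then obtain t s' where 1: "big_step (FOR r (IR 0) C) s t s'" "t \<le> n * (T + 2) + 2" "I n s'" "fst s' r = int n" by blast
  then show ?thesis unfolding I_def by (intro exI[of _ t] exI[of _ s']) auto
qed

definition CANDE :: com where
  "CANDE = FOR 4 (IR 0) (CIf (IEq (IR 4) (IR 3)) (RSet (aC 4) (RC 1)) (RSet (aC 4) (RC 0)))"

lemma CANDE_spec:
  assumes r0: "fst s 0 = int n" and r2: "fst s 2 = int (n * n)" and r3: "fst s 3 = int i" and i: "i < n"
  shows "\<exists>t s'. big_step CANDE s t s' \<and> t \<le> n * 4 + 2 \<and> fst s' = (fst s)(4 := int n) \<and> cand n s' = ev i \<and>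
     (\<forall>a. (a < int (n * n) + int n \<or> int (n * n) + int n + int n \<le> a) \<longrightarrow> snd s' a = snd s a)"
proof -
  have "\<exists>t s'. big_step CANDE s t s' \<and> t \<le> n * (2 + 2) + 2 \<and> fst s' = (fst s)(4 := int n) \<and>
     (\<forall>j<n. snd s' (int (n * n) + int n + int j) = (if j = i then 1 else 0)) \<and>
     (\<forall>a. (a < int (n * n) + int n \<or> int (n * n) + int n + int n \<le> a) \<longrightarrow> snd s' a = snd s a)"
    unfolding CANDE_def
  proof (rule fill_loop[OF r0])
    fix j and s1 :: state assume j: "j < n" and fs: "fst s1 = (fst s)(4 := int j)"
    have e: "ieval (aC 4) s1 = int (n * n) + int n + int j" using fs r0 r2 by (simp add: aC_def)
    show "\<exists>t s2. big_step (CIf (IEq (IR 4) (IR 3)) (RSet (aC 4) (RC 1)) (RSet (aC 4) (RC 0))) s1 t s2 \<and> t \<le> 2 \<and>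
        snd s2 = (snd s1)(int (n * n) + int n + int j := (if j = i then 1 else 0))"
    proof (cases "j = i")
      case True
      have "big_step (CIf (IEq (IR 4) (IR 3)) (RSet (aC 4) (RC 1)) (RSet (aC 4) (RC 0))) s1 (Suc 1)
          (fst s1, (snd s1)(int (n * n) + int n + int j := 1))"
        by (rule big_step.IfT[OF _ bs_RSet]) (use fs r3 True e in simp)+
      then show ?thesis using True by (intro exI conjI) auto
    next
      case False
      have "big_step (CIf (IEq (IR 4) (IR 3)) (RSet (aC 4) (RC 1)) (RSet (aC 4) (RC 0))) s1 (Suc 1)
          (fst s1, (snd s1)(int (n * n) + int n + int j := 0))"
        by (rule big_step.IfF[OF _ bs_RSet]) (use fs r3 False e in simp)+
      then show ?thesis using False by (intro exI conjI) auto
    qed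
  qed simp_all
  then obtain t s' where 1: "big_step CANDE s t s'" "t \<le> n * (2 + 2) + 2" "fst s' = (fst s)(4 := int n)"
    "\<forall>j<n. snd s' (int (n * n) + int n + int j) = (if j = i then 1 else 0)"
    "\<forall>a. (a < int (n * n) + int n \<or> int (n * n) + int n + int n \<le> a) \<longrightarrow> snd s' a = snd s a" by blast
  have "cand n s' = ev i"
  proof
    fix j show "cand n s' j = ev i j" using 1(4) i by (auto simp: vecB_def ev_def)
  qed
  then show ?thesis using 1 by (intro exI[of _ t] exI[of _ s']) auto
qed

definition sqe :: "iexp \<Rightarrow> rexp" where "sqe a = RMul (RR a) (RR a)"
definition INC :: com where "INC = ISet 6 (IAdd (IR 6) (IC 1))"
definition CNTB :: com where
  "CNTB = CIf (RLess (sqe (aY 4)) (sqe (aY 5))) INC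
     (CIf (REq (sqe (aY 5)) (sqe (aY 4))) (CIf (ILess (IR 5) (IR 4)) INC CSkip) CSkip)"
definition CNT :: com where "CNT = FOR 5 (IR 0) CNTB"
definition CR1 :: com where "CR1 = FOR 4 (IR 0) (RSet (aY 4) (RR (IAdd (IR 8) (IR 4))))"
definition CRB :: com where
  "CRB = ISet 6 (IC 0) ;; CNT ;; CIf (ILess (IR 6) (IR 1)) (RSet (aC 4) (RR (aY 4))) (RSet (aC 4) (RC 0))"
definition CANDROW :: com where "CANDROW = CR1 ;; FOR 4 (IR 0) CRB"

lemma CNTB_step:
  assumes r0: "fst s1 0 = int n" and r2: "fst s1 2 = int (n * n)" and r4: "fst s1 4 = int j" and r5: "fst s1 5 = int jj"
    and j: "j < n" and jj: "jj < n" and Y: "\<forall>l<n. snd s1 (int (n * n) + int n + int n + int l) = A i l"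
  shows "\<exists>t s2. big_step CNTB s1 t s2 \<and> t \<le> 4 \<and> snd s2 = snd s1 \<and>
     fst s2 = (fst s1)(6 := fst s1 6 + (if beats (rowv A i) jj j then 1 else 0))"
proof -
  have ya: "reval (sqe (aY 4)) s1 = rowv A i j" "reval (sqe (aY 5)) s1 = rowv A i jj"
    using Y r0 r2 r4 r5 j jj by (simp_all add: sqe_def aY_def rowv_def)
  have inc: "big_step INC s1 1 ((fst s1)(6 := fst s1 6 + 1), snd s1)" unfolding INC_def
    by (rule bs_ISet) simp
  show ?thesis
  proof (cases "rowv A i j < rowv A i jj")
    case True
    then have "beats (rowv A i) jj j" by (simp add: beats_def)
    moreover have "big_step CNTB s1 (Suc 1) ((fst s1)(6 := fst s1 6 + 1), snd s1)" unfolding CNTB_def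
      by (rule big_step.IfT[OF _ inc]) (use True ya in simp)
    ultimately show ?thesis by (intro exI[of _ "Suc 1"] exI[of _ "((fst s1)(6 := fst s1 6 + 1), snd s1)"]) auto
  next
    case False
    note F = False
    show ?thesis
    proof (cases "rowv A i jj = rowv A i j")
      case True
      show ?thesis
      proof (cases "jj < j")
        case True
        then have "beats (rowv A i) jj j" using \<open>rowv A i jj = rowv A i j\<close> by (simp add: beats_def)
        moreover have "big_step CNTB s1 (Suc (Suc (Suc 1))) ((fst s1)(6 := fst s1 6 + 1), snd s1)" unfolding CNTB_def
          by (rule big_step.IfF[OF _ big_step.IfT[OF _ big_step.IfT[OF _ inc]]])
             (use F \<open>rowv A i jj = rowv A i j\<close> True ya r4 r5 in simp_all)
        ultimately show ?thesis by (intro exI[of _ "Suc (Suc (Suc 1))"] exI[of _ "((fst s1)(6 := fst s1 6 + 1), snd s1)"]) auto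
      next
        case False
        then have "\<not> beats (rowv A i) jj j" using F by (auto simp: beats_def)
        moreover have "big_step CNTB s1 (Suc (Suc (Suc 0))) s1" unfolding CNTB_def
          by (rule big_step.IfF[OF _ big_step.IfT[OF _ big_step.IfF[OF _ big_step.Skip]]])
             (use F \<open>rowv A i jj = rowv A i j\<close> False ya r4 r5 in simp_all)
        ultimately show ?thesis by (intro exI[of _ "Suc (Suc (Suc 0))"] exI[of _ s1]) auto
      qed
    next
      case False
      then have "\<not> beats (rowv A i) jj j" using F by (auto simp: beats_def)
      moreover have "big_step CNTB s1 (Suc (Suc 0)) s1" unfolding CNTB_def
        by (rule big_step.IfF[OF _ big_step.IfF[OF _ big_step.Skip]]) (use F False ya in simp_all)
      ultimately show ?thesis by (intro exI[of _ "Suc (Suc 0)"] exI[of _ s1]) auto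
    qed
  qed
qed

lemma card_beats_Suc: "card {a. a < Suc jj \<and> beats v a j} = card {a. a < jj \<and> beats v a j} + (if beats v jj j then 1 else 0)"
proof -
  have "{a. a < Suc jj \<and> beats v a j} = {a. a < jj \<and> beats v a j} \<union> (if beats v jj j then {jj} else {})"
    by (auto simp: less_Suc_eq)
  then show ?thesis by (auto simp: card_insert_if)
qed

lemma CNT_spec:
  assumes r0: "fst s 0 = int n" and r2: "fst s 2 = int (n * n)" and r4: "fst s 4 = int j"
    and j: "j < n" and r6: "fst s 6 = 0" and Y: "\<forall>l<n. snd s (int (n * n) + int n + int n + int l) = A i l"
  shows "\<exists>t s'. big_step CNT s t s' \<and> t \<le> n * 6 + 2 \<and> snd s' = snd s \<and>
     (\<forall>r. r \<notin> {5, 6} \<longrightarrow> fst s' r = fst s r) \<and> fst s' 6 = int (cnt n (rowv A i) j)"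
proof -
  define I where "I jj s1 \<longleftrightarrow> snd s1 = snd s \<and> (\<forall>r. r \<notin> {5, 6} \<longrightarrow> fst s1 r = fst s r) \<and>
     fst s1 6 = int (card {a. a < jj \<and> beats (rowv A i) a j})" for jj s1
  have "\<exists>t s'. big_step (FOR 5 (IR 0) CNTB) s t s' \<and> t \<le> n * (4 + 2) + 2 \<and> I n s' \<and> fst s' 5 = int n"
  proof (rule for_rule)
    show "I 0 ((fst s)(5 := 0), snd s)" using r6 by (simp add: I_def)
  next
    fix jj s1 assume jj: "jj < n" and I: "I jj s1" and c: "fst s1 5 = int jj"
    obtain t s2 where 1: "big_step CNTB s1 t s2" "t \<le> 4" "snd s2 = snd s1"
      "fst s2 = (fst s1)(6 := fst s1 6 + (if beats (rowv A i) jj j then 1 else 0))"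
      using CNTB_step[of s1 n j jj A i] I c r0 r2 r4 j jj Y by (auto simp: I_def)
    have "I (Suc jj) ((fst s2)(5 := int jj + 1), snd s2)"
      using 1(3,4) I by (auto simp: I_def card_beats_Suc)
    moreover have "fst s2 5 = int jj" using 1(4) c by simp
    ultimately show "\<exists>t s'. big_step CNTB s1 t s' \<and> t \<le> 4 \<and> fst s' 5 = int jj \<and> I (Suc jj) ((fst s')(5 := int jj + 1), snd s')"
      using 1 by (intro exI[of _ t] exI[of _ s2]) simp
  next
    fix jj s1 assume "jj \<le> n" "I jj s1" "fst s1 5 = int jj"
    then show "ieval (IR 0) s1 = int n" using r0 by (simp add: I_def)
  qed
  then obtain t s' where "big_step CNT s t s'" "t \<le> n * (4 + 2) + 2" "I n s'" unfolding CNT_def by blast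
  moreover have "{a. a < n \<and> beats (rowv A i) a j} = {a. a < n \<and> beats (rowv A i) a j}" ..
  ultimately show ?thesis by (intro exI[of _ t] exI[of _ s']) (auto simp: I_def cnt_def)
qed

lemma CR1_spec:
  assumes r0: "fst s 0 = int n" and r2: "fst s 2 = int (n * n)" and r8: "fst s 8 = int (i * n)" and i: "i < n"
    and mA: "memA n A s"
  shows "\<exists>t s'. big_step CR1 s t s' \<and> t \<le> n * 3 + 2 \<and> fst s' = (fst s)(4 := int n) \<and>
     (\<forall>l<n. snd s' (int (n * n) + int n + int n + int l) = A i l) \<and>
     (\<forall>a. (a < int (n * n) + int n + int n \<or> int (n * n) + int n + int n + int n \<le> a) \<longrightarrow> snd s' a = snd s a)"
proof -
  have "\<exists>t s'. big_step CR1 s t s' \<and> t \<le> n * (1 + 2) + 2 \<and> fst s' = (fst s)(4 := int n) \<and>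
     (\<forall>l<n. snd s' (int (n * n) + int n + int n + int l) = A i l) \<and>
     (\<forall>a. (a < int (n * n) + int n + int n \<or> int (n * n) + int n + int n + int n \<le> a) \<longrightarrow> snd s' a = snd s a)"
    unfolding CR1_def
  proof (rule fill_loop[OF r0])
    fix j and s1 :: state assume j: "j < n" and fs: "fst s1 = (fst s)(4 := int j)"
      and fr: "\<forall>a. (a < int (n * n) + int n + int n \<or> int (n * n) + int n + int n + int j \<le> a) \<longrightarrow> snd s1 a = snd s a"
    have e1: "ieval (aY 4) s1 = int (n * n) + int n + int n + int j" using fs r0 r2 by (simp add: aY_def)
    have lt: "i * n + j < n * n"
    proof -
      have "i * n + j < i * n + n" using j by simp
      also have "\<dots> = Suc i * n" by simp
      also have "\<dots> \<le> n * n" using i by (intro mult_le_mono1) simp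
      finally show ?thesis .
    qed
    have e2: "fst s1 8 + fst s1 4 = int (i * n + j)" using fs r8 by simp
    have v: "snd s1 (int (i * n + j)) = A i j"
    proof -
      have "int (i * n + j) < int (n * n) + int n + int n" using lt by linarith
      then have "snd s1 (int (i * n + j)) = snd s (int (i * n + j))" using fr by blast
      then show ?thesis using mA i j by (simp add: memA_def)
    qed
    show "\<exists>t s2. big_step (RSet (aY 4) (RR (IAdd (IR 8) (IR 4)))) s1 t s2 \<and> t \<le> 1 \<and>
        snd s2 = (snd s1)(int (n * n) + int n + int n + int j := A i j)"
    proof (intro exI[of _ 1] exI conjI)
      show "big_step (RSet (aY 4) (RR (IAdd (IR 8) (IR 4)))) s1 1 (fst s1, (snd s1)(ieval (aY 4) s1 := reval (RR (IAdd (IR 8) (IR 4))) s1))"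
        by (rule bs_RSet[OF refl])
    qed (simp_all add: e1 e2 v del: of_nat_mult of_nat_add)
  qed simp_all
  then obtain t s' where "big_step CR1 s t s' \<and> t \<le> n * (1 + 2) + 2 \<and> fst s' = (fst s)(4 := int n) \<and>
     (\<forall>l<n. snd s' (int (n * n) + int n + int n + int l) = A i l) \<and>
     (\<forall>a. (a < int (n * n) + int n + int n \<or> int (n * n) + int n + int n + int n \<le> a) \<longrightarrow> snd s' a = snd s a)" by blast
  then show ?thesis by (intro exI[of _ t] exI[of _ s']) auto
qed


lemma CR2_spec:
  assumes r0: "fst s 0 = int n" and r1: "fst s 1 = int k" and r2: "fst s 2 = int (n * n)"
    and Y: "\<forall>l<n. snd s (int (n * n) + int n + int n + int l) = A i l"
  shows "\<exists>t s'. big_step (FOR 4 (IR 0) CRB) s t s' \<and> t \<le> n * (n * 6 + 7) + 2 \<and>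
     (\<forall>r. r \<notin> {4, 5, 6} \<longrightarrow> fst s' r = fst s r) \<and> cand n s' = rowmask n k A i \<and>
     (\<forall>a. (a < int (n * n) + int n \<or> int (n * n) + int n + int n \<le> a) \<longrightarrow> snd s' a = snd s a)"
proof -
  have "\<exists>t s'. big_step (FOR 4 (IR 0) CRB) s t s' \<and> t \<le> n * ((n * 6 + 5) + 2) + 2 \<and> (\<lambda>_ _. True) n (fst s') \<and> fst s' 4 = int n \<and>
     (\<forall>r'. r' \<notin> insert 4 {5, 6} \<longrightarrow> fst s' r' = fst s r') \<and>
     (\<forall>j<n. snd s' (int (n * n) + int n + int j) = rowmask n k A i j) \<and>
     (\<forall>a. (a < int (n * n) + int n \<or> int (n * n) + int n + int n \<le> a) \<longrightarrow> snd s' a = snd s a)"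
  proof (rule fill_loopP[OF r0])
    show "wr CRB \<subseteq> {5, 6}" by (simp add: CRB_def CNT_def CNTB_def INC_def)
  next
    fix j and s1 :: state assume j: "j < n" and c4: "fst s1 4 = int j"
      and fr: "\<forall>r'. r' \<notin> insert 4 {5, 6} \<longrightarrow> fst s1 r' = fst s r'"
      and fm: "\<forall>a. (a < int (n * n) + int n \<or> int (n * n) + int n + int j \<le> a) \<longrightarrow> snd s1 a = snd s a"
    define s2 where "s2 = ((fst s1)(6 := 0), snd s1)"
    have b2: "big_step (ISet 6 (IC 0)) s1 1 s2" by (rule bs_ISet) (simp add: s2_def)
    have Y2: "\<forall>l<n. snd s2 (int (n * n) + int n + int n + int l) = A i l"
    proof (intro allI impI)
      fix l assume l: "l < n"
      have "int (n * n) + int n + int j \<le> int (n * n) + int n + int n + int l" using j by simp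
      then have "snd s1 (int (n * n) + int n + int n + int l) = snd s (int (n * n) + int n + int n + int l)"
        using fm by blast
      then show "snd s2 (int (n * n) + int n + int n + int l) = A i l" using Y l by (simp add: s2_def)
    qed
    obtain t3 s3 where 3: "big_step CNT s2 t3 s3" "t3 \<le> n * 6 + 2" "snd s3 = snd s2"
      "\<forall>r. r \<notin> {5, 6} \<longrightarrow> fst s3 r = fst s2 r" "fst s3 6 = int (cnt n (rowv A i) j)"
      using CNT_spec[of s2 n j A i] fr r0 r2 c4 j Y2 by (auto simp: s2_def)
    have r3: "fst s3 0 = int n" "fst s3 1 = int k" "fst s3 2 = int (n * n)" "fst s3 4 = int j"
      using 3(4) fr r0 r1 r2 c4 by (auto simp: s2_def)
    have yj: "snd s3 (int (n * n) + int n + int n + int j) = A i j" using 3(3) Y2 j by simp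
    let ?C = "CIf (ILess (IR 6) (IR 1)) (RSet (aC 4) (RR (aY 4))) (RSet (aC 4) (RC 0))"
    have "\<exists>t4 s4. big_step ?C s3 t4 s4 \<and> t4 \<le> 2 \<and> snd s4 = (snd s3)(int (n * n) + int n + int j := rowmask n k A i j)
       \<and> fst s4 = fst s3"
    proof (cases "cnt n (rowv A i) j < k")
      case True
      have "big_step ?C s3 (Suc 1) (fst s3, (snd s3)(int (n * n) + int n + int j := A i j))"
        by (rule big_step.IfT[OF _ bs_RSet]) (use True r3 yj 3(5) in \<open>simp_all add: aC_def aY_def\<close>)
      then show ?thesis using True j by (intro exI[of _ "Suc 1"] exI) (auto simp: rowmask_def)
    next
      case False
      have "big_step ?C s3 (Suc 1) (fst s3, (snd s3)(int (n * n) + int n + int j := 0))"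
        by (rule big_step.IfF[OF _ bs_RSet]) (use False r3 3(5) in \<open>simp_all add: aC_def\<close>)
      then show ?thesis using False j by (intro exI[of _ "Suc 1"] exI) (auto simp: rowmask_def)
    qed
    then obtain t4 s4 where 4: "big_step ?C s3 t4 s4" "t4 \<le> 2" "snd s4 = (snd s3)(int (n * n) + int n + int j := rowmask n k A i j)" by blast
    have "big_step CRB s1 (1 + (t3 + t4)) s4" unfolding CRB_def
      by (rule big_step.Seq[OF b2 big_step.Seq[OF 3(1) 4(1)]])
    moreover have "snd s4 = (snd s1)(int (n * n) + int n + int j := rowmask n k A i j)"
      using 4(3) 3(3) by (simp add: s2_def)
    moreover have "1 + (t3 + t4) \<le> n * 6 + 5" using 3(2) 4(2) by simp
    ultimately show "\<exists>t s2. big_step CRB s1 t s2 \<and> t \<le> n * 6 + 5 \<and>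
        snd s2 = (snd s1)(int (n * n) + int n + int j := rowmask n k A i j) \<and> True"
      by blast
  qed simp_all
  then obtain t s' where 1: "big_step (FOR 4 (IR 0) CRB) s t s'" "t \<le> n * ((n * 6 + 5) + 2) + 2"
     "\<forall>r'. r' \<notin> insert 4 {5, 6} \<longrightarrow> fst s' r' = fst s r'"
     "\<forall>j<n. snd s' (int (n * n) + int n + int j) = rowmask n k A i j"
     "\<forall>a. (a < int (n * n) + int n \<or> int (n * n) + int n + int n \<le> a) \<longrightarrow> snd s' a = snd s a" by blast
  have "cand n s' = rowmask n k A i"
  proof
    fix j show "cand n s' j = rowmask n k A i j" using 1(4) by (simp add: vecB_def rowmask_def)
  qed
  moreover have "t \<le> n * (n * 6 + 7) + 2" using 1(2) by (simp add: algebra_simps)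
  ultimately show ?thesis using 1(1,3,5) by (intro exI[of _ t] exI[of _ s']) auto
qed

lemma CANDROW_spec:
  assumes r0: "fst s 0 = int n" and r1: "fst s 1 = int k" and r2: "fst s 2 = int (n * n)"
    and r8: "fst s 8 = int (i * n)" and i: "i < n" and mA: "memA n A s"
  shows "\<exists>t s'. big_step CANDROW s t s' \<and> t \<le> n * (n * 6 + 10) + 4 \<and>
     (\<forall>r. r \<notin> {4, 5, 6} \<longrightarrow> fst s' r = fst s r) \<and> cand n s' = rowmask n k A i \<and>
     (\<forall>a. (a < int (n * n) + int n \<or> int (n * n) + int n + int n + int n \<le> a) \<longrightarrow> snd s' a = snd s a)"
proof -
  obtain t1 s1 where 1: "big_step CR1 s t1 s1" "t1 \<le> n * 3 + 2" "fst s1 = (fst s)(4 := int n)"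
     "\<forall>l<n. snd s1 (int (n * n) + int n + int n + int l) = A i l"
     "\<forall>a. (a < int (n * n) + int n + int n \<or> int (n * n) + int n + int n + int n \<le> a) \<longrightarrow> snd s1 a = snd s a"
    using CR1_spec[OF r0 r2 r8 i mA] by blast
  have rr: "fst s1 0 = int n" "fst s1 1 = int k" "fst s1 2 = int (n * n)" using 1(3) r0 r1 r2 by auto
  obtain t2 s2 where 2: "big_step (FOR 4 (IR 0) CRB) s1 t2 s2" "t2 \<le> n * (n * 6 + 7) + 2"
     "\<forall>r. r \<notin> {4, 5, 6} \<longrightarrow> fst s2 r = fst s1 r" "cand n s2 = rowmask n k A i"
     "\<forall>a. (a < int (n * n) + int n \<or> int (n * n) + int n + int n \<le> a) \<longrightarrow> snd s2 a = snd s1 a"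
    using CR2_spec[of s1 n k A i, OF rr 1(4)] by blast
  have "big_step CANDROW s (t1 + t2) s2" unfolding CANDROW_def by (rule big_step.Seq[OF 1(1) 2(1)])
  moreover have "t1 + t2 \<le> n * (n * 6 + 10) + 4" using 1(2) 2(2) by (simp add: algebra_simps)
  moreover have "\<forall>a. (a < int (n * n) + int n \<or> int (n * n) + int n + int n + int n \<le> a) \<longrightarrow> snd s2 a = snd s a"
    using 1(5) 2(5) by force
  ultimately show ?thesis using 1(3) 2(3,4) by (intro exI[of _ "t1 + t2"] exI[of _ s2]) auto
qed

abbreviation vecY :: "nat \<Rightarrow> state \<Rightarrow> nat \<Rightarrow> real" where "vecY n s \<equiv> vecB n s (int (n * n) + int n + int n)"

definition PW1 :: com where
  "PW1 = FOR 4 (IR 0) (CIf (IEq (IR 4) (IR 3)) (RSet (aY 4) (RC 1)) (RSet (aY 4) (RC 0)))"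
definition MVI :: com where
  "MVI = FOR 12 (IR 0) (RSet (aZ 7) (RAdd (RR (aZ 7)) (RMul (RR (IAdd (IR 13) (IR 12))) (RR (aY 12)))))"
definition MVB :: com where "MVB = RSet (aZ 7) (RC 0) ;; MVI ;; ISet 13 (IAdd (IR 13) (IR 0))"
definition MV :: com where "MV = ISet 13 (IC 0) ;; FOR 7 (IR 0) MVB"
definition CPY :: com where "CPY = FOR 12 (IR 0) (RSet (aY 12) (RR (aZ 12)))"
definition PWB :: com where "PWB = MV ;; CPY"
definition POWER :: com where "POWER = PW1 ;; FOR 9 (IR 10) PWB"

lemma PW1_spec:
  assumes r0: "fst s 0 = int n" and r2: "fst s 2 = int (n * n)" and r3: "fst s 3 = int i" and i: "i < n"
  shows "\<exists>t s'. big_step PW1 s t s' \<and> t \<le> n * 4 + 2 \<and> fst s' = (fst s)(4 := int n) \<and> vecY n s' = ev i \<and>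
     (\<forall>a. (a < int (n * n) + int n + int n \<or> int (n * n) + int n + int n + int n \<le> a) \<longrightarrow> snd s' a = snd s a)"
proof -
  have "\<exists>t s'. big_step PW1 s t s' \<and> t \<le> n * (2 + 2) + 2 \<and> fst s' = (fst s)(4 := int n) \<and>
     (\<forall>j<n. snd s' (int (n * n) + int n + int n + int j) = (if j = i then 1 else 0)) \<and>
     (\<forall>a. (a < int (n * n) + int n + int n \<or> int (n * n) + int n + int n + int n \<le> a) \<longrightarrow> snd s' a = snd s a)"
    unfolding PW1_def
  proof (rule fill_loop[OF r0])
    fix j and s1 :: state assume j: "j < n" and fs: "fst s1 = (fst s)(4 := int j)"
    have e: "ieval (aY 4) s1 = int (n * n) + int n + int n + int j" using fs r0 r2 by (simp add: aY_def)
    show "\<exists>t s2. big_step (CIf (IEq (IR 4) (IR 3)) (RSet (aY 4) (RC 1)) (RSet (aY 4) (RC 0))) s1 t s2 \<and> t \<le> 2 \<and>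
        snd s2 = (snd s1)(int (n * n) + int n + int n + int j := (if j = i then 1 else 0))"
    proof (cases "j = i")
      case True
      have "big_step (CIf (IEq (IR 4) (IR 3)) (RSet (aY 4) (RC 1)) (RSet (aY 4) (RC 0))) s1 (Suc 1)
          (fst s1, (snd s1)(int (n * n) + int n + int n + int j := 1))"
        by (rule big_step.IfT[OF _ bs_RSet]) (use fs r3 True e in simp)+
      then show ?thesis using True by (intro exI conjI) auto
    next
      case False
      have "big_step (CIf (IEq (IR 4) (IR 3)) (RSet (aY 4) (RC 1)) (RSet (aY 4) (RC 0))) s1 (Suc 1)
          (fst s1, (snd s1)(int (n * n) + int n + int n + int j := 0))"
        by (rule big_step.IfF[OF _ bs_RSet]) (use fs r3 False e in simp)+
      then show ?thesis using False by (intro exI conjI) auto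
    qed
  qed simp_all
  then obtain t s' where 1: "big_step PW1 s t s'" "t \<le> n * (2 + 2) + 2" "fst s' = (fst s)(4 := int n)"
    "\<forall>j<n. snd s' (int (n * n) + int n + int n + int j) = (if j = i then 1 else 0)"
    "\<forall>a. (a < int (n * n) + int n + int n \<or> int (n * n) + int n + int n + int n \<le> a) \<longrightarrow> snd s' a = snd s a" by blast
  have "vecY n s' = ev i"
  proof
    fix j show "vecY n s' j = ev i j" using 1(4) i by (auto simp: vecB_def ev_def)
  qed
  then show ?thesis using 1 by (intro exI[of _ t] exI[of _ s']) auto
qed

lemma MVB_step:
  assumes r0: "fst s1 0 = int n" and r2: "fst s1 2 = int (n * n)" and r7: "fst s1 7 = int p" and r13: "fst s1 13 = int (p * n)"
    and p: "p < n" and mA: "memA n A s1"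
  shows "\<exists>t s2. big_step MVB s1 t s2 \<and> t \<le> n * 3 + 4 \<and>
     snd s2 = (snd s1)(int (n * n) + int n + int n + int n + int p := (\<Sum>q<n. A p q * vecY n s1 q)) \<and>
     fst s2 = (fst s1)(12 := int n, 13 := int (Suc p * n))"
proof -
  let ?\<alpha> = "int (n * n) + int n + int n + int n + int p"
  define s2 where "s2 = (fst s1, (snd s1)(?\<alpha> := 0))"
  have eZ: "ieval (aZ 7) s = ?\<alpha>" if "\<forall>r'. r' \<noteq> 12 \<longrightarrow> fst s r' = fst s1 r'" for s
    using that r0 r2 r7 by (simp add: aZ_def)
  have b2: "big_step (RSet (aZ 7) (RC 0)) s1 1 s2" by (rule bs_RSet) (use eZ[of s1] in \<open>simp add: s2_def\<close>)
  have "\<exists>t s'. big_step MVI s2 t s' \<and> t \<le> n * 3 + 2 \<and> fst s' = (fst s2)(12 := int n) \<and>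
     snd s' = (snd s2)(?\<alpha> := snd s2 ?\<alpha> + (\<Sum>q<n. A p q * vecY n s1 q))"
    unfolding MVI_def
  proof (rule acc_loop)
    show "fst s2 0 = int n" using r0 by (simp add: s2_def)
  next
    fix s3 :: state assume "\<forall>r'. r' \<noteq> 12 \<longrightarrow> fst s3 r' = fst s2 r'"
    then show "ieval (aZ 7) s3 = ?\<alpha>" using eZ by (simp add: s2_def)
  next
    fix q and s3 :: state assume q: "q < n" and fs: "fst s3 = (fst s2)(12 := int q)"
      and fr: "\<forall>a. a \<noteq> ?\<alpha> \<longrightarrow> snd s3 a = snd s2 a"
    have e1: "ieval (IAdd (IR 13) (IR 12)) s3 = int (p * n + q)" using fs r13 by (simp add: s2_def)
    have e2: "ieval (aY 12) s3 = int (n * n) + int n + int n + int q" using fs r0 r2 by (simp add: aY_def s2_def)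
    have lt: "p * n + q < n * n"
    proof -
      have "p * n + q < p * n + n" using q by simp
      also have "\<dots> = Suc p * n" by simp
      also have "\<dots> \<le> n * n" using p by (intro mult_le_mono1) simp
      finally show ?thesis .
    qed
    have v1: "snd s3 (int (p * n + q)) = A p q"
    proof -
      have "int (p * n + q) \<noteq> ?\<alpha>" using lt by linarith
      then have "snd s3 (int (p * n + q)) = snd s1 (int (p * n + q))" using fr lt by (simp add: s2_def)
      then show ?thesis using mA p q by (simp add: memA_def)
    qed
    have v2: "snd s3 (int (n * n) + int n + int n + int q) = vecY n s1 q"
    proof -
      have "int (n * n) + int n + int n + int q \<noteq> ?\<alpha>" using q by linarith
      then show ?thesis using fr q by (simp add: s2_def vecB_def)
    qed
    show "reval (RMul (RR (IAdd (IR 13) (IR 12))) (RR (aY 12))) s3 = A p q * vecY n s1 q"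
      using e1 e2 v1 v2 by (simp del: of_nat_mult of_nat_add)
  qed simp
  then obtain t3 s3 where 3: "big_step MVI s2 t3 s3" "t3 \<le> n * 3 + 2" "fst s3 = (fst s2)(12 := int n)"
     "snd s3 = (snd s2)(?\<alpha> := snd s2 ?\<alpha> + (\<Sum>q<n. A p q * vecY n s1 q))" by blast
  define s4 where "s4 = ((fst s3)(13 := fst s3 13 + fst s3 0), snd s3)"
  have b4: "big_step (ISet 13 (IAdd (IR 13) (IR 0))) s3 1 s4" by (rule bs_ISet) (simp add: s4_def)
  have "big_step MVB s1 (1 + (t3 + 1)) s4" unfolding MVB_def
    by (rule big_step.Seq[OF b2 big_step.Seq[OF 3(1) b4]])
  moreover have "snd s4 = (snd s1)(?\<alpha> := (\<Sum>q<n. A p q * vecY n s1 q))" using 3(4) by (simp add: s4_def s2_def)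
  moreover have "fst s4 = (fst s1)(12 := int n, 13 := int (Suc p * n))" using 3(3) r0 r13
    by (auto simp: s4_def s2_def algebra_simps)
  moreover have "1 + (t3 + 1) \<le> n * 3 + 4" using 3(2) by simp
  ultimately show ?thesis by blast
qed


lemma MV_spec:
  assumes r0: "fst s 0 = int n" and r2: "fst s 2 = int (n * n)" and mA: "memA n A s"
  shows "\<exists>t s'. big_step MV s t s' \<and> t \<le> n * (n * 3 + 6) + 3 \<and>
     (\<forall>r. r \<notin> {7, 12, 13} \<longrightarrow> fst s' r = fst s r) \<and>
     (\<forall>p<n. snd s' (int (n * n) + int n + int n + int n + int p) = (\<Sum>q<n. A p q * vecY n s q)) \<and>
     (\<forall>a. (a < int (n * n) + int n + int n + int n \<or> int (n * n) + int n + int n + int n + int n \<le> a) \<longrightarrow> snd s' a = snd s a)"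
proof -
  define s0 where "s0 = ((fst s)(13 := 0), snd s)"
  have b0: "big_step (ISet 13 (IC 0)) s 1 s0" by (rule bs_ISet) (simp add: s0_def)
  have "\<exists>t s'. big_step (FOR 7 (IR 0) MVB) s0 t s' \<and> t \<le> n * ((n * 3 + 4) + 2) + 2 \<and> (\<lambda>p rf. rf 13 = int (p * n)) n (fst s') \<and>
     fst s' 7 = int n \<and> (\<forall>r'. r' \<notin> insert 7 {12, 13} \<longrightarrow> fst s' r' = fst s0 r') \<and>
     (\<forall>p<n. snd s' (int (n * n) + int n + int n + int n + int p) = (\<Sum>q<n. A p q * vecY n s q)) \<and>
     (\<forall>a. (a < int (n * n) + int n + int n + int n \<or> int (n * n) + int n + int n + int n + int n \<le> a) \<longrightarrow> snd s' a = snd s0 a)"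
  proof (rule fill_loopP[where P="\<lambda>p rf. rf 13 = int (p * n)"])
    show "fst s0 0 = int n" using r0 by (simp add: s0_def)
  next
    show "wr MVB \<subseteq> {12, 13}" by (simp add: MVB_def MVI_def)
  next
    fix p and s1 :: state assume p: "p < n" and c7: "fst s1 7 = int p" and P: "fst s1 13 = int (p * n)"
      and fr: "\<forall>r'. r' \<notin> insert 7 {12, 13} \<longrightarrow> fst s1 r' = fst s0 r'"
      and fm: "\<forall>a. (a < int (n * n) + int n + int n + int n \<or> int (n * n) + int n + int n + int n + int p \<le> a) \<longrightarrow> snd s1 a = snd s0 a"
    have rr: "fst s1 0 = int n" "fst s1 2 = int (n * n)" using fr r0 r2 by (auto simp: s0_def)
    have mA1: "memA n A s1" unfolding memA_def
    proof (intro allI impI)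
      fix a b assume a: "a < n" and b: "b < n"
      have "a * n + b < a * n + n" using b by simp
      also have "\<dots> = Suc a * n" by simp
      also have "\<dots> \<le> n * n" using a by (intro mult_le_mono1) simp
      finally have "int (a * n + b) < int (n * n) + int n + int n + int n" by linarith
      then show "snd s1 (int (a * n + b)) = A a b" using fm mA a b by (simp add: s0_def memA_def)
    qed
    have y1: "vecY n s1 = vecY n s"
    proof
      fix q show "vecY n s1 q = vecY n s q" using fm by (simp add: vecB_def s0_def)
    qed
    obtain t s2 where 2: "big_step MVB s1 t s2" "t \<le> n * 3 + 4"
      "snd s2 = (snd s1)(int (n * n) + int n + int n + int n + int p := (\<Sum>q<n. A p q * vecY n s1 q))"
      "fst s2 = (fst s1)(12 := int n, 13 := int (Suc p * n))"
      using MVB_step[OF rr c7 P p mA1] by blast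
    show "\<exists>t s2. big_step MVB s1 t s2 \<and> t \<le> n * 3 + 4 \<and>
       snd s2 = (snd s1)(int (n * n) + int n + int n + int n + int p := (\<Sum>q<n. A p q * vecY n s q)) \<and>
       ((fst s2)(7 := int p + 1)) 13 = int (Suc p * n)"
      using 2 y1 by (intro exI[of _ t] exI[of _ s2]) simp
  qed (simp_all add: s0_def)
  then obtain t s' where 1: "big_step (FOR 7 (IR 0) MVB) s0 t s'" "t \<le> n * ((n * 3 + 4) + 2) + 2"
     "\<forall>r'. r' \<notin> insert 7 {12, 13} \<longrightarrow> fst s' r' = fst s0 r'"
     "\<forall>p<n. snd s' (int (n * n) + int n + int n + int n + int p) = (\<Sum>q<n. A p q * vecY n s q)"
     "\<forall>a. (a < int (n * n) + int n + int n + int n \<or> int (n * n) + int n + int n + int n + int n \<le> a) \<longrightarrow> snd s' a = snd s0 a"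
    by blast
  have "big_step MV s (1 + t) s'" unfolding MV_def by (rule big_step.Seq[OF b0 1(1)])
  moreover have "1 + t \<le> n * (n * 3 + 6) + 3" using 1(2) by (simp add: algebra_simps)
  ultimately show ?thesis using 1(3-5) by (intro exI[of _ "1 + t"] exI[of _ s']) (auto simp: s0_def)
qed

lemma CPY_spec:
  assumes r0: "fst s 0 = int n" and r2: "fst s 2 = int (n * n)"
  shows "\<exists>t s'. big_step CPY s t s' \<and> t \<le> n * 3 + 2 \<and> fst s' = (fst s)(12 := int n) \<and>
     (\<forall>q<n. snd s' (int (n * n) + int n + int n + int q) = snd s (int (n * n) + int n + int n + int n + int q)) \<and>
     (\<forall>a. (a < int (n * n) + int n + int n \<or> int (n * n) + int n + int n + int n \<le> a) \<longrightarrow> snd s' a = snd s a)"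
proof -
  have "\<exists>t s'. big_step CPY s t s' \<and> t \<le> n * (1 + 2) + 2 \<and> fst s' = (fst s)(12 := int n) \<and>
     (\<forall>q<n. snd s' (int (n * n) + int n + int n + int q) = snd s (int (n * n) + int n + int n + int n + int q)) \<and>
     (\<forall>a. (a < int (n * n) + int n + int n \<or> int (n * n) + int n + int n + int n \<le> a) \<longrightarrow> snd s' a = snd s a)"
    unfolding CPY_def
  proof (rule fill_loop[OF r0])
    fix q and s1 :: state assume q: "q < n" and fs: "fst s1 = (fst s)(12 := int q)"
      and fr: "\<forall>a. (a < int (n * n) + int n + int n \<or> int (n * n) + int n + int n + int q \<le> a) \<longrightarrow> snd s1 a = snd s a"
    have e1: "ieval (aY 12) s1 = int (n * n) + int n + int n + int q" using fs r0 r2 by (simp add: aY_def)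
    have e2: "ieval (aZ 12) s1 = int (n * n) + int n + int n + int n + int q" using fs r0 r2 by (simp add: aZ_def)
    have v: "snd s1 (int (n * n) + int n + int n + int n + int q) = snd s (int (n * n) + int n + int n + int n + int q)"
      using fr by simp
    show "\<exists>t s2. big_step (RSet (aY 12) (RR (aZ 12))) s1 t s2 \<and> t \<le> 1 \<and>
        snd s2 = (snd s1)(int (n * n) + int n + int n + int q := snd s (int (n * n) + int n + int n + int n + int q))"
    proof -
      have x: "reval (RR (aZ 12)) s1 = snd s (int (n * n) + int n + int n + int n + int q)" using e2 v by simp
      have "big_step (RSet (aY 12) (RR (aZ 12))) s1 1 (fst s1, (snd s1)(int (n * n) + int n + int n + int q := snd s (int (n * n) + int n + int n + int n + int q)))"
        by (rule bs_RSet) (simp only: e1 x)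
      then show ?thesis by fastforce
    qed
  qed simp_all
  then obtain t s' where "big_step CPY s t s' \<and> t \<le> n * (1 + 2) + 2 \<and> fst s' = (fst s)(12 := int n) \<and>
     (\<forall>q<n. snd s' (int (n * n) + int n + int n + int q) = snd s (int (n * n) + int n + int n + int n + int q)) \<and>
     (\<forall>a. (a < int (n * n) + int n + int n \<or> int (n * n) + int n + int n + int n \<le> a) \<longrightarrow> snd s' a = snd s a)" by blast
  then show ?thesis by (intro exI[of _ t] exI[of _ s']) auto
qed

lemma PWB_spec:
  assumes r0: "fst s 0 = int n" and r2: "fst s 2 = int (n * n)" and mA: "memA n A s"
  shows "\<exists>t s'. big_step PWB s t s' \<and> t \<le> 3 * n * n + 9 * n + 5 \<and>
     (\<forall>r. r \<notin> {7, 12, 13} \<longrightarrow> fst s' r = fst s r) \<and> vecY n s' = mv n A (vecY n s) \<and>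
     (\<forall>a. (a < int (n * n) + int n + int n \<or> int (n * n) + int n + int n + int n + int n \<le> a) \<longrightarrow> snd s' a = snd s a)"
proof -
  obtain t1 s1 where 1: "big_step MV s t1 s1" "t1 \<le> n * (n * 3 + 6) + 3" "\<forall>r. r \<notin> {7, 12, 13} \<longrightarrow> fst s1 r = fst s r"
     "\<forall>p<n. snd s1 (int (n * n) + int n + int n + int n + int p) = (\<Sum>q<n. A p q * vecY n s q)"
     "\<forall>a. (a < int (n * n) + int n + int n + int n \<or> int (n * n) + int n + int n + int n + int n \<le> a) \<longrightarrow> snd s1 a = snd s a"
    using MV_spec[OF r0 r2 mA] by blast
  have rr: "fst s1 0 = int n" "fst s1 2 = int (n * n)" using 1(3) r0 r2 by auto
  obtain t2 s2 where 2: "big_step CPY s1 t2 s2" "t2 \<le> n * 3 + 2" "fst s2 = (fst s1)(12 := int n)"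
     "\<forall>q<n. snd s2 (int (n * n) + int n + int n + int q) = snd s1 (int (n * n) + int n + int n + int n + int q)"
     "\<forall>a. (a < int (n * n) + int n + int n \<or> int (n * n) + int n + int n + int n \<le> a) \<longrightarrow> snd s2 a = snd s1 a"
    using CPY_spec[OF rr] by blast
  have "big_step PWB s (t1 + t2) s2" unfolding PWB_def by (rule big_step.Seq[OF 1(1) 2(1)])
  moreover have "t1 + t2 \<le> 3 * n * n + 9 * n + 5" using 1(2) 2(2) by (simp add: algebra_simps)
  moreover have "vecY n s2 = mv n A (vecY n s)"
  proof
    fix q show "vecY n s2 q = mv n A (vecY n s) q" using 2(4) 1(4) by (simp add: vecB_def mv_def)
  qed
  moreover have "\<forall>a. (a < int (n * n) + int n + int n \<or> int (n * n) + int n + int n + int n + int n \<le> a) \<longrightarrow> snd s2 a = snd s a"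
    using 1(5) 2(5) by force
  ultimately show ?thesis using 1(3) 2(3) by (intro exI[of _ "t1 + t2"] exI[of _ s2]) auto
qed

lemma POWER_spec:
  assumes r0: "fst s 0 = int n" and r2: "fst s 2 = int (n * n)" and r3: "fst s 3 = int i" and i: "i < n"
    and r10: "fst s 10 = int m" and mA: "memA n A s"
  shows "\<exists>t s'. big_step POWER s t s' \<and> t \<le> (n * 4 + 2) + m * ((3 * n * n + 9 * n + 5) + 2) + 2 \<and>
     (\<forall>r. r \<notin> {4, 7, 9, 12, 13} \<longrightarrow> fst s' r = fst s r) \<and> vecY n s' = pw n A (ev i) m \<and>
     (\<forall>a. (a < int (n * n) + int n + int n \<or> int (n * n) + int n + int n + int n + int n \<le> a) \<longrightarrow> snd s' a = snd s a)"
proof -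
  let ?lo = "int (n * n) + int n + int n" and ?hi = "int (n * n) + int n + int n + int n + int n"
  obtain t1 s1 where 1: "big_step PW1 s t1 s1" "t1 \<le> n * 4 + 2" "fst s1 = (fst s)(4 := int n)" "vecY n s1 = ev i"
    "\<forall>a. (a < ?lo \<or> int (n * n) + int n + int n + int n \<le> a) \<longrightarrow> snd s1 a = snd s a"
    using PW1_spec[OF r0 r2 r3 i] by blast
  define I where "I pc s2 \<longleftrightarrow> (\<forall>r. r \<notin> {4, 7, 9, 12, 13} \<longrightarrow> fst s2 r = fst s r) \<and> vecY n s2 = pw n A (ev i) pc \<and>
     (\<forall>a. (a < ?lo \<or> ?hi \<le> a) \<longrightarrow> snd s2 a = snd s a)" for pc s2
  have "\<exists>t s'. big_step (FOR 9 (IR 10) PWB) s1 t s' \<and> t \<le> m * ((3 * n * n + 9 * n + 5) + 2) + 2 \<and> I m s' \<and> fst s' 9 = int m"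
  proof (rule for_rule)
    have "vecY n ((fst s1)(9 := 0), snd s1) = vecY n s1" by (auto simp: vecB_def)
    then show "I 0 ((fst s1)(9 := 0), snd s1)" using 1(3,4,5) by (auto simp: I_def)
  next
    fix pc s2 assume pc: "pc < m" and I: "I pc s2" and c: "fst s2 9 = int pc"
    have rr: "fst s2 0 = int n" "fst s2 2 = int (n * n)" using I r0 r2 by (auto simp: I_def)
    have mA2: "memA n A s2" unfolding memA_def
    proof (intro allI impI)
      fix a b assume a: "a < n" and b: "b < n"
      have "a * n + b < a * n + n" using b by simp
      also have "\<dots> = Suc a * n" by simp
      also have "\<dots> \<le> n * n" using a by (intro mult_le_mono1) simp
      finally have "int (a * n + b) < ?lo" by linarith
      then show "snd s2 (int (a * n + b)) = A a b" using I mA a b by (simp add: I_def memA_def)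
    qed
    obtain t s3 where 3: "big_step PWB s2 t s3" "t \<le> 3 * n * n + 9 * n + 5" "\<forall>r. r \<notin> {7, 12, 13} \<longrightarrow> fst s3 r = fst s2 r"
      "vecY n s3 = mv n A (vecY n s2)" "\<forall>a. (a < ?lo \<or> ?hi \<le> a) \<longrightarrow> snd s3 a = snd s2 a"
      using PWB_spec[OF rr mA2] by blast
    have "vecY n ((fst s3)(9 := int pc + 1), snd s3) = vecY n s3" by (auto simp: vecB_def)
    then have "I (Suc pc) ((fst s3)(9 := int pc + 1), snd s3)"
      using I 3(3,4,5) by (auto simp: I_def)
    moreover have "fst s3 9 = int pc" using 3(3) c by simp
    ultimately show "\<exists>t s'. big_step PWB s2 t s' \<and> t \<le> 3 * n * n + 9 * n + 5 \<and> fst s' 9 = int pc \<and>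
       I (Suc pc) ((fst s')(9 := int pc + 1), snd s')" using 3(1,2) by blast
  next
    fix pc s2 assume "pc \<le> m" "I pc s2" "fst s2 9 = int pc"
    then show "ieval (IR 10) s2 = int m" using r10 by (simp add: I_def)
  qed
  then obtain t2 s2 where 2: "big_step (FOR 9 (IR 10) PWB) s1 t2 s2" "t2 \<le> m * ((3 * n * n + 9 * n + 5) + 2) + 2" "I m s2"
    by blast
  have "big_step POWER s (t1 + t2) s2" unfolding POWER_def by (rule big_step.Seq[OF 1(1) 2(1)])
  then show ?thesis using 1(2) 2(2,3) by (intro exI[of _ "t1 + t2"] exI[of _ s2]) (auto simp: I_def)
qed

definition SETY :: com where "SETY = RSet (aC 4) (RR (aY 4))"
definition SET0 :: com where "SET0 = RSet (aC 4) (RC 0)"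
definition WFB :: com where
  "WFB = CIf (ILess (IR 4) (IR 11)) (CIf (ILess (IAdd (IR 4) (IR 0)) (IAdd (IR 11) (IR 1))) SETY SET0)
                                   (CIf (ILess (IR 4) (IAdd (IR 11) (IR 1))) SETY SET0)"
definition WF :: com where "WF = FOR 4 (IR 0) WFB"
definition WINDOWS :: com where "WINDOWS = FOR 11 (IR 0) (WF ;; EVAL)"

lemma vecB_upd_fst[simp]: "vecB n (f, snd s) b = vecB n s b"
  by (auto simp: vecB_def)

lemma nonneg_notin: "0 \<le> (x::int) \<Longrightarrow> x \<notin> {-1, -2, -3, -4, -5}"
  by auto

lemma norm0_win: "t < n \<Longrightarrow> norm0 n (win n k t x) \<le> k"
proof -
  assume t: "t < n"
  have "norm0 n (win n k t x) \<le> card {j. j < n \<and> inW n k t j}"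
    unfolding norm0_def by (rule card_mono) (auto simp: win_def)
  also have "\<dots> \<le> k" by (rule win_supp[OF t])
  finally show ?thesis .
qed

lemma WF_spec:
  assumes r0: "fst s 0 = int n" and r1: "fst s 1 = int k" and r2: "fst s 2 = int (n * n)" and r11: "fst s 11 = int t"
  shows "\<exists>tt s'. big_step WF s tt s' \<and> tt \<le> n * 5 + 2 \<and> fst s' = (fst s)(4 := int n) \<and>
     cand n s' = win n k t (vecY n s) \<and>
     (\<forall>a. (a < int (n * n) + int n \<or> int (n * n) + int n + int n \<le> a) \<longrightarrow> snd s' a = snd s a)"
proof -
  have "\<exists>tt s'. big_step WF s tt s' \<and> tt \<le> n * (3 + 2) + 2 \<and> fst s' = (fst s)(4 := int n) \<and>
     (\<forall>j<n. snd s' (int (n * n) + int n + int j) = win n k t (vecY n s) j) \<and>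
     (\<forall>a. (a < int (n * n) + int n \<or> int (n * n) + int n + int n \<le> a) \<longrightarrow> snd s' a = snd s a)"
    unfolding WF_def
  proof (rule fill_loop[OF r0])
    show "wr WFB = {}" by (simp add: WFB_def SETY_def SET0_def)
  next
    fix j and s1 :: state assume j: "j < n" and fs: "fst s1 = (fst s)(4 := int j)"
      and fr: "\<forall>a. (a < int (n * n) + int n \<or> int (n * n) + int n + int j \<le> a) \<longrightarrow> snd s1 a = snd s a"
    have eC: "ieval (aC 4) s1 = int (n * n) + int n + int j" using fs r0 r2 by (simp add: aC_def)
    have yv: "reval (RR (aY 4)) s1 = vecY n s j"
    proof -
      have "ieval (aY 4) s1 = int (n * n) + int n + int n + int j" using fs r0 r2 by (simp add: aY_def)
      moreover have "snd s1 (int (n * n) + int n + int n + int j) = snd s (int (n * n) + int n + int n + int j)"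
        using fr by simp
      ultimately show ?thesis using j by (simp add: vecB_def)
    qed
    have sety: "big_step SETY s1 1 (fst s1, (snd s1)(int (n * n) + int n + int j := vecY n s j))"
      unfolding SETY_def by (rule bs_RSet) (simp only: eC yv)
    have set0: "big_step SET0 s1 1 (fst s1, (snd s1)(int (n * n) + int n + int j := 0))"
      unfolding SET0_def by (rule bs_RSet) (simp only: eC reval.simps, simp)
    have "\<exists>s2. big_step WFB s1 (Suc (Suc 1)) s2 \<and> snd s2 = (snd s1)(int (n * n) + int n + int j := win n k t (vecY n s) j)"
    proof (cases "j < t")
      case True
      show ?thesis
      proof (cases "j + n < t + k")
        case True
        have "big_step WFB s1 (Suc (Suc 1)) (fst s1, (snd s1)(int (n * n) + int n + int j := vecY n s j))"
          unfolding WFB_def by (rule big_step.IfT[OF _ big_step.IfT[OF _ sety]]) (use \<open>j < t\<close> True fs r0 r1 r11 in simp_all)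
        then show ?thesis using \<open>j < t\<close> True j by (intro exI[of _ "(fst s1, (snd s1)(int (n * n) + int n + int j := vecY n s j))"]) (auto simp: win_def inW_def)
      next
        case False
        have "big_step WFB s1 (Suc (Suc 1)) (fst s1, (snd s1)(int (n * n) + int n + int j := 0))"
          unfolding WFB_def by (rule big_step.IfT[OF _ big_step.IfF[OF _ set0]]) (use \<open>j < t\<close> False fs r0 r1 r11 in simp_all)
        then show ?thesis using \<open>j < t\<close> False j by (intro exI[of _ "(fst s1, (snd s1)(int (n * n) + int n + int j := 0))"]) (auto simp: win_def inW_def)
      qed
    next
      case False
      show ?thesis
      proof (cases "j < t + k")
        case True
        have "big_step WFB s1 (Suc (Suc 1)) (fst s1, (snd s1)(int (n * n) + int n + int j := vecY n s j))"
          unfolding WFB_def by (rule big_step.IfF[OF _ big_step.IfT[OF _ sety]]) (use \<open>\<not> j < t\<close> True fs r0 r1 r11 in simp_all)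
        then show ?thesis using \<open>\<not> j < t\<close> True j by (intro exI[of _ "(fst s1, (snd s1)(int (n * n) + int n + int j := vecY n s j))"]) (auto simp: win_def inW_def)
      next
        case False
        have "big_step WFB s1 (Suc (Suc 1)) (fst s1, (snd s1)(int (n * n) + int n + int j := 0))"
          unfolding WFB_def by (rule big_step.IfF[OF _ big_step.IfF[OF _ set0]]) (use \<open>\<not> j < t\<close> False fs r0 r1 r11 in simp_all)
        then show ?thesis using \<open>\<not> j < t\<close> False j by (intro exI[of _ "(fst s1, (snd s1)(int (n * n) + int n + int j := 0))"]) (auto simp: win_def inW_def)
      qed
    qed
    then show "\<exists>tt s2. big_step WFB s1 tt s2 \<and> tt \<le> 3 \<and> snd s2 = (snd s1)(int (n * n) + int n + int j := win n k t (vecY n s) j)"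
      by fastforce
  qed simp
  then obtain tt s' where 1: "big_step WF s tt s'" "tt \<le> n * (3 + 2) + 2" "fst s' = (fst s)(4 := int n)"
     "\<forall>j<n. snd s' (int (n * n) + int n + int j) = win n k t (vecY n s) j"
     "\<forall>a. (a < int (n * n) + int n \<or> int (n * n) + int n + int n \<le> a) \<longrightarrow> snd s' a = snd s a" by blast
  have "cand n s' = win n k t (vecY n s)"
  proof
    fix j show "cand n s' j = win n k t (vecY n s) j" using 1(4) by (simp add: vecB_def win_def)
  qed
  then show ?thesis using 1 by (intro exI[of _ tt] exI[of _ s']) auto
qed


lemma WINDOWS_spec:
  assumes r0: "fst s 0 = int n" and r1: "fst s 1 = int k" and r2: "fst s 2 = int (n * n)"
    and mA: "memA n A s" and G: "Gd n k A X s"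
  shows "\<exists>tt s'. big_step WINDOWS s tt s' \<and> tt \<le> n * (3 * n * n + 18 * n + 18) + 2 \<and>
     Gd n k A (X \<union> {win n k t (vecY n s) | t. t < n}) s' \<and>
     (\<forall>r. r \<notin> {4, 7, 11, 12, 13} \<longrightarrow> fst s' r = fst s r) \<and>
     (\<forall>a. a \<notin> {-1, -2, -3, -4, -5} \<and> (a < int (n * n) \<or> int (n * n) + int n + int n \<le> a) \<longrightarrow> snd s' a = snd s a)"
proof -
  let ?y = "vecY n s"
  define I where "I t s1 \<longleftrightarrow> (\<forall>r. r \<notin> {4, 7, 11, 12, 13} \<longrightarrow> fst s1 r = fst s r) \<and>
     (\<forall>a. a \<notin> {-1, -2, -3, -4, -5} \<and> (a < int (n * n) \<or> int (n * n) + int n + int n \<le> a) \<longrightarrow> snd s1 a = snd s a) \<and>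
     Gd n k A (X \<union> {win n k t' ?y | t'. t' < t}) s1" for t s1
  have "\<exists>tt s'. big_step (FOR 11 (IR 0) (WF ;; EVAL)) s tt s' \<and> tt \<le> n * ((n * 5 + 2 + (3 * n * n + 13 * n + 14)) + 2) + 2 \<and> I n s' \<and> fst s' 11 = int n"
  proof (rule for_rule)
    show "I 0 ((fst s)(11 := 0), snd s)" using G by (simp add: I_def)
  next
    fix t s1 assume t: "t < n" and I: "I t s1" and c: "fst s1 11 = int t"
    have rr: "fst s1 0 = int n" "fst s1 1 = int k" "fst s1 2 = int (n * n)" using I r0 r1 r2 by (auto simp: I_def)
    have nb: "(-1::int) < int (n * n)" "(-2::int) < int (n * n)" "(-3::int) < int (n * n)" "(-4::int) < int (n * n)" "(-5::int) < int (n * n)"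
      by (rule neg_lt_int)+
    obtain t2 s2 where 2: "big_step WF s1 t2 s2" "t2 \<le> n * 5 + 2" "fst s2 = (fst s1)(4 := int n)"
       "cand n s2 = win n k t (vecY n s1)"
       "\<forall>a. (a < int (n * n) + int n \<or> int (n * n) + int n + int n \<le> a) \<longrightarrow> snd s2 a = snd s1 a"
      using WF_spec[OF rr c] by blast
    have ys: "vecY n s1 = ?y"
    proof
      fix j
      have z: "0 \<le> int (n * n) + int n + int n + int j" by simp
      have x: "int (n * n) + int n + int n + int j \<notin> {-1, -2, -3, -4, -5} \<and>
         (int (n * n) + int n + int n + int j < int (n * n) \<or> int (n * n) + int n + int n \<le> int (n * n) + int n + int n + int j)"
        using nonneg_notin[OF z] by simp
      have fm: "\<forall>a. a \<notin> {-1, -2, -3, -4, -5} \<and> (a < int (n * n) \<or> int (n * n) + int n + int n \<le> a) \<longrightarrow> snd s1 a = snd s a"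
        using I unfolding I_def by blast
      have "snd s1 (int (n * n) + int n + int n + int j) = snd s (int (n * n) + int n + int n + int j)"
        using fm x by blast
      then show "vecY n s1 j = ?y j" by (simp add: vecB_def)
    qed
    have rr2: "fst s2 0 = int n" "fst s2 2 = int (n * n)" using 2(3) rr by auto
    have mA2: "memA n A s2" unfolding memA_def
    proof (intro allI impI)
      fix a b assume a: "a < n" and b: "b < n"
      have "a * n + b < a * n + n" using b by simp
      also have "\<dots> = Suc a * n" by simp
      also have "\<dots> \<le> n * n" using a by (intro mult_le_mono1) simp
      finally have lt: "int (a * n + b) < int (n * n)" by linarith
      have "snd s2 (int (a * n + b)) = snd s1 (int (a * n + b))" using 2(5) lt by simp
      also have "\<dots> = snd s (int (a * n + b))" using I lt int_ne_neg int_ne_m1 unfolding I_def by (metis insert_iff singletonD)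
      finally show "snd s2 (int (a * n + b)) = A a b" using mA a b by (simp add: memA_def)
    qed
    have o2: "outv n s2 = outv n s1"
    proof
      fix j show "outv n s2 j = outv n s1 j" using 2(5) by (simp add: vecB_def)
    qed
    have G2: "Gd n k A (X \<union> {win n k t' ?y | t'. t' < t}) s2"
      using I o2 2(5) nb by (simp add: I_def)
    have sp: "norm0 n (cand n s2) \<le> k" using 2(4) norm0_win[OF t] by simp
    obtain t3 s3 where 3: "big_step EVAL s2 t3 s3" "t3 \<le> 3 * n * n + 13 * n + 14"
       "Gd n k A (insert (cand n s2) (X \<union> {win n k t' ?y | t'. t' < t})) s3"
       "\<forall>r. r \<notin> {7, 12, 13} \<longrightarrow> fst s3 r = fst s2 r"
       "\<forall>a. a \<notin> {-1, -2, -3, -4, -5} \<and> (a < int (n * n) \<or> int (n * n) + int n \<le> a) \<longrightarrow> snd s3 a = snd s2 a"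
      using eval_spec[OF rr2 mA2 G2 sp] by blast
    have seteq: "insert (cand n s2) (X \<union> {win n k t' ?y | t'. t' < t}) = X \<union> {win n k t' ?y | t'. t' < Suc t}"
      using 2(4) ys by (auto simp: less_Suc_eq)
    have "I (Suc t) ((fst s3)(11 := int t + 1), snd s3)"
      unfolding I_def
    proof (intro conjI allI impI)
      fix r :: nat assume "r \<notin> {4, 7, 11, 12, 13}"
      then show "fst ((fst s3)(11 := int t + 1), snd s3) r = fst s r" using 3(4) 2(3) I by (simp add: I_def)
    next
      fix a :: int assume a: "a \<notin> {-1, -2, -3, -4, -5} \<and> (a < int (n * n) \<or> int (n * n) + int n + int n \<le> a)"
      then have "snd s3 a = snd s2 a" using 3(5) by auto
      also have "\<dots> = snd s1 a" using 2(5) a by auto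
      also have "\<dots> = snd s a" using I a by (simp add: I_def)
      finally show "snd ((fst s3)(11 := int t + 1), snd s3) a = snd s a" by simp
    next
      have "vecB n ((fst s3)(11 := int t + 1), snd s3) (int (n * n)) = outv n s3" by (auto simp: vecB_def)
      then show "Gd n k A (X \<union> {win n k t' ?y | t'. t' < Suc t}) ((fst s3)(11 := int t + 1), snd s3)"
        using 3(3) seteq by simp
    qed
    moreover have "fst s3 11 = int t" using 3(4) 2(3) c by simp
    moreover have "big_step (WF ;; EVAL) s1 (t2 + t3) s3" by (rule big_step.Seq[OF 2(1) 3(1)])
    moreover have "t2 + t3 \<le> n * 5 + 2 + (3 * n * n + 13 * n + 14)" using 2(2) 3(2) by simp
    ultimately show "\<exists>tt s'. big_step (WF ;; EVAL) s1 tt s' \<and> tt \<le> n * 5 + 2 + (3 * n * n + 13 * n + 14) \<and>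
       fst s' 11 = int t \<and> I (Suc t) ((fst s')(11 := int t + 1), snd s')" by blast
  next
    fix t s1 assume "t \<le> n" "I t s1" "fst s1 11 = int t"
    then show "ieval (IR 0) s1 = int n" using r0 by (simp add: I_def)
  qed
  then obtain tt s' where 1: "big_step WINDOWS s tt s'" "tt \<le> n * ((n * 5 + 2 + (3 * n * n + 13 * n + 14)) + 2) + 2" "I n s'"
    unfolding WINDOWS_def by blast
  moreover have "tt \<le> n * (3 * n * n + 18 * n + 18) + 2" using 1(2) by (simp add: algebra_simps)
  ultimately show ?thesis by (intro exI[of _ tt] exI[of _ s']) (auto simp: I_def)
qed

definition INIT :: com where
  "INIT = ISet 2 (IC 0) ;; FOR 4 (IR 0) (ISet 2 (IAdd (IR 2) (IR 0))) ;;
     ISet 10 (IAdd (IAdd (IAdd (IAdd (IR 0) (IR 0)) (IR 0)) (IR 0)) (IR 0)) ;; ISet 8 (IC 0)"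
definition NORM :: com where
  "NORM = FOR 4 (IR 0) (RSet (aOUT 4) (RDiv (RR (aOUT 4)) (RSqrt (RR (IC (-2))))))"

lemma INIT_spec:
  assumes r0: "fst s 0 = int n"
  shows "\<exists>t s'. big_step INIT s t s' \<and> t \<le> n * 3 + 5 \<and> snd s' = snd s \<and>
     (\<forall>r. r \<notin> {2, 4, 8, 10} \<longrightarrow> fst s' r = fst s r) \<and> fst s' 2 = int (n * n) \<and> fst s' 8 = 0 \<and> fst s' 10 = int (5 * n)"
proof -
  define s1 where "s1 = ((fst s)(2 := 0), snd s)"
  have b1: "big_step (ISet 2 (IC 0)) s 1 s1" by (rule bs_ISet) (simp add: s1_def)
  define I where "I j s2 \<longleftrightarrow> snd s2 = snd s \<and> (\<forall>r. r \<notin> {2, 4} \<longrightarrow> fst s2 r = fst s r) \<and> fst s2 2 = int (j * n)" for j s2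
  have "\<exists>t s'. big_step (FOR 4 (IR 0) (ISet 2 (IAdd (IR 2) (IR 0)))) s1 t s' \<and> t \<le> n * (1 + 2) + 2 \<and> I n s' \<and> fst s' 4 = int n"
  proof (rule for_rule)
    show "I 0 ((fst s1)(4 := 0), snd s1)" by (simp add: I_def s1_def)
  next
    fix j s2 assume j: "j < n" and I: "I j s2" and c: "fst s2 4 = int j"
    define s3 where "s3 = ((fst s2)(2 := fst s2 2 + fst s2 0), snd s2)"
    have "big_step (ISet 2 (IAdd (IR 2) (IR 0))) s2 1 s3" by (rule bs_ISet) (simp add: s3_def)
    moreover have "I (Suc j) ((fst s3)(4 := int j + 1), snd s3)" using I r0 by (auto simp: I_def s3_def algebra_simps)
    moreover have "fst s3 4 = int j" using c by (simp add: s3_def)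
    ultimately show "\<exists>t s'. big_step (ISet 2 (IAdd (IR 2) (IR 0))) s2 t s' \<and> t \<le> 1 \<and> fst s' 4 = int j \<and>
       I (Suc j) ((fst s')(4 := int j + 1), snd s')" by blast
  next
    fix j s2 assume "j \<le> n" "I j s2" "fst s2 4 = int j"
    then show "ieval (IR 0) s2 = int n" using r0 by (simp add: I_def)
  qed
  then obtain t2 s2 where 2: "big_step (FOR 4 (IR 0) (ISet 2 (IAdd (IR 2) (IR 0)))) s1 t2 s2" "t2 \<le> n * (1 + 2) + 2" "I n s2"
    by blast
  have r0': "fst s2 0 = int n" using 2(3) r0 by (simp add: I_def)
  define s3 where "s3 = ((fst s2)(10 := int (5 * n)), snd s2)"
  have b3: "big_step (ISet 10 (IAdd (IAdd (IAdd (IAdd (IR 0) (IR 0)) (IR 0)) (IR 0)) (IR 0))) s2 1 s3"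
    by (rule bs_ISet) (simp add: s3_def r0')
  define s4 where "s4 = ((fst s3)(8 := 0), snd s3)"
  have b4: "big_step (ISet 8 (IC 0)) s3 1 s4" by (rule bs_ISet) (simp add: s4_def)
  have "big_step INIT s (1 + (t2 + (1 + 1))) s4" unfolding INIT_def
    by (rule big_step.Seq[OF b1 big_step.Seq[OF 2(1) big_step.Seq[OF b3 b4]]])
  moreover have "1 + (t2 + (1 + 1)) \<le> n * 3 + 5" using 2(2) by simp
  ultimately show ?thesis using 2(3) by (intro exI[of _ "1 + (t2 + (1 + 1))"] exI[of _ s4]) (auto simp: I_def s3_def s4_def)
qed

lemma NORM_spec:
  assumes r0: "fst s 0 = int n" and r2: "fst s 2 = int (n * n)"
  shows "\<exists>t s'. big_step NORM s t s' \<and> t \<le> n * 3 + 2 \<and>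
     output_vec n s' = (\<lambda>j. outv n s j / sqrt (snd s (-2)))"
proof -
  have "\<exists>t s'. big_step NORM s t s' \<and> t \<le> n * (1 + 2) + 2 \<and> fst s' = (fst s)(4 := int n) \<and>
     (\<forall>j<n. snd s' (int (n * n) + int j) = outv n s j / sqrt (snd s (-2))) \<and>
     (\<forall>a. (a < int (n * n) \<or> int (n * n) + int n \<le> a) \<longrightarrow> snd s' a = snd s a)"
    unfolding NORM_def
  proof (rule fill_loop[OF r0])
    fix j and s1 :: state assume j: "j < n" and fs: "fst s1 = (fst s)(4 := int j)"
      and fr: "\<forall>a. (a < int (n * n) \<or> int (n * n) + int j \<le> a) \<longrightarrow> snd s1 a = snd s a"
    have e: "ieval (aOUT 4) s1 = int (n * n) + int j" using fs r2 by (simp add: aOUT_def)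
    have v1: "snd s1 (int (n * n) + int j) = outv n s j" using fr j by (simp add: vecB_def)
    have v2: "snd s1 (-2) = snd s (-2)" using fr neg_lt_int(2)[of "num.Bit0 num.One" "n * n"] by simp
    have x: "reval (RDiv (RR (aOUT 4)) (RSqrt (RR (IC (-2))))) s1 = outv n s j / sqrt (snd s (-2))"
      using e v1 v2 by simp
    have "big_step (RSet (aOUT 4) (RDiv (RR (aOUT 4)) (RSqrt (RR (IC (-2)))))) s1 1
       (fst s1, (snd s1)(int (n * n) + int j := outv n s j / sqrt (snd s (-2))))"
      by (rule bs_RSet) (simp only: e x)
    then show "\<exists>t s2. big_step (RSet (aOUT 4) (RDiv (RR (aOUT 4)) (RSqrt (RR (IC (-2)))))) s1 t s2 \<and> t \<le> 1 \<and>
       snd s2 = (snd s1)(int (n * n) + int j := outv n s j / sqrt (snd s (-2)))" by fastforce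
  qed simp_all
  then obtain t s' where 1: "big_step NORM s t s'" "t \<le> n * (1 + 2) + 2"
     "\<forall>j<n. snd s' (int (n * n) + int j) = outv n s j / sqrt (snd s (-2))" by blast
  have "output_vec n s' = (\<lambda>j. outv n s j / sqrt (snd s (-2)))"
  proof
    fix j show "output_vec n s' j = outv n s j / sqrt (snd s (-2))"
      using 1(3) by (simp add: output_vec_def vecB_def)
  qed
  then show ?thesis using 1 by (intro exI[of _ t] exI[of _ s']) auto
qed

definition OBODY :: com where
  "OBODY = CANDE ;; EVAL ;; CANDROW ;; EVAL ;; POWER ;; WINDOWS ;; ISet 8 (IAdd (IR 8) (IR 0))"

definition TI :: "nat \<Rightarrow> nat" where
  "TI n = (n * 4 + 2) + (3 * n * n + 13 * n + 14) + (n * (n * 6 + 10) + 4) + (3 * n * n + 13 * n + 14) +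
      ((n * 4 + 2) + (5 * n) * ((3 * n * n + 9 * n + 5) + 2) + 2) + (n * (3 * n * n + 18 * n + 18) + 2) + 1"

lemma memA_frame: "memA n A s \<Longrightarrow> (\<And>a. 0 \<le> a \<Longrightarrow> a < int (n * n) \<Longrightarrow> snd s' a = snd s a) \<Longrightarrow> memA n A s'"
proof -
  assume m: "memA n A s" and f: "\<And>a. 0 \<le> a \<Longrightarrow> a < int (n * n) \<Longrightarrow> snd s' a = snd s a"
  show "memA n A s'" unfolding memA_def
  proof (intro allI impI)
    fix a b assume a: "a < n" and b: "b < n"
    have "a * n + b < a * n + n" using b by simp
    also have "\<dots> = Suc a * n" by simp
    also have "\<dots> \<le> n * n" using a by (intro mult_le_mono1) simp
    finally have "int (a * n + b) < int (n * n)" by linarith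
    then have "snd s' (int (a * n + b)) = snd s (int (a * n + b))" using f by simp
    then show "snd s' (int (a * n + b)) = A a b" using m a b by (simp add: memA_def)
  qed
qed

lemma Gd_frame: "Gd n k A X s \<Longrightarrow> snd s' (-1) = snd s (-1) \<Longrightarrow> snd s' (-2) = snd s (-2) \<Longrightarrow>
   (\<And>j. j < n \<Longrightarrow> snd s' (int (n * n) + int j) = snd s (int (n * n) + int j)) \<Longrightarrow> Gd n k A X s'"
proof -
  assume G: "Gd n k A X s" and a: "snd s' (-1) = snd s (-1)" "snd s' (-2) = snd s (-2)"
    and o: "\<And>j. j < n \<Longrightarrow> snd s' (int (n * n) + int j) = snd s (int (n * n) + int j)"
  have "outv n s' = outv n s"
  proof
    fix j show "outv n s' j = outv n s j" using o by (simp add: vecB_def)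
  qed
  then show ?thesis using G a by simp
qed

lemma norm0_ev: "i < n \<Longrightarrow> norm0 n (ev i) = 1"
proof -
  assume i: "i < n"
  have "{j. j < n \<and> ev i j \<noteq> 0} = {i}" using i by (auto simp: ev_def)
  then show ?thesis by (simp add: norm0_def)
qed

lemma norm0_rowmask: "norm0 n (rowmask n k A i) \<le> k"
proof -
  have "norm0 n (rowmask n k A i) \<le> card (topU n k (rowv A i))"
    unfolding norm0_def by (rule card_mono) (auto simp: rowmask_def topU_def)
  also have "\<dots> \<le> k" by (rule topU_card)
  finally show ?thesis .
qed

lemma OBODY_step:
  assumes k1: "1 \<le> k" and r0: "fst s 0 = int n" and r1: "fst s 1 = int k" and r2: "fst s 2 = int (n * n)"
    and r3: "fst s 3 = int i" and i: "i < n" and r8: "fst s 8 = int (i * n)" and r10: "fst s 10 = int (5 * n)"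
    and mA: "memA n A s" and G: "Gd n k A X s"
  shows "\<exists>t s'. big_step OBODY s t s' \<and> t \<le> TI n \<and>
     (\<forall>r. r \<notin> {4, 5, 6, 7, 8, 9, 11, 12, 13} \<longrightarrow> fst s' r = fst s r) \<and> fst s' 8 = int (Suc i * n) \<and>
     memA n A s' \<and> Gd n k A (X \<union> {ev i, rowmask n k A i} \<union> {win n k t (pw n A (ev i) (5 * n)) | t. t < n}) s'"
proof -
  have nb: "(-1::int) < int (n * n)" "(-2::int) < int (n * n)" by (rule neg_lt_int)+
  obtain t1 s1 where 1: "big_step CANDE s t1 s1" "t1 \<le> n * 4 + 2" "fst s1 = (fst s)(4 := int n)" "cand n s1 = ev i"
     "\<forall>a. (a < int (n * n) + int n \<or> int (n * n) + int n + int n \<le> a) \<longrightarrow> snd s1 a = snd s a"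
    using CANDE_spec[OF r0 r2 r3 i] by blast
  have rr1: "fst s1 0 = int n" "fst s1 2 = int (n * n)" using 1(3) r0 r2 by auto
  have mA1: "memA n A s1" by (rule memA_frame[OF mA]) (use 1(5) in simp)
  have G1: "Gd n k A X s1" by (rule Gd_frame[OF G]) (use 1(5) nb in simp_all)
  have sp1: "norm0 n (cand n s1) \<le> k" using 1(4) norm0_ev[OF i] k1 by simp
  obtain t2 s2 where 2: "big_step EVAL s1 t2 s2" "t2 \<le> 3 * n * n + 13 * n + 14" "Gd n k A (insert (ev i) X) s2"
     "\<forall>r. r \<notin> {7, 12, 13} \<longrightarrow> fst s2 r = fst s1 r"
     "\<forall>a. a \<notin> {-1, -2, -3, -4, -5} \<and> (a < int (n * n) \<or> int (n * n) + int n \<le> a) \<longrightarrow> snd s2 a = snd s1 a"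
    using eval_spec[OF rr1 mA1 G1 sp1] 1(4) by auto
  have rr2: "fst s2 0 = int n" "fst s2 1 = int k" "fst s2 2 = int (n * n)" "fst s2 8 = int (i * n)"
     "fst s2 3 = int i" "fst s2 10 = int (5 * n)"
    using 2(4) 1(3) r0 r1 r2 r8 r3 r10 by auto
  have mA2: "memA n A s2" by (rule memA_frame[OF mA1]) (use 2(5) in auto)
  obtain t3 s3 where 3: "big_step CANDROW s2 t3 s3" "t3 \<le> n * (n * 6 + 10) + 4"
     "\<forall>r. r \<notin> {4, 5, 6} \<longrightarrow> fst s3 r = fst s2 r" "cand n s3 = rowmask n k A i"
     "\<forall>a. (a < int (n * n) + int n \<or> int (n * n) + int n + int n + int n \<le> a) \<longrightarrow> snd s3 a = snd s2 a"
    using CANDROW_spec[OF rr2(1,2,3,4) i mA2] by blast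
  have rr3: "fst s3 0 = int n" "fst s3 2 = int (n * n)" using 3(3) rr2 by auto
  have mA3: "memA n A s3" by (rule memA_frame[OF mA2]) (use 3(5) in simp)
  have G3: "Gd n k A (insert (ev i) X) s3" by (rule Gd_frame[OF 2(3)]) (use 3(5) nb in simp_all)
  have sp3: "norm0 n (cand n s3) \<le> k" using 3(4) norm0_rowmask by simp
  obtain t4 s4 where 4: "big_step EVAL s3 t4 s4" "t4 \<le> 3 * n * n + 13 * n + 14"
     "Gd n k A (insert (rowmask n k A i) (insert (ev i) X)) s4"
     "\<forall>r. r \<notin> {7, 12, 13} \<longrightarrow> fst s4 r = fst s3 r"
     "\<forall>a. a \<notin> {-1, -2, -3, -4, -5} \<and> (a < int (n * n) \<or> int (n * n) + int n \<le> a) \<longrightarrow> snd s4 a = snd s3 a"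
    using eval_spec[OF rr3 mA3 G3 sp3] 3(4) by auto
  have rr4: "fst s4 0 = int n" "fst s4 1 = int k" "fst s4 2 = int (n * n)" "fst s4 3 = int i" "fst s4 10 = int (5 * n)"
    "fst s4 8 = int (i * n)"
    using 4(4) 3(3) rr2 by auto
  have mA4: "memA n A s4" by (rule memA_frame[OF mA3]) (use 4(5) in auto)
  obtain t5 s5 where 5: "big_step POWER s4 t5 s5" "t5 \<le> (n * 4 + 2) + (5 * n) * ((3 * n * n + 9 * n + 5) + 2) + 2"
     "\<forall>r. r \<notin> {4, 7, 9, 12, 13} \<longrightarrow> fst s5 r = fst s4 r" "vecY n s5 = pw n A (ev i) (5 * n)"
     "\<forall>a. (a < int (n * n) + int n + int n \<or> int (n * n) + int n + int n + int n + int n \<le> a) \<longrightarrow> snd s5 a = snd s4 a"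
    using POWER_spec[OF rr4(1,3,4) i rr4(5) mA4] by blast
  have rr5: "fst s5 0 = int n" "fst s5 1 = int k" "fst s5 2 = int (n * n)" "fst s5 8 = int (i * n)"
    using 5(3) rr4 by auto
  have mA5: "memA n A s5" by (rule memA_frame[OF mA4]) (use 5(5) in simp)
  have G5: "Gd n k A (insert (rowmask n k A i) (insert (ev i) X)) s5" by (rule Gd_frame[OF 4(3)]) (use 5(5) nb in simp_all)
  obtain t6 s6 where 6: "big_step WINDOWS s5 t6 s6" "t6 \<le> n * (3 * n * n + 18 * n + 18) + 2"
     "Gd n k A (insert (rowmask n k A i) (insert (ev i) X) \<union> {win n k t (vecY n s5) | t. t < n}) s6"
     "\<forall>r. r \<notin> {4, 7, 11, 12, 13} \<longrightarrow> fst s6 r = fst s5 r"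
     "\<forall>a. a \<notin> {-1, -2, -3, -4, -5} \<and> (a < int (n * n) \<or> int (n * n) + int n + int n \<le> a) \<longrightarrow> snd s6 a = snd s5 a"
    using WINDOWS_spec[OF rr5(1,2,3) mA5 G5] by blast
  have mA6: "memA n A s6" by (rule memA_frame[OF mA5]) (use 6(5) in auto)
  define s7 where "s7 = ((fst s6)(8 := fst s6 8 + fst s6 0), snd s6)"
  have b7: "big_step (ISet 8 (IAdd (IR 8) (IR 0))) s6 1 s7" by (rule bs_ISet) (simp add: s7_def)
  have bb: "big_step OBODY s (t1 + (t2 + (t3 + (t4 + (t5 + (t6 + 1)))))) s7" unfolding OBODY_def
    by (rule big_step.Seq[OF 1(1) big_step.Seq[OF 2(1) big_step.Seq[OF 3(1) big_step.Seq[OF 4(1)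
              big_step.Seq[OF 5(1) big_step.Seq[OF 6(1) b7]]]]]])
  have tt: "t1 + (t2 + (t3 + (t4 + (t5 + (t6 + 1))))) \<le> TI n"
    using 1(2) 2(2) 3(2) 4(2) 5(2) 6(2) unfolding TI_def by linarith
  have fr: "\<forall>r. r \<notin> {4, 5, 6, 7, 8, 9, 11, 12, 13} \<longrightarrow> fst s7 r = fst s r"
    using 6(4) 5(3) 4(4) 3(3) 2(4) 1(3) by (auto simp: s7_def)
  have r87: "fst s7 8 = int (Suc i * n)" using 6(4) rr5 by (simp add: s7_def algebra_simps)
  have mA7: "memA n A s7" using mA6 by (simp add: s7_def memA_def)
  have seteq: "insert (rowmask n k A i) (insert (ev i) X) \<union> {win n k t (vecY n s5) | t. t < n} =
     X \<union> {ev i, rowmask n k A i} \<union> {win n k t (pw n A (ev i) (5 * n)) | t. t < n}"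
    using 5(4) by auto
  have G7: "Gd n k A (X \<union> {ev i, rowmask n k A i} \<union> {win n k t (pw n A (ev i) (5 * n)) | t. t < n}) s7"
    using 6(3) seteq by (simp add: s7_def)
  show ?thesis using bb tt fr r87 mA7 G7 by blast
qed


definition Cs :: "nat \<Rightarrow> nat \<Rightarrow> (nat \<Rightarrow> nat \<Rightarrow> real) \<Rightarrow> nat \<Rightarrow> (nat \<Rightarrow> real) set" where
  "Cs n k A i = {ev l | l. l < i} \<union> {rowmask n k A l | l. l < i} \<union> {win n k t (pw n A (ev l) (5 * n)) | l t. l < i \<and> t < n}"

definition PROG :: com where "PROG = INIT ;; FOR 3 (IR 0) OBODY ;; NORM"

lemma Cs_Suc: "Cs n k A (Suc i) = Cs n k A i \<union> {ev i, rowmask n k A i} \<union> {win n k t (pw n A (ev i) (5 * n)) | t. t < n}"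
  unfolding Cs_def by (auto simp: less_Suc_eq)

lemma OUTER_spec:
  assumes k1: "1 \<le> k" and r0: "fst s 0 = int n" and r1: "fst s 1 = int k" and r2: "fst s 2 = int (n * n)"
    and r8: "fst s 8 = 0" and r10: "fst s 10 = int (5 * n)" and mA: "memA n A s" and G: "Gd n k A {} s"
  shows "\<exists>t s'. big_step (FOR 3 (IR 0) OBODY) s t s' \<and> t \<le> n * (TI n + 2) + 2 \<and>
     fst s' 0 = int n \<and> fst s' 2 = int (n * n) \<and> Gd n k A (Cs n k A n) s'"
proof -
  define I where "I i s1 \<longleftrightarrow> fst s1 0 = int n \<and> fst s1 1 = int k \<and> fst s1 2 = int (n * n) \<and>
     fst s1 8 = int (i * n) \<and> fst s1 10 = int (5 * n) \<and> memA n A s1 \<and> Gd n k A (Cs n k A i) s1" for i s1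
  have "\<exists>t s'. big_step (FOR 3 (IR 0) OBODY) s t s' \<and> t \<le> n * (TI n + 2) + 2 \<and> I n s' \<and> fst s' 3 = int n"
  proof (rule for_rule)
    have "Cs n k A 0 = {}" by (simp add: Cs_def)
    moreover have "memA n A ((fst s)(3 := 0), snd s)" using mA by (simp add: memA_def)
    ultimately show "I 0 ((fst s)(3 := 0), snd s)" using r0 r1 r2 r8 r10 G by (simp add: I_def)
  next
    fix i s1 assume i: "i < n" and I: "I i s1" and c: "fst s1 3 = int i"
    have h: "fst s1 0 = int n" "fst s1 1 = int k" "fst s1 2 = int (n * n)" "fst s1 8 = int (i * n)"
      "fst s1 10 = int (5 * n)" "memA n A s1" "Gd n k A (Cs n k A i) s1" using I by (auto simp: I_def)
    obtain t s2 where 2: "big_step OBODY s1 t s2" "t \<le> TI n"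
      "\<forall>r. r \<notin> {4, 5, 6, 7, 8, 9, 11, 12, 13} \<longrightarrow> fst s2 r = fst s1 r" "fst s2 8 = int (Suc i * n)"
      "memA n A s2" "Gd n k A (Cs n k A i \<union> {ev i, rowmask n k A i} \<union> {win n k t (pw n A (ev i) (5 * n)) | t. t < n}) s2"
      using OBODY_step[OF k1 h(1,2,3) c i h(4,5,6,7)] by blast
    have "I (Suc i) ((fst s2)(3 := int i + 1), snd s2)"
      using 2(3,4,5,6) h by (simp add: I_def Cs_Suc memA_def)
    moreover have "fst s2 3 = int i" using 2(3) c by simp
    ultimately show "\<exists>t s'. big_step OBODY s1 t s' \<and> t \<le> TI n \<and> fst s' 3 = int i \<and>
       I (Suc i) ((fst s')(3 := int i + 1), snd s')" using 2(1,2) by blast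
  next
    fix i s1 assume "i \<le> n" "I i s1" "fst s1 3 = int i"
    then show "ieval (IR 0) s1 = int n" by (simp add: I_def)
  qed
  then show ?thesis by (auto simp: I_def)
qed

lemma final_bound:
  assumes psd: "sym_psd n A" and k: "1 \<le> k" "k \<le> n"
    and H: "\<And>c. c \<in> Cs n k A n \<Longrightarrow> quad n A c \<le> L * ss n c"
  shows "real n powr (-1/3) * sparse_opt n A k \<le> L"
proof -
  have n0: "0 < n" using k by simp
  have hD: "quad n A (ev i) \<le> L * ss n (ev i)" if "i < n" for i
    using that by (intro H) (auto simp: Cs_def)
  have hR: "quad n A (rowmask n k A i) \<le> L * ss n (rowmask n k A i)" if "i < n" for i
    using that by (intro H) (auto simp: Cs_def)
  have hW: "quad n A (win n k t (pw n A (ev i) (5 * n))) \<le> L * ss n (win n k t (pw n A (ev i) (5 * n)))"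
    if "i < n" "t < n" for i t
    using that by (intro H) (auto simp: Cs_def)
  have L0: "0 \<le> L" using hD[OF n0] quad_ev[OF n0] ss_ev[OF n0] diag_nonneg[OF psd n0] by simp
  define B where "B = real n powr (1/3) * L"
  have B0: "0 \<le> B" using L0 by (simp add: B_def)
  have cube: "(real n powr (1/3)) ^ 3 = real n"
  proof -
    have "(real n powr (1/3)) ^ 3 = real n powr (1/3) * real n powr (1/3) * real n powr (1/3)"
      by (simp add: power3_eq_cube)
    also have "\<dots> = real n powr (1/3 + 1/3 + 1/3)" by (simp only: powr_add)
    also have "(1/3 + 1/3 + 1/3 :: real) = 1" by simp
    also have "real n powr 1 = real n" using n0 by simp
    finally show ?thesis .
  qed
  have key: "quad n A y \<le> B" if y: "norm2 n y = 1" "norm0 n y \<le> k" for y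
  proof -
    have ssy: "ss n y = 1" using y(1) by (simp add: norm2_def ss_def)
    have cy: "card {j. j < n \<and> y j \<noteq> 0} \<le> k" using y(2) by (simp add: norm0_def)
    have q3: "(quad n A y) ^ 3 \<le> real n * L ^ 3"
      by (rule math_main[OF psd k refl hD hR hW ssy cy])
    also have "\<dots> = B ^ 3" by (simp add: B_def power_mult_distrib cube)
    finally have "(quad n A y) ^ Suc 2 \<le> B ^ Suc 2" by (simp add: numeral_3_eq_3)
    then show ?thesis using B0 by (rule power_le_imp_le_base)
  qed
  let ?S = "{quad n A y | y. norm2 n y = 1 \<and> norm0 n y \<le> k}"
  have ne: "?S \<noteq> {}"
  proof -
    have "norm2 n (ev 0) = 1" using ss_ev[OF n0] by (simp add: norm2_def ss_def)
    moreover have "norm0 n (ev 0) \<le> k" using norm0_ev[OF n0] k by simp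
    ultimately show ?thesis by blast
  qed
  have "sparse_opt n A k \<le> B" unfolding sparse_opt_def
    by (rule cSup_least[OF ne]) (use key in blast)
  then have "real n powr (-1/3) * sparse_opt n A k \<le> real n powr (-1/3) * B"
    by (intro mult_left_mono) auto
  also have "\<dots> = (real n powr (-1/3) * real n powr (1/3)) * L" by (simp add: B_def)
  also have "\<dots> = L" using n0 by (simp add: powr_add[symmetric])
  finally show ?thesis .
qed

lemma init_facts:
  shows "fst (init_state n k A) 0 = int n" "fst (init_state n k A) 1 = int k"
    "snd (init_state n k A) (-1) = 0" "snd (init_state n k A) (-2) = 0"
    "memA n A (init_state n k A)"
proof -
  show "fst (init_state n k A) 0 = int n" "fst (init_state n k A) 1 = int k"
    "snd (init_state n k A) (-1) = 0" "snd (init_state n k A) (-2) = 0" by (simp_all add: init_state_def)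
  show "memA n A (init_state n k A)" unfolding memA_def
  proof (intro allI impI)
    fix i j assume i: "i < n" and j: "j < n"
    have "i * n + j < i * n + n" using j by simp
    also have "\<dots> = Suc i * n" by simp
    also have "\<dots> \<le> n * n" using i by (intro mult_le_mono1) simp
    finally have lt: "i * n + j < n * n" .
    have d: "(i * n + j) div n = i" and m: "(i * n + j) mod n = j" using j by auto
    show "snd (init_state n k A) (int (i * n + j)) = A i j"
      using lt d m by (simp add: init_state_def del: of_nat_mult of_nat_add)
  qed
qed

lemma time_bound: assumes "1 \<le> n" shows "(n * 3 + 5) + (n * (TI n + 2) + 2) + (n * 3 + 2) \<le> 248 * n ^ 4"
proof -
  have T: "TI n = 18 * n^3 + 75 * n^2 + 97 * n + 41"
    by (simp add: TI_def algebra_simps power2_eq_square power3_eq_cube)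
  have e: "(n * 3 + 5) + (n * (TI n + 2) + 2) + (n * 3 + 2) = 18 * n^4 + 75 * n^3 + 97 * n^2 + 49 * n + 9"
    by (simp add: T algebra_simps power2_eq_square power3_eq_cube power4_eq_xxxx)
  have p3: "n^3 \<le> n^4" and p2: "n^2 \<le> n^4" and p0: "1 \<le> n^4"
    using assms by (simp_all add: power_increasing one_le_power)
  have "n^1 \<le> n^4" using assms by (intro power_increasing) auto
  then have p1: "n \<le> n^4" by simp
  show ?thesis unfolding e using p3 p2 p1 p0 by simp
qed

lemma main_run:
  fixes n k :: nat and A :: "nat \<Rightarrow> nat \<Rightarrow> real"
  assumes k1: "1 \<le> k" and kn: "k \<le> n" and psd: "sym_psd n A"
  shows "\<exists>t s'. big_step PROG (init_state n k A) t s' \<and> real t \<le> 248 * real n ^ 4 \<and>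
         norm2 n (output_vec n s') = 1 \<and> norm0 n (output_vec n s') \<le> k \<and>
         quad n A (output_vec n s') \<ge> real n powr (-1/3) * sparse_opt n A k"
proof -
  have n1: "1 \<le> n" and n0: "0 < n" using k1 kn by auto
  let ?s0 = "init_state n k A"
  obtain t1 s1 where 1: "big_step INIT ?s0 t1 s1" "t1 \<le> n * 3 + 5" "snd s1 = snd ?s0"
     "\<forall>r. r \<notin> {2, 4, 8, 10} \<longrightarrow> fst s1 r = fst ?s0 r" "fst s1 2 = int (n * n)" "fst s1 8 = 0" "fst s1 10 = int (5 * n)"
    using INIT_spec[OF init_facts(1)] by blast
  have r0: "fst s1 0 = int n" and r1: "fst s1 1 = int k" using 1(4) init_facts by auto
  have mA: "memA n A s1" using init_facts(5) 1(3) by (simp add: memA_def)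
  have G: "Gd n k A {} s1" using 1(3) init_facts(3,4) by (simp add: GdA_def)
  obtain t2 s2 where 2: "big_step (FOR 3 (IR 0) OBODY) s1 t2 s2" "t2 \<le> n * (TI n + 2) + 2"
     "fst s2 0 = int n" "fst s2 2 = int (n * n)" "Gd n k A (Cs n k A n) s2"
    using OUTER_spec[OF k1 r0 r1 1(5,6,7) mA G] by blast
  obtain t3 s3 where 3: "big_step NORM s2 t3 s3" "t3 \<le> n * 3 + 2"
     "output_vec n s3 = (\<lambda>j. outv n s2 j / sqrt (snd s2 (-2)))"
    using NORM_spec[OF 2(3,4)] by blast
  have bb: "big_step PROG ?s0 (t1 + (t2 + t3)) s3" unfolding PROG_def
    by (rule big_step.Seq[OF 1(1) big_step.Seq[OF 2(1) 3(1)]])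
  have tt: "t1 + (t2 + t3) \<le> 248 * n ^ 4" using 1(2) 2(2) 3(2) time_bound[OF n1] by linarith
  then have ttr: "real (t1 + (t2 + t3)) \<le> 248 * real n ^ 4" by (metis of_nat_le_iff of_nat_mult of_nat_numeral of_nat_power)
  let ?bn = "snd s2 (-1)" and ?bd = "snd s2 (-2)" and ?o = "outv n s2"
  have ev0: "ev 0 \<in> Cs n k A n" using n0 by (auto simp: Cs_def)
  have Gs: "0 < ?bd \<and> ss n ?o = ?bd \<and> quad n A ?o = ?bn \<and> norm0 n ?o \<le> k \<and>
      (\<forall>c\<in>Cs n k A n. quad n A c * ?bd \<le> ?bn * ss n c)"
    using 2(5) ev0 ss_ev[OF n0] unfolding GdA_def by auto
  then have bd: "0 < ?bd" and sso: "ss n ?o = ?bd" and qo: "quad n A ?o = ?bn" and no: "norm0 n ?o \<le> k"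
    and allc: "\<forall>c\<in>Cs n k A n. quad n A c * ?bd \<le> ?bn * ss n c" by auto
  define L where "L = ?bn / ?bd"
  let ?x = "output_vec n s3"
  have x: "?x = (\<lambda>j. (1 / sqrt ?bd) * ?o j)" using 3(3) by (simp add: field_simps)
  have ssx: "ss n ?x = 1"
  proof -
    have "ss n ?x = (\<Sum>j<n. (?o j)\<^sup>2 / ?bd)" unfolding 3(3) ss_def using bd by (simp add: power_divide)
    also have "\<dots> = ss n ?o / ?bd" by (simp add: ss_def sum_divide_distrib)
    also have "\<dots> = 1" using bd sso by simp
    finally show ?thesis .
  qed
  have n2: "norm2 n ?x = 1" using ssx by (simp add: norm2_def ss_def)
  have n0x: "norm0 n ?x = norm0 n ?o"
  proof -
    have "{j. j < n \<and> ?x j \<noteq> 0} = {j. j < n \<and> ?o j \<noteq> 0}" using bd unfolding x by auto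
    then show ?thesis by (simp add: norm0_def)
  qed
  have qx: "quad n A ?x = L"
  proof -
    have "quad n A ?x = (1 / sqrt ?bd)\<^sup>2 * quad n A ?o" unfolding x by (rule quad_scale)
    also have "\<dots> = L" using bd qo by (simp add: L_def power_divide)
    finally show ?thesis .
  qed
  have H: "quad n A c \<le> L * ss n c" if c: "c \<in> Cs n k A n" for c
  proof -
    have "quad n A c * ?bd \<le> ?bn * ss n c" using allc c by blast
    then have "quad n A c \<le> ?bn * ss n c / ?bd" using bd by (simp add: le_divide_eq)
    then show ?thesis by (simp add: L_def)
  qed
  have fb: "real n powr (-1/3) * sparse_opt n A k \<le> L" by (rule final_bound[OF psd k1 kn H])
  show ?thesis
    using bb ttr n2 n0x no qx fb by (intro exI[of _ "t1 + (t2 + t3)"] exI[of _ s3]) auto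
qed

theorem theorem1:
  shows "\<exists>(prog :: com) (c :: real) (d :: nat).
    \<forall>(n :: nat) (k :: nat) (A :: nat \<Rightarrow> nat \<Rightarrow> real).
      1 \<le> k \<longrightarrow> k \<le> n \<longrightarrow> sym_psd n A \<longrightarrow>
      (\<exists>t s'. big_step prog (init_state n k A) t s' \<and> real t \<le> c * real n ^ d \<and>
         norm2 n (output_vec n s') = 1 \<and> norm0 n (output_vec n s') \<le> k \<and>
         quad n A (output_vec n s') \<ge> real n powr (-1/3) * sparse_opt n A k)"
  by (rule exI[of _ PROG], rule exI[of _ "248::real"], rule exI[of _ "4::nat"], intro allI impI, rule main_run)

end
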